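(* Fix integers $m \geq 1$ and $n \geq 0$, and let $\mathsf{G3Ldm}_{n}^{m}$ be the labelled sequent calculus described in the context. Then: (1) every sequent of the form $\mathcal{R}, w:\phi, w:\overline{\phi}, \Gamma$ (with $\phi \in \mathcal{L}^m$ arbitrary) is derivable in $\mathsf{G3Ldm}_{n}^{m}$; (2) substitution of labels is height-preserving admissible: if $\Lambda$ is derivable with height at most $h$, then the sequent $\Lambda(y/x)$ obtained by replacing every occurrence of the label $x$ by the label $y$ is derivable with height at most $h$; (3) every inference rule of $\mathsf{G3Ldm}_{n}^{m}$ is height-preserving invertible: if the conclusion of an instance of a rule is derivable with height at most $h$, then each premise of that instance is derivable with height at most $h$; (4) the following weakening and contraction rules are height-preserving admissible: $$\frac{\mathcal{R},\Gamma}{\mathcal{R},\mathcal{R}',\Gamma',\Gamma}\,(\mathsf{wk}) \qquad \frac{\mathcal{R},\mathcal{R}',\mathcal{R}',\Gamma}{\mathcal{R},\mathcal{R}',\Gamma}\,(\mathsf{ctr})_{\mathsf{R}} \qquad \frac{\mathcal{R},\Gamma',\Gamma',\Gamma}{\mathcal{R},\Gamma',\Gamma}\,(\mathsf{ctr})_{\mathsf{F}}$$ (i.e., whenever the premise is derivable with height at most $h$, so is the conclusion); (5) the cut rule $$\frac{\mathcal{R},x:\phi,\Gamma \qquad \mathcal{R},x:\overline{\phi},\Gamma}{\mathcal{R},\Gamma}\,(\mathsf{cut})$$ is admissible (whenever both premises are derivable, so is the conclusion); (6) for every formula $\phi \in \mathcal{L}^m$ and label $w$, the sequent $w:\phi$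 is derivable in $\mathsf{G3Ldm}_{n}^{m}$ if and only if $\phi$ is a theorem of the Hilbert calculus $\mathsf{Ldm}_{n}^{m}$.
   Context: Language. Let $Ag=\{1,\dots,m\}$ be a set of agents and $Var$ a countable set of propositional variables. Formulas of $\mathcal{L}^m$ (negation normal form) are given by $\phi ::= p \mid \overline{p} \mid (\phi\wedge\phi) \mid (\phi\vee\phi) \mid \Box\phi \mid \Diamond\phi \mid [i]\phi \mid \langle i\rangle\phi$ with $p\in Var$, $i \in Ag$. The negation $\overline{\phi}$ of a formula is obtained by swapping $p$ and $\overline{p}$, $\wedge$ and $\vee$, $\Box$ and $\Diamond$, and $[i]$ and $\langle i\rangle$. Write $\phi\rightarrow\psi$ for $\overline{\phi}\vee\psi$, and $\phi \leftrightarrow\psi$ for $(\phi\to\psi)\wedge(\psi\to\phi)$. Hilbert calculus $\mathsf{Ldm}_{n}^{m}$. Axioms: all instances of $\phi \to (\psi\to\phi)$, $(\overline{\psi}\to\overline{\phi})\to(\phi\to\psi)$, $(\phi\to(\psi\to\chi))\to((\phi\to\psi)\to(\phi\to\chi))$; for $\Box$ and for each $[i]$ the S5 axioms $\Box(\phi\to\psi)\to(\Box\phi\to\Box\psi)$, $\Box\phi\to\phi$, $\Diamond\phi\to\Box\Diamond\phi$, $\Box\phi\vee\Diamond\overline{\phi}$ and $[i](\phi\to\psi)\to([i]\phi\to[i]\psi)$, $[i]\phi\to\phi$, $\langle i\rangle\phi\to[i]\langle i\rangle\phi$, $[i]\phi\vee\langle i\rangle\overline{\phi}$; (Bridge) $\Box\phi\to[i]\phi$;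 (IOA) $\bigwedge_{i\in Ag}\Diamond[i]\phi_i \to \Diamond(\bigwedge_{i\in Ag}[i]\phi_i)$; and, only when $n>0$, for each $i\in Ag$, $(\mathsf{APC}^i_n)$: $\Diamond[i]\phi_1 \wedge \Diamond(\overline{\phi}_1\wedge[i]\phi_2)\wedge\cdots\wedge\Diamond(\overline{\phi}_1\wedge\cdots\wedge\overline{\phi}_{n-1}\wedge[i]\phi_n)\to \phi_1\vee\cdots\vee\phi_n$. Rules: modus ponens and $\Box$-necessitation (from $\phi$ infer $\Box\phi$). A theorem is a formula derivable from no premises. Labelled sequents. Fix a denumerable set of labels $x,y,z,w,u,v,\dots$. A labelled sequent $\mathcal{R},\Gamma$ consists of a multiset $\mathcal{R}$ of relational atoms $\mathcal{R}_i xy$ ($i\in Ag$) and a multiset $\Gamma$ of labelled formulas $x:\phi$ ($\phi\in\mathcal{L}^m$). Derivations are finite trees of rule instances whose leaves are instances of $(\mathsf{id})$; height is the length of the longest branch. Rules of $\mathsf{G3Ldm}_{n}^{m}$ (written premise(s) / conclusion): $(\mathsf{id})$: no premise / $\mathcal{R}, w:p, w:\overline{p},\Gamma$. $(\wedge)$: $\mathcal{R}, w:\phi\wedge\psi, w:\phi,\Gamma$ and $\mathcal{R}, w:\phi\wedge\psi, w:\psi,\Gamma$ / $\mathcal{R}, w:\phi\wedge\psi,\Gamma$. $(\vee)$: $\mathcal{R}, w:\phi\vee\psi, w:\phi, w:\psi,\Gamma$ / $\mathcal{R}, w:\phi\vee\psi,\Gamma$. $([i])$: $\mathcal{R},\mathcal{R}_iwv,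 v:\phi,\Gamma$ / $\mathcal{R}, w:[i]\phi,\Gamma$, with $v$ not occurring in the conclusion. $(\Box)$: $\mathcal{R}, w:\Box\phi, v:\phi,\Gamma$ / $\mathcal{R}, w:\Box\phi,\Gamma$, with $v$ not occurring in the conclusion. $(\Diamond)$: $\mathcal{R}, w:\Diamond\phi, u:\phi,\Gamma$ / $\mathcal{R}, w:\Diamond\phi,\Gamma$ ($u$ any label). $(\mathsf{IOA})$: $\mathcal{R},\mathcal{R}_1u_1v,\dots,\mathcal{R}_mu_mv,\Gamma$ / $\mathcal{R},\Gamma$, with $v$ not occurring in the conclusion ($u_1,\dots,u_m$ any labels). $(\langle i\rangle)$: $\mathcal{R},\mathcal{R}_iwu, w:\langle i\rangle\phi, u:\phi,\Gamma$ / $\mathcal{R},\mathcal{R}_iwu, w:\langle i\rangle\phi,\Gamma$. $(\mathsf{refl}_i)$: $\mathcal{R},\mathcal{R}_iww,\Gamma$ / $\mathcal{R},\Gamma$. $(\mathsf{eucl}_i)$: $\mathcal{R},\mathcal{R}_iwu,\mathcal{R}_iwv,\mathcal{R}_iuv,\Gamma$ / $\mathcal{R},\mathcal{R}_iwu,\mathcal{R}_iwv,\Gamma$. $(\mathsf{APC}^i_n)$ (only when $n>0$): for any labels $w_0,\dots,w_n$, the premises $\mathcal{R},\mathcal{R}_iw_kw_j,\Gamma$ for all $0\le k\le n-1$, $k+1\le j\le n$ / $\mathcal{R},\Gamma$. There is a copy of $([i])$, $(\langle i\rangle)$, $(\mathsf{refl}_i)$, $(\mathsf{eucl}_i)$,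 $(\mathsf{APC}^i_n)$ for each $i\in Ag$. *)

theory Defs
  imports Main "HOL-Library.Multiset"
begin

datatype fm =
    At nat
  | NAt nat
  | Conj fm fm
  | Disj fm fm
  | Box fm
  | Dia fm
  | Stit nat fm
  | Cstit nat fm

fun neg :: "fm \<Rightarrow> fm" where
  "neg (At p) = NAt p"
| "neg (NAt p) = At p"
| "neg (Conj a b) = Disj (neg a) (neg b)"
| "neg (Disj a b) = Conj (neg a) (neg b)"
| "neg (Box a) = Dia (neg a)"
| "neg (Dia a) = Box (neg a)"
| "neg (Stit i a) = Cstit i (neg a)"
| "neg (Cstit i a) = Stit i (neg a)"

definition imp :: "fm \<Rightarrow> fm \<Rightarrow> fm" where
  "imp a b = Disj (neg a) b"

definition iff :: "fm \<Rightarrow> fm \<Rightarrow> fm" where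
  "iff a b = Conj (imp a b) (imp b a)"

fun agents :: "fm \<Rightarrow> nat set" where
  "agents (At p) = {}"
| "agents (NAt p) = {}"
| "agents (Conj a b) = agents a \<union> agents b"
| "agents (Disj a b) = agents a \<union> agents b"
| "agents (Box a) = agents a"
| "agents (Dia a) = agents a"
| "agents (Stit i a) = insert i (agents a)"
| "agents (Cstit i a) = insert i (agents a)"

definition wf_fm :: "nat \<Rightarrow> fm \<Rightarrow> bool" where
  "wf_fm m a \<longleftrightarrow> agents a \<subseteq> {1..m}"

text \<open>Finite right-nested conjunctions/disjunctions (only used on nonempty lists;
  the empty cases are set to a tautology resp. contradiction and never arise).\<close>
fun Conjs :: "fm list \<Rightarrow> fm" where
  "Conjs [] = Disj (At 0) (NAt 0)"
| "Conjs [a] = a"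
| "Conjs (a # as) = Conj a (Conjs as)"

fun Disjs :: "fm list \<Rightarrow> fm" where
  "Disjs [] = Conj (At 0) (NAt 0)"
| "Disjs [a] = a"
| "Disjs (a # as) = Disj a (Disjs as)"

inductive Ldm :: "nat \<Rightarrow> nat \<Rightarrow> fm \<Rightarrow> bool" for m n where
  A1: "wf_fm m a \<Longrightarrow> wf_fm m b \<Longrightarrow> Ldm m n (imp a (imp b a))"
| A2: "wf_fm m a \<Longrightarrow> wf_fm m b \<Longrightarrow>
      Ldm m n (imp (imp (neg b) (neg a)) (imp a b))"
| A3: "wf_fm m a \<Longrightarrow> wf_fm m b \<Longrightarrow> wf_fm m c \<Longrightarrow>
      Ldm m n (imp (imp a (imp b c)) (imp (imp a b) (imp a c)))"
| BoxK: "wf_fm m a \<Longrightarrow> wf_fm m b \<Longrightarrow>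
      Ldm m n (imp (Box (imp a b)) (imp (Box a) (Box b)))"
| BoxT: "wf_fm m a \<Longrightarrow> Ldm m n (imp (Box a) a)"
| Box5: "wf_fm m a \<Longrightarrow> Ldm m n (imp (Dia a) (Box (Dia a)))"
| BoxD: "wf_fm m a \<Longrightarrow> Ldm m n (Disj (Box a) (Dia (neg a)))"
| StitK: "i \<in> {1..m} \<Longrightarrow> wf_fm m a \<Longrightarrow> wf_fm m b \<Longrightarrow>
      Ldm m n (imp (Stit i (imp a b)) (imp (Stit i a) (Stit i b)))"
| StitT: "i \<in> {1..m} \<Longrightarrow> wf_fm m a \<Longrightarrow> Ldm m n (imp (Stit i a) a)"
| Stit5: "i \<in> {1..m} \<Longrightarrow> wf_fm m a \<Longrightarrow>
      Ldm m n (imp (Cstit i a) (Stit i (Cstit i a)))"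
| StitD: "i \<in> {1..m} \<Longrightarrow> wf_fm m a \<Longrightarrow>
      Ldm m n (Disj (Stit i a) (Cstit i (neg a)))"
| Bridge: "i \<in> {1..m} \<Longrightarrow> wf_fm m a \<Longrightarrow> Ldm m n (imp (Box a) (Stit i a))"
| IOA: "(\<forall>i\<in>{1..m}. wf_fm m (as i)) \<Longrightarrow>
      Ldm m n (imp (Conjs (map (\<lambda>i. Dia (Stit i (as i))) [1..<Suc m]))
                   (Dia (Conjs (map (\<lambda>i. Stit i (as i)) [1..<Suc m]))))"
| APC: "n > 0 \<Longrightarrow> i \<in> {1..m} \<Longrightarrow> length as = n \<Longrightarrow> (\<forall>a\<in>set as. wf_fm m a) \<Longrightarrow>
      Ldm m n (imp (Conjs (map (\<lambda>k. Dia (Conjs (map neg (take k as) @ [Stit i (as ! k)])))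
                               [0..<n]))
                   (Disjs as))"
| MP: "Ldm m n (imp a b) \<Longrightarrow> Ldm m n a \<Longrightarrow> Ldm m n b"
| Nec: "Ldm m n a \<Longrightarrow> Ldm m n (Box a)"

text \<open>A relational atom R_i x y is the triple (i, x, y); a labelled formula x:phi
  is the pair (x, phi). A sequent is a pair of multisets.\<close>
type_synonym ratom = "nat \<times> nat \<times> nat"
type_synonym lfm = "nat \<times> fm"
type_synonym sequent = "ratom multiset \<times> lfm multiset"

definition labels :: "sequent \<Rightarrow> nat set" where
  "labels S = (\<Union>(i,x,y)\<in>set_mset (fst S). {x, y}) \<union> (\<Union>(x,a)\<in>set_mset (snd S). {x})"

definition wf_seq :: "nat \<Rightarrow> sequent \<Rightarrow> bool" where
  "wf_seq m S \<longleftrightarrow> (\<forall>(i,x,y)\<in>set_mset (fst S). i \<in> {1..m})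
                 \<and> (\<forall>(x,a)\<in>set_mset (snd S). wf_fm m a)"

inductive rule :: "nat \<Rightarrow> nat \<Rightarrow> sequent list \<Rightarrow> sequent \<Rightarrow> bool" for m n where
  conj: "rule m n [(R, add_mset (w, Conj a b) (add_mset (w, a) G)),
                   (R, add_mset (w, Conj a b) (add_mset (w, b) G))]
                  (R, add_mset (w, Conj a b) G)"
| disj: "rule m n [(R, add_mset (w, Disj a b) (add_mset (w, a) (add_mset (w, b) G)))]
                  (R, add_mset (w, Disj a b) G)"
| stit: "i \<in> {1..m} \<Longrightarrow> v \<notin> labels (R, add_mset (w, Stit i a) G) \<Longrightarrow>
         rule m n [(add_mset (i, w, v) R, add_mset (v, a) G)]
                  (R, add_mset (w, Stit i a) G)"
| box: "v \<notin> labels (R, add_mset (w, Box a) G) \<Longrightarrow>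
         rule m n [(R, add_mset (w, Box a) (add_mset (v, a) G))]
                  (R, add_mset (w, Box a) G)"
| dia: "rule m n [(R, add_mset (w, Dia a) (add_mset (u, a) G))]
                  (R, add_mset (w, Dia a) G)"
| ioa: "v \<notin> labels (R, G) \<Longrightarrow>
         rule m n [(R + image_mset (\<lambda>i. (i, u i, v)) (mset [1..<Suc m]), G)] (R, G)"
| cstit: "i \<in> {1..m} \<Longrightarrow>
         rule m n [(add_mset (i, w, u) R, add_mset (w, Cstit i a) (add_mset (u, a) G))]
                  (add_mset (i, w, u) R, add_mset (w, Cstit i a) G)"
| refl: "i \<in> {1..m} \<Longrightarrow> rule m n [(add_mset (i, w, w) R, G)] (R, G)"
| eucl: "i \<in> {1..m} \<Longrightarrow>
         rule m n [(add_mset (i, w, u) (add_mset (i, w, v) (add_mset (i, u, v) R)), G)]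
                  (add_mset (i, w, u) (add_mset (i, w, v) R), G)"
| apc: "n > 0 \<Longrightarrow> i \<in> {1..m} \<Longrightarrow>
         rule m n [(add_mset (i, ws k, ws j) R, G). k \<leftarrow> [0..<n], j \<leftarrow> [Suc k..<Suc n]]
                  (R, G)"

text \<open>deriv m n h S: S is derivable in G3Ldm^m_n with height at most h
  (height = length of the longest branch; an (id) leaf has height 0).\<close>
inductive deriv :: "nat \<Rightarrow> nat \<Rightarrow> nat \<Rightarrow> sequent \<Rightarrow> bool" for m n where
  id: "deriv m n h (R, add_mset (w, At p) (add_mset (w, NAt p) G))"
| step: "rule m n ps S \<Longrightarrow> (\<forall>P\<in>set ps. deriv m n h P) \<Longrightarrow> deriv m n (Suc h) S"

definition derivable :: "nat \<Rightarrow> nat \<Rightarrow> sequent \<Rightarrow> bool" where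
  "derivable m n S \<longleftrightarrow> (\<exists>h. deriv m n h S)"

definition subst_seq :: "nat \<Rightarrow> nat \<Rightarrow> sequent \<Rightarrow> sequent" where
  "subst_seq y x S =
     (let s = (\<lambda>z. if z = x then y else z) in
      (image_mset (\<lambda>(i, a, b). (i, s a, s b)) (fst S),
       image_mset (\<lambda>(z, a). (s z, a)) (snd S)))"

end

theory Submission
  imports Defs
begin

definition sp :: "sequent \<Rightarrow> sequent \<Rightarrow> sequent" (infixl "\<oplus>" 65) where
  "S \<oplus> T = (fst S + fst T, snd S + snd T)"

definition ren :: "(nat \<Rightarrow> nat) \<Rightarrow> sequent \<Rightarrow> sequent" where
  "ren f S = (image_mset (\<lambda>(i,a,b). (i, f a, f b)) (fst S), image_mset (\<lambda>(z,a). (f z, a)) (snd S))"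

lemma sp_simp[simp]: "(R1, G1) \<oplus> (R2, G2) = (R1 + R2, G1 + G2)"
  by (simp add: sp_def)

lemma ren_simp[simp]: "ren f (R, G) = (image_mset (\<lambda>(i,a,b). (i, f a, f b)) R, image_mset (\<lambda>(z,a). (f z, a)) G)"
  by (simp add: ren_def)

lemma labels_simp: "labels (R, G) = (\<Union>(i,x,y)\<in>set_mset R. {x, y}) \<union> (\<Union>(x,a)\<in>set_mset G. {x})"
  by (simp add: labels_def)

lemma labels_empty[simp]: "labels ({#}, {#}) = {}"
  by (simp add: labels_def)

lemma labels_addR[simp]: "labels (add_mset (i,x,y) R, G) = insert x (insert y (labels (R, G)))"
  by (auto simp add: labels_def)

lemma labels_addG[simp]: "labels (R, add_mset (x,a) G) = insert x (labels (R, G))"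
  by (auto simp add: labels_def)

lemma labels_plus[simp]: "labels (R1 + R2, G1 + G2) = labels (R1, G1) \<union> labels (R2, G2)"
  by (auto simp add: labels_def)

lemma labels_sp: "labels (S \<oplus> T) = labels S \<union> labels T"
  by (cases S; cases T) simp

lemma finite_labels[simp]: "finite (labels S)"
  by (cases S) (auto simp add: labels_def)

lemma labels_ren: "labels (ren f S) = f ` labels S"
  by (cases S) (auto simp add: labels_def image_iff)

lemma ren_cong: "(\<And>z. z \<in> labels S \<Longrightarrow> f z = g z) \<Longrightarrow> ren f S = ren g S"
  apply (cases S)
  by (auto simp add: labels_def intro!: multiset.map_cong0)

lemma ren_sp: "ren f (S \<oplus> T) = ren f S \<oplus> ren f T"
  by (cases S; cases T) simp

lemma ren_id: "ren id S = S"
  by (cases S) (simp add: case_prod_unfold)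

lemma ren_id': "ren (\<lambda>z. z) S = S"
  by (cases S) (simp add: case_prod_unfold)

lemma fresh_ex: "finite L \<Longrightarrow> \<exists>v::nat. v \<notin> L"
  using infinite_UNIV_nat by (meson ex_new_if_finite)

inductive core :: "nat \<Rightarrow> nat \<Rightarrow> sequent list \<Rightarrow> sequent \<Rightarrow> nat set \<Rightarrow> bool" for m n where
  c_conj: "core m n [({#}, {#(w,Conj a b),(w,a)#}), ({#},{#(w,Conj a b),(w,b)#})] ({#},{#(w,Conj a b)#}) {}"
| c_disj: "core m n [({#},{#(w,Disj a b),(w,a),(w,b)#})] ({#},{#(w,Disj a b)#}) {}"
| c_stit: "i\<in>{1..m} \<Longrightarrow> v \<noteq> w \<Longrightarrow> core m n [({#(i,w,v)#},{#(v,a)#})] ({#},{#(w,Stit i a)#}) {v}"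
| c_box: "v \<noteq> w \<Longrightarrow> core m n [({#},{#(w,Box a),(v,a)#})] ({#},{#(w,Box a)#}) {v}"
| c_dia: "core m n [({#},{#(w,Dia a),(u,a)#})] ({#},{#(w,Dia a)#}) {}"
| c_ioa: "core m n [(image_mset (\<lambda>i. (i,u i,v)) (mset [1..<Suc m]), {#})] ({#},{#}) {v}"
| c_cstit: "i\<in>{1..m} \<Longrightarrow> core m n [({#(i,w,u)#},{#(w,Cstit i a),(u,a)#})] ({#(i,w,u)#},{#(w,Cstit i a)#}) {}"
| c_refl: "i\<in>{1..m} \<Longrightarrow> core m n [({#(i,w,w)#},{#})] ({#},{#}) {}"
| c_eucl: "i\<in>{1..m} \<Longrightarrow> core m n [({#(i,w,u),(i,w,v),(i,u,v)#},{#})] ({#(i,w,u),(i,w,v)#},{#}) {}"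
| c_apc: "n>0 \<Longrightarrow> i\<in>{1..m} \<Longrightarrow> core m n [({#(i,ws k,ws j)#},{#}). k \<leftarrow> [0..<n], j \<leftarrow> [Suc k..<Suc n]] ({#},{#}) {}"

lemma rule_coreI: "core m n ps0 S0 E \<Longrightarrow> E \<inter> labels S = {} \<Longrightarrow> S = S0 \<oplus> C \<Longrightarrow> ps = map (\<lambda>P. P \<oplus> C) ps0 \<Longrightarrow>
  (\<exists>ps0 S0 E C. core m n ps0 S0 E \<and> E \<inter> labels S = {} \<and> S = S0 \<oplus> C \<and> ps = map (\<lambda>P. P \<oplus> C) ps0)"
  by blast

lemma rule_core: "rule m n ps S \<longleftrightarrow> (\<exists>ps0 S0 E C. core m n ps0 S0 E \<and> E \<inter> labels S = {} \<and> S = S0 \<oplus> C \<and> ps = map (\<lambda>P. P \<oplus> C) ps0)"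
proof
  assume "rule m n ps S"
  then show "\<exists>ps0 S0 E C. core m n ps0 S0 E \<and> E \<inter> labels S = {} \<and> S = S0 \<oplus> C \<and> ps = map (\<lambda>P. P \<oplus> C) ps0"
  proof cases
    case (conj R w a b G)
    then show ?thesis apply - apply (rule rule_coreI[where C="(R,G)", OF c_conj]) apply auto done
  next
    case (disj R w a b G)
    then show ?thesis apply - apply (rule rule_coreI[where C="(R,G)", OF c_disj]) apply auto done
  next
    case (stit i v R w a G)
    then show ?thesis apply - apply (rule rule_coreI[where C="(R,G)", OF c_stit]) apply auto done
  next
    case (box v R w a G)
    then show ?thesis apply - apply (rule rule_coreI[where C="(R,G)", OF c_box]) apply auto done
  next
    case (dia R w a u G)
    then show ?thesis apply - apply (rule rule_coreI[where C="(R,G)", OF c_dia]) apply auto done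
  next
    case (ioa v R G u)
    then show ?thesis apply - apply (rule rule_coreI[where C="(R,G)", OF c_ioa]) apply (auto simp: add.commute) done
  next
    case (cstit i w u R a G)
    then show ?thesis apply - apply (rule rule_coreI[where C="(R,G)", OF c_cstit]) apply auto done
  next
    case (refl i w R G)
    then show ?thesis apply - apply (rule rule_coreI[where C="(R,G)", OF c_refl]) apply auto done
  next
    case (eucl i w u v R G)
    then show ?thesis apply - apply (rule rule_coreI[where C="(R,G)", OF c_eucl]) apply auto done
  next
    case (apc i ws R G)
    then show ?thesis apply - apply (rule rule_coreI[where C="(R,G)", OF c_apc]) apply (auto simp: map_concat comp_def) done
  qed
next
  assume "\<exists>ps0 S0 E C. core m n ps0 S0 E \<and> E \<inter> labels S = {} \<and> S = S0 \<oplus> C \<and> ps = map (\<lambda>P. P \<oplus> C) ps0"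
  then obtain ps0 S0 E R G where c: "core m n ps0 S0 E" and e: "E \<inter> labels S = {}" and s: "S = S0 \<oplus> (R,G)"
    and p: "ps = map (\<lambda>P. P \<oplus> (R,G)) ps0" by (metis surj_pair)
  from c show "rule m n ps S"
  proof cases
    case (c_conj w a b)
    then show ?thesis using s p e by (auto intro!: rule.intros)
  next
    case (c_disj w a b)
    then show ?thesis using s p e by (auto intro!: rule.intros)
  next
    case (c_stit i v w a)
    then show ?thesis using s p e by (auto intro!: rule.intros)
  next
    case (c_box v w a)
    then show ?thesis using s p e by (auto intro!: rule.intros)
  next
    case (c_dia w a u)
    then show ?thesis using s p e by (auto intro!: rule.intros)
  next
    case (c_ioa u v)
    have r: "rule m n [(R + image_mset (\<lambda>i. (i, u i, v)) (mset [1..<Suc m]), G)] (R, G)"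
      by (rule rule.ioa) (use e s c_ioa in simp)
    show ?thesis using r s p c_ioa by (simp del: mset_upt add: add.commute)
  next
    case (c_cstit i w u a)
    then show ?thesis using s p e by (auto intro!: rule.intros)
  next
    case (c_refl i w)
    then show ?thesis using s p e by (auto intro!: rule.intros)
  next
    case (c_eucl i w u v)
    then show ?thesis using s p e by (auto intro!: rule.intros)
  next
    case (c_apc i ws)
    have r: "rule m n [(add_mset (i, ws k, ws j) R, G). k \<leftarrow> [0..<n], j \<leftarrow> [Suc k..<Suc n]] (R, G)"
      by (rule rule.apc) (use c_apc in auto)
    show ?thesis using r s p c_apc by (simp del: upt_Suc add: map_concat comp_def)
  qed
qed

lemma sp_assoc: "(A \<oplus> B) \<oplus> C = A \<oplus> (B \<oplus> C)"
  by (simp add: sp_def add.assoc)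

lemma sp_commute: "A \<oplus> B = B \<oplus> A"
  by (simp add: sp_def add.commute)

lemma sp_empty[simp]: "({#},{#}) \<oplus> A = A" "A \<oplus> ({#},{#}) = A"
  by (simp_all add: sp_def)

definition isid :: "sequent \<Rightarrow> bool" where
  "isid S \<longleftrightarrow> (\<exists>w p. (w, At p) \<in># snd S \<and> (w, NAt p) \<in># snd S)"

lemma isid_deriv: "isid S \<Longrightarrow> deriv m n h S"
proof -
  assume "isid S"
  then obtain w p where a: "(w, At p) \<in># snd S" and b: "(w, NAt p) \<in># snd S" by (auto simp: isid_def)
  from a obtain G1 where G1: "snd S = add_mset (w, At p) G1" by (metis multi_member_split)
  with b have "(w, NAt p) \<in># G1" by auto
  then obtain G2 where G2: "G1 = add_mset (w, NAt p) G2" by (metis multi_member_split)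
  have "S = (fst S, add_mset (w, At p) (add_mset (w, NAt p) G2))" using G1 G2 by (metis prod.collapse)
  then show ?thesis by (metis deriv.id)
qed

lemma deriv_mono: "deriv m n h S \<Longrightarrow> h \<le> h' \<Longrightarrow> deriv m n h' S"
proof (induction h S arbitrary: h' rule: deriv.induct)
  case (id h R w p G)
  show ?case by (rule deriv.id)
next
  case (step ps S h)
  then obtain h'' where "h' = Suc h''" "h \<le> h''" by (cases h') auto
  then show ?case using step by (auto intro: deriv.step)
qed

lemma core_E: "core m n ps0 S0 E \<Longrightarrow> E = {} \<or> (\<exists>e. E = {e})"
  by (induction rule: core.induct) auto

lemma core_ren: "core m n ps0 S0 E \<Longrightarrow> (\<forall>e\<in>E. \<forall>z\<in>labels S0. f e \<noteq> f z) \<Longrightarrow>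
   core m n (map (ren f) ps0) (ren f S0) (f ` E)"
proof (induction rule: core.induct)
  case (c_conj w a b)
  then show ?case using core.c_conj[where w="f w" and a=a and b=b] by simp
next
  case (c_disj w a b)
  then show ?case using core.c_disj[where w="f w" and a=a and b=b] by simp
next
  case (c_stit i v w a)
  then show ?case using core.c_stit[where i=i and v="f v" and w="f w" and a=a] by simp
next
  case (c_box v w a)
  then show ?case using core.c_box[where v="f v" and w="f w" and a=a] by simp
next
  case (c_dia w a u)
  then show ?case using core.c_dia[where w="f w" and a=a and u="f u"] by simp
next
  case (c_ioa u v)
  then show ?case using core.c_ioa[where u="f o u" and v="f v"] by (simp add: multiset.map_comp comp_def del: mset_upt)
next
  case (c_cstit i w u a)
  then show ?case using core.c_cstit[where i=i and w="f w" and u="f u" and a=a] by simp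
next
  case (c_refl i w)
  then show ?case using core.c_refl[where i=i and w="f w"] by simp
next
  case (c_eucl i w u v)
  then show ?case using core.c_eucl[where i=i and w="f w" and u="f u" and v="f v"] by simp
next
  case (c_apc i ws)
  then show ?case using core.c_apc[where i=i and ws="f o ws"] by (simp del: upt_Suc add: map_concat comp_def)
qed

lemma deriv_step': "core m n ps0 S0 E \<Longrightarrow> E \<inter> labels (S0 \<oplus> C) = {} \<Longrightarrow>
   (\<forall>P\<in>set ps0. deriv m n h (P \<oplus> C)) \<Longrightarrow> deriv m n (Suc h) (S0 \<oplus> C)"
  apply (rule deriv.step[of m n "map (\<lambda>P. P \<oplus> C) ps0"])
   apply (unfold rule_core)
   apply blast
  by simp

lemma deriv_cases': "deriv m n h S \<Longrightarrow> isid S \<or> (\<exists>h' ps0 S0 E C. h = Suc h' \<and> core m n ps0 S0 E \<and>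
   E \<inter> labels S = {} \<and> S = S0 \<oplus> C \<and> (\<forall>P\<in>set ps0. deriv m n h' (P \<oplus> C)))"
proof (induction rule: deriv.cases)
  case (id R w p G h)
  then show ?case by (auto simp: isid_def)
next
  case (step ps S h')
  then obtain ps0 S0 E C where "core m n ps0 S0 E" "E \<inter> labels S = {}" "S = S0 \<oplus> C" "ps = map (\<lambda>P. P \<oplus> C) ps0"
    unfolding rule_core by blast
  then show ?case using step
    by (intro disjI2 exI[of _ h'] exI[of _ ps0] exI[of _ S0] exI[of _ E] exI[of _ C]) simp
qed

lemma deriv_renw: "deriv m n h S \<Longrightarrow> deriv m n h (ren f S \<oplus> W)"
proof (induction h S arbitrary: f W rule: deriv.induct)
  case (id h R w p G)
  have "isid (ren f (R, add_mset (w, At p) (add_mset (w, NAt p) G)) \<oplus> W)"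
    by (cases W) (simp add: isid_def, blast)
  then show ?case by (rule isid_deriv)
next
  case (step ps S h)
  from step.hyps(1) obtain ps0 S0 E C where c: "core m n ps0 S0 E" and e: "E \<inter> labels S = {}"
    and s: "S = S0 \<oplus> C" and p: "ps = map (\<lambda>P. P \<oplus> C) ps0" unfolding rule_core by blast
  obtain v' where v': "v' \<notin> labels (ren f S \<oplus> W)" using fresh_ex finite_labels by blast
  have lS0: "labels S0 \<subseteq> labels S" using s by (simp add: labels_sp)
  have "\<exists>f'. (\<forall>z\<in>labels S. f' z = f z) \<and> (\<forall>e\<in>E. \<forall>z\<in>labels S0. f' e \<noteq> f' z) \<and>
     f' ` E \<inter> labels (ren f S \<oplus> W) = {}"
  proof (cases "E = {}")
    case True
    then show ?thesis by blast
  next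
    case False
    then obtain e0 where E: "E = {e0}" using core_E[OF c] by auto
    have e0: "e0 \<notin> labels S" using e E by auto
    have a1: "\<forall>z\<in>labels S. (f(e0 := v')) z = f z" using e0 by auto
    have a2: "\<forall>z\<in>labels S0. (f(e0 := v')) e0 \<noteq> (f(e0 := v')) z"
    proof
      fix z assume z: "z \<in> labels S0"
      then have "z \<noteq> e0" "f z \<in> labels (ren f S)" using lS0 e0 by (auto simp: labels_ren)
      then show "(f(e0 := v')) e0 \<noteq> (f(e0 := v')) z" using v' by (auto simp: labels_sp)
    qed
    have a3: "(f(e0 := v')) ` E \<inter> labels (ren f S \<oplus> W) = {}" using v' E by simp
    show ?thesis using a1 a2 a3 E by blast
  qed
  then obtain f' where f1: "\<forall>z\<in>labels S. f' z = f z" and f2: "\<forall>e\<in>E. \<forall>z\<in>labels S0. f' e \<noteq> f' z"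
    and f3: "f' ` E \<inter> labels (ren f S \<oplus> W) = {}" by blast
  have c': "core m n (map (ren f') ps0) (ren f' S0) (f' ` E)" by (rule core_ren[OF c f2])
  have rS: "ren f S = ren f' S" using f1 by (intro ren_cong) auto
  have concl: "ren f S \<oplus> W = ren f' S0 \<oplus> (ren f' C \<oplus> W)"
  proof -
    have "ren f' S = ren f' S0 \<oplus> ren f' C" by (simp add: s ren_sp)
    then show ?thesis using rS by (simp add: sp_assoc)
  qed
  have "\<forall>P\<in>set (map (ren f') ps0). deriv m n h (P \<oplus> (ren f' C \<oplus> W))"
  proof
    fix P assume "P \<in> set (map (ren f') ps0)"
    then obtain P0 where P0: "P0 \<in> set ps0" "P = ren f' P0" by auto
    then have "P0 \<oplus> C \<in> set ps" using p by auto
    then have "deriv m n h (ren f' (P0 \<oplus> C) \<oplus> W)" using step.IH by blast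
    then show "deriv m n h (P \<oplus> (ren f' C \<oplus> W))" by (simp add: P0 ren_sp sp_assoc)
  qed
  moreover have "f' ` E \<inter> labels (ren f' S0 \<oplus> (ren f' C \<oplus> W)) = {}" using f3 concl by simp
  ultimately show ?case unfolding concl using deriv_step'[OF c'] by blast
qed

lemma deriv_ren: "deriv m n h S \<Longrightarrow> deriv m n h (ren f S)"
  using deriv_renw[of m n h S f "({#},{#})"] by simp

lemma deriv_weak: "deriv m n h S \<Longrightarrow> deriv m n h (S \<oplus> W)"
  using deriv_renw[of m n h S id W] by (simp add: ren_id)

lemma ren_fresh: "x \<notin> labels S \<Longrightarrow> ren (id(x:=y)) S = S"
proof -
  assume a: "x \<notin> labels S"
  have "ren (id(x:=y)) S = ren id S" by (rule ren_cong) (use a in auto)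
  then show ?thesis by (simp add: ren_id)
qed

lemma ren_fresh_R: "x \<notin> labels (R,G) \<Longrightarrow> image_mset (\<lambda>(i,a,b). (i, (id(x:=y)) a, (id(x:=y)) b)) R = R"
  using ren_fresh[of x "(R,G)" y] by simp

lemma ren_fresh_G: "x \<notin> labels (R,G) \<Longrightarrow> image_mset (\<lambda>(z,a). ((id(x:=y)) z, a)) G = G"
  using ren_fresh[of x "(R,G)" y] by simp

lemma split_mset: "add_mset x G = A + B \<Longrightarrow> (x \<in># A \<and> G = (A - {#x#}) + B) \<or> (x \<in># B \<and> G = A + (B - {#x#}))"
proof -
  assume h: "add_mset x G = A + B"
  show ?thesis
  proof (cases "x \<in># A")
    case True
    then obtain A' where A': "A = add_mset x A'" by (metis multi_member_split)
    then have "G = A' + B" using h by simp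
    then show ?thesis using A' by simp
  next
    case False
    have "x \<in># A + B" by (simp add: h[symmetric])
    then have "x \<in># B" using False by simp
    then obtain B' where B': "B = add_mset x B'" by (metis multi_member_split)
    then have "G = A + B'" using h by simp
    then show ?thesis using B' False by simp
  qed
qed

lemma isid_addG: "isid (R, G) \<Longrightarrow> isid (R', G + G')"
  by (auto simp: isid_def)

lemma isid_remove: "isid (R, add_mset (w, a) G) \<Longrightarrow> (\<And>p. a \<noteq> At p) \<Longrightarrow> (\<And>p. a \<noteq> NAt p) \<Longrightarrow> isid (R', G)"
  by (auto simp: isid_def)

lemma isid_swap: "isid (R, add_mset (w, a) G) \<Longrightarrow> (\<And>p. a \<noteq> At p) \<Longrightarrow> (\<And>p. a \<noteq> NAt p) \<Longrightarrow> isid (R', add_mset z G)"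
  by (auto simp: isid_def)

lemma deriv_dec: "deriv m n (Suc h) S \<Longrightarrow> \<not> isid S \<Longrightarrow> \<exists>ps0 R0 G0 E RC GC. core m n ps0 (R0,G0) E \<and>
   E \<inter> labels S = {} \<and> S = (R0 + RC, G0 + GC) \<and> (\<forall>P\<in>set ps0. deriv m n h (P \<oplus> (RC,GC)))"
proof -
  assume d: "deriv m n (Suc h) S" and ni: "\<not> isid S"
  from deriv_cases'[OF d] ni obtain ps0 S0 E C where "core m n ps0 S0 E" "E \<inter> labels S = {}" "S = S0 \<oplus> C"
     "\<forall>P\<in>set ps0. deriv m n h (P \<oplus> C)" by auto
  then show ?thesis by (cases S0; cases C) (simp only: sp_simp, blast)
qed

lemma ctx_step: "core m n ps0 S0 E \<Longrightarrow> E \<inter> labels S0 = {} \<Longrightarrow> E \<inter> labels D = {} \<Longrightarrow>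
   (\<forall>P\<in>set ps0. deriv m n h (P \<oplus> D)) \<Longrightarrow> deriv m n (Suc h) (S0 \<oplus> D)"
  by (rule deriv_step') (auto simp: labels_sp)

lemma stit_inv: "deriv m n h (R, add_mset (w, Stit i a) G) \<Longrightarrow> v \<notin> labels (R, add_mset (w, Stit i a) G) \<Longrightarrow>
  deriv m n h (add_mset (i,w,v) R, add_mset (v,a) G)"
proof (induction h arbitrary: R G v)
  case 0
  from deriv_cases'[OF 0(1)] have "isid (R, add_mset (w, Stit i a) G)" by auto
  then have "isid (add_mset (i,w,v) R, add_mset (v,a) G)" by (rule isid_swap) auto
  then show ?case by (rule isid_deriv)
next
  case (Suc h)
  show ?case
  proof (cases "isid (R, add_mset (w, Stit i a) G)")
    case True
    then have "isid (add_mset (i,w,v) R, add_mset (v,a) G)" by (rule isid_swap) auto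
    then show ?thesis by (rule isid_deriv)
  next
    case False
    from deriv_dec[OF Suc.prems(1) False]
    obtain ps0 R0 G0 E RC GC where c: "core m n ps0 (R0,G0) E" and e: "E \<inter> labels (R, add_mset (w, Stit i a) G) = {}"
      and sRG: "(R, add_mset (w, Stit i a) G) = (R0 + RC, G0 + GC)"
      and pr: "\<forall>P\<in>set ps0. deriv m n h (P \<oplus> (RC,GC))" by blast
    have sR: "R = R0 + RC" and sG: "add_mset (w, Stit i a) G = G0 + GC" using sRG by auto
    from split_mset[OF sG] show ?thesis
    proof
      assume a: "(w, Stit i a) \<in># G0 \<and> G = G0 - {#(w, Stit i a)#} + GC"
      from c a show ?thesis
      proof cases
        case (c_stit i' v' w' a')
        then have eqs: "i' = i" "w' = w" "a' = a" "R0 = {#}" "G = GC" using a by auto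
        have v'f: "v' \<notin> labels (R, G)" "v' \<noteq> w" using e c_stit by auto
        have "deriv m n h (add_mset (i,w,v') R, add_mset (v',a) G)"
          using pr c_stit eqs sR by simp
        then have "deriv m n h (ren (id(v':=v)) (add_mset (i,w,v') R, add_mset (v',a) G))" by (rule deriv_ren)
        then have "deriv m n h (add_mset (i,w,v) R, add_mset (v,a) G)"
          using v'f ren_fresh_R[OF v'f(1)] ren_fresh_G[OF v'f(1)] by simp
        then show ?thesis by (rule deriv_mono) simp
      qed auto
    next
      assume a: "(w, Stit i a) \<in># GC \<and> G = G0 + (GC - {#(w, Stit i a)#})"
      define GC' where "GC' = GC - {#(w, Stit i a)#}"
      have GC: "GC = add_mset (w, Stit i a) GC'" using a GC'_def by simp
      have sG': "G = G0 + GC'" using a GC'_def by simp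
      define L where "L = labels (R, add_mset (w, Stit i a) G) \<union> E \<union> \<Union>(labels ` set ps0) \<union> {v}"
      have "finite E" using core_E[OF c] by auto
      then have "finite L" unfolding L_def by auto
      then obtain v'' where v'': "v'' \<notin> L" using fresh_ex by blast
      have "\<forall>P\<in>set ps0. deriv m n h (P \<oplus> (add_mset (i,w,v'') RC, add_mset (v'',a) GC'))"
      proof
        fix P assume P: "P \<in> set ps0"
        obtain RP GP where PP: "P = (RP, GP)" by fastforce
        have "deriv m n h (P \<oplus> (RC, GC))" using pr P by blast
        then have "deriv m n h (RP + RC, add_mset (w, Stit i a) (GP + GC'))" using PP GC by simp
        moreover have "v'' \<notin> labels (RP + RC, add_mset (w, Stit i a) (GP + GC'))"
          using v'' P PP GC sR sG' unfolding L_def by (auto simp: labels_sp)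
        ultimately have "deriv m n h (add_mset (i,w,v'') (RP + RC), add_mset (v'',a) (GP + GC'))" by (rule Suc.IH)
        then show "deriv m n h (P \<oplus> (add_mset (i,w,v'') RC, add_mset (v'',a) GC'))" using PP by simp
      qed
      moreover have "E \<inter> labels (R0, G0) = {}" using e sR sG by auto
      moreover have "E \<inter> labels (add_mset (i,w,v'') RC, add_mset (v'',a) GC') = {}"
        using e v'' sR sG GC unfolding L_def by auto
      ultimately have "deriv m n (Suc h) ((R0,G0) \<oplus> (add_mset (i,w,v'') RC, add_mset (v'',a) GC'))"
        using ctx_step[OF c] by blast
      then have d: "deriv m n (Suc h) (add_mset (i,w,v'') R, add_mset (v'',a) G)" using sR sG' by simp
      have v''f: "v'' \<notin> labels (R, G)" "v'' \<noteq> w" using v'' unfolding L_def by auto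
      from deriv_ren[OF d, of "id(v'':=v)"] show ?thesis
        using v''f ren_fresh_R[OF v''f(1)] ren_fresh_G[OF v''f(1)] by simp
    qed
  qed
qed

lemma core_R0_sub: "core m n ps0 (R0,G0) E \<Longrightarrow> P \<in> set ps0 \<Longrightarrow> R0 \<subseteq># fst P"
  by (induction ps0 "(R0,G0)" E rule: core.induct) auto

lemma core_G0_sub: "core m n ps0 (R0,G0) E \<Longrightarrow> P \<in> set ps0 \<Longrightarrow> (\<And>w i a. G0 \<noteq> {#(w,Stit i a)#}) \<Longrightarrow> G0 \<subseteq># snd P"
  by (induction ps0 "(R0,G0)" E rule: core.induct) auto

lemma core_G0: "core m n ps0 (R0,G0) E \<Longrightarrow> G0 = {#} \<or> (\<exists>x. G0 = {#x#})"
  by (induction ps0 "(R0,G0)" E rule: core.induct) auto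

lemma core_R0: "core m n ps0 (R0,G0) E \<Longrightarrow> R0 = {#} \<or> (\<exists>x. R0 = {#x#}) \<or> (\<exists>i w u v. R0 = {#(i,w,u),(i,w,v)#} \<and> G0 = {#} \<and> E = {} \<and> i \<in> {1..m}
   \<and> ps0 = [({#(i,w,u),(i,w,v),(i,u,v)#},{#})])"
proof (induction ps0 "(R0,G0)" E rule: core.induct)
  case (c_eucl i w u v)
  then show ?case by (intro disjI2 exI[of _ i] exI[of _ w] exI[of _ u] exI[of _ v]) simp
qed auto

lemma isid_contrG: "isid (R, add_mset x (add_mset x G)) \<Longrightarrow> isid (R, add_mset x G)"
  by (auto simp: isid_def)

lemma isid_R: "isid (R, G) \<Longrightarrow> isid (R', G)"
  by (auto simp: isid_def)

lemma contr_both: "(\<forall>R G \<phi>. deriv m n h (R, add_mset \<phi> (add_mset \<phi> G)) \<longrightarrow> deriv m n h (R, add_mset \<phi> G)) \<and>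
  (\<forall>R G \<rho>. deriv m n h (add_mset \<rho> (add_mset \<rho> R), G) \<longrightarrow> deriv m n h (add_mset \<rho> R, G))"
proof (induction h)
  case 0
  show ?case
  proof (intro conjI allI impI)
    fix R G \<phi> assume "deriv m n 0 (R, add_mset \<phi> (add_mset \<phi> G))"
    from deriv_cases'[OF this] have "isid (R, add_mset \<phi> (add_mset \<phi> G))" by auto
    then show "deriv m n 0 (R, add_mset \<phi> G)" by (rule isid_deriv[OF isid_contrG])
  next
    fix R G \<rho> assume "deriv m n 0 (add_mset \<rho> (add_mset \<rho> R), G)"
    from deriv_cases'[OF this] have "isid (add_mset \<rho> (add_mset \<rho> R), G)" by auto
    then show "deriv m n 0 (add_mset \<rho> R, G)" by (intro isid_deriv) (rule isid_R)
  qed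
next
  case (Suc h)
  have IHF: "\<And>R G \<phi>. deriv m n h (R, add_mset \<phi> (add_mset \<phi> G)) \<Longrightarrow> deriv m n h (R, add_mset \<phi> G)" using Suc.IH by blast
  have IHR: "\<And>R G \<rho>. deriv m n h (add_mset \<rho> (add_mset \<rho> R), G) \<Longrightarrow> deriv m n h (add_mset \<rho> R, G)" using Suc.IH by blast
  show ?case
  proof (intro conjI allI impI)
    fix R G \<phi> assume d: "deriv m n (Suc h) (R, add_mset \<phi> (add_mset \<phi> G))"
    show "deriv m n (Suc h) (R, add_mset \<phi> G)"
    proof (cases "isid (R, add_mset \<phi> (add_mset \<phi> G))")
      case True
      then show ?thesis by (rule isid_deriv[OF isid_contrG])
    next
      case False
      from deriv_dec[OF d False]
      obtain ps0 R0 G0 E RC GC where c: "core m n ps0 (R0,G0) E" and e: "E \<inter> labels (R, add_mset \<phi> (add_mset \<phi> G)) = {}"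
        and sRG: "(R, add_mset \<phi> (add_mset \<phi> G)) = (R0 + RC, G0 + GC)"
        and pr: "\<forall>P\<in>set ps0. deriv m n h (P \<oplus> (RC,GC))" by blast
      have sR: "R = R0 + RC" and sG: "add_mset \<phi> (add_mset \<phi> G) = G0 + GC" using sRG by auto
      have eS0: "E \<inter> labels (R0, G0) = {}" using e unfolding sRG by auto
      show ?thesis
      proof (cases "\<phi> \<in># G0")
        case True
        then have G0: "G0 = {#\<phi>#}" using core_G0[OF c] by auto
        then have GC: "GC = add_mset \<phi> G" using sG by simp
        show ?thesis
        proof (cases "\<exists>w i a. \<phi> = (w, Stit i a)")
          case True
          then obtain w i a where ph: "\<phi> = (w, Stit i a)" by blast
          from c G0 ph show ?thesis
          proof cases
            case (c_stit i' v w' a')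
            have eqs: "i' = i" "w' = w" "a' = a" using c_stit G0 ph by auto
            note c_stit = c_stit[unfolded eqs]
            have R0: "R0 = {#}" using c_stit by simp
            have vS: "v \<notin> labels (R, add_mset \<phi> G)" using e c_stit ph by auto
            have d1: "deriv m n h (add_mset (i,w,v) RC, add_mset \<phi> (add_mset (v,a) G))"
              using pr c_stit GC by (simp add: add_mset_commute)
            obtain v2 where v2: "v2 \<notin> labels (add_mset (i,w,v) RC, add_mset \<phi> (add_mset (v,a) G))"
              using fresh_ex finite_labels by blast
            have d2: "deriv m n h (add_mset (i,w,v2) (add_mset (i,w,v) RC), add_mset (v2,a) (add_mset (v,a) G))"
              using stit_inv[OF d1[unfolded ph] v2[unfolded ph]] .
            have v2f: "v2 \<notin> labels (RC, G)" "v2 \<noteq> w" "v2 \<noteq> v" using v2 ph by auto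
            from deriv_ren[OF d2, of "id(v2:=v)"]
            have "deriv m n h (add_mset (i,w,v) (add_mset (i,w,v) RC), add_mset (v,a) (add_mset (v,a) G))"
              using v2f ren_fresh_R[OF v2f(1)] ren_fresh_G[OF v2f(1)] by simp
            then have "deriv m n h (add_mset (i,w,v) RC, add_mset (v,a) (add_mset (v,a) G))" by (rule IHR)
            then have "deriv m n h (add_mset (i,w,v) RC, add_mset (v,a) G)" by (rule IHF)
            then have "\<forall>P\<in>set ps0. deriv m n h (P \<oplus> (RC, G))" using c_stit by simp
            moreover have "E \<inter> labels (RC, G) = {}" using vS c_stit R0 sR ph by auto
            ultimately have "deriv m n (Suc h) ((R0,G0) \<oplus> (RC, G))" using ctx_step[OF c eS0] by blast
            then show ?thesis using sR G0 by simp
          qed auto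
        next
          case False
          have nst: "\<And>w i a. G0 \<noteq> {#(w,Stit i a)#}" using False G0 by auto
          have sub: "\<And>P. P \<in> set ps0 \<Longrightarrow> G0 \<subseteq># snd P" using core_G0_sub[OF c _ nst] by blast
          have "\<forall>P\<in>set ps0. deriv m n h (P \<oplus> (RC, G))"
          proof
            fix P assume P: "P \<in> set ps0"
            obtain RP GP where PP: "P = (RP, GP)" by fastforce
            have "\<phi> \<in># GP" using sub[OF P] PP G0 by simp
            then obtain GP' where GP: "GP = add_mset \<phi> GP'" by (metis multi_member_split)
            have "deriv m n h (P \<oplus> (RC,GC))" using pr P by blast
            then have "deriv m n h (RP + RC, add_mset \<phi> (add_mset \<phi> (GP' + G)))" using PP GP GC by simp
            then have "deriv m n h (RP + RC, add_mset \<phi> (GP' + G))" by (rule IHF)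
            then show "deriv m n h (P \<oplus> (RC, G))" using PP GP by simp
          qed
          moreover have "E \<inter> labels (RC, G) = {}"
          proof -
            have "labels (RC, G) \<subseteq> labels (R, add_mset \<phi> (add_mset \<phi> G))" using sR by (cases \<phi>) (auto simp: labels_def)
            then show ?thesis using e by blast
          qed
          ultimately have "deriv m n (Suc h) ((R0,G0) \<oplus> (RC, G))" using ctx_step[OF c eS0] by blast
          then show ?thesis using sR G0 by simp
        qed
      next
        case False
        have "\<phi> \<in># G0 + GC" by (simp add: sG[symmetric])
        then have "\<phi> \<in># GC" using False by simp
        then obtain GC1 where GC1: "GC = add_mset \<phi> GC1" by (metis multi_member_split)
        then have aG: "add_mset \<phi> G = G0 + GC1" using sG by simp
        have "\<phi> \<in># G0 + GC1" by (simp add: aG[symmetric])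
        then have "\<phi> \<in># GC1" using False by simp
        then obtain GC2 where GC2: "GC1 = add_mset \<phi> GC2" by (metis multi_member_split)
        have sG2: "G = G0 + GC2" using sG GC1 GC2 by simp
        have "\<forall>P\<in>set ps0. deriv m n h (P \<oplus> (RC, add_mset \<phi> GC2))"
        proof
          fix P assume P: "P \<in> set ps0"
          obtain RP GP where PP: "P = (RP, GP)" by fastforce
          have "deriv m n h (P \<oplus> (RC,GC))" using pr P by blast
          then have "deriv m n h (RP + RC, add_mset \<phi> (add_mset \<phi> (GP + GC2)))" using PP GC1 GC2 by simp
          then have "deriv m n h (RP + RC, add_mset \<phi> (GP + GC2))" by (rule IHF)
          then show "deriv m n h (P \<oplus> (RC, add_mset \<phi> GC2))" using PP by simp
        qed
        moreover have "E \<inter> labels (RC, add_mset \<phi> GC2) = {}" using e sR sG2 by (cases \<phi>) (auto simp: labels_def)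
        ultimately have "deriv m n (Suc h) ((R0,G0) \<oplus> (RC, add_mset \<phi> GC2))" using ctx_step[OF c eS0] by blast
        then show ?thesis using sR sG2 by simp
      qed
    qed
  next
    fix R G \<rho> assume d: "deriv m n (Suc h) (add_mset \<rho> (add_mset \<rho> R), G)"
    show "deriv m n (Suc h) (add_mset \<rho> R, G)"
    proof (cases "isid (add_mset \<rho> (add_mset \<rho> R), G)")
      case True
      then show ?thesis by (intro isid_deriv) (rule isid_R)
    next
      case False
      from deriv_dec[OF d False]
      obtain ps0 R0 G0 E RC GC where c: "core m n ps0 (R0,G0) E" and e: "E \<inter> labels (add_mset \<rho> (add_mset \<rho> R), G) = {}"
        and sRG: "(add_mset \<rho> (add_mset \<rho> R), G) = (R0 + RC, G0 + GC)"
        and pr: "\<forall>P\<in>set ps0. deriv m n h (P \<oplus> (RC,GC))" by blast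
      have sR: "add_mset \<rho> (add_mset \<rho> R) = R0 + RC" and sG: "G = G0 + GC" using sRG by auto
      have eS0: "E \<inter> labels (R0, G0) = {}" using e unfolding sRG by auto
      consider (two) "count R0 \<rho> \<ge> 2" | (one) "count R0 \<rho> = 1" | (zero) "count R0 \<rho> = 0" by linarith
      then show ?thesis
      proof cases
        case two
        from core_R0[OF c] obtain i w u v where R0: "R0 = {#(i,w,u),(i,w,v)#}" and E: "E = {}" and i: "i \<in> {1..m}" and G0: "G0 = {#}"
          and ps0: "ps0 = [({#(i,w,u),(i,w,v),(i,u,v)#},{#})]"
          using two by (auto split: if_splits)
        have eq: "\<rho> = (i,w,u)" "u = v" using two R0 by (auto split: if_splits)
        have RC: "RC = R" using sR R0 eq by simp
        have "deriv m n h (add_mset \<rho> (add_mset \<rho> (add_mset (i,u,u) R)), G0 + GC)"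
          using pr ps0 RC eq G0 by (simp add: add_mset_commute)
        then have "deriv m n h (add_mset \<rho> (add_mset (i,u,u) R), G0 + GC)" by (rule IHR)
        then have "\<forall>P\<in>set [({#(i,u,u)#},{#})]. deriv m n h (P \<oplus> (add_mset \<rho> R, G))"
          using sG by (simp add: add_mset_commute)
        then have "deriv m n (Suc h) (({#},{#}) \<oplus> (add_mset \<rho> R, G))"
          using ctx_step[OF core.c_refl[OF i, of n u]] by simp
        then show ?thesis by simp
      next
        case one
        have "\<rho> \<in># R0" using one count_greater_zero_iff[of R0 \<rho>] by simp
        then obtain R0' where R0: "R0 = add_mset \<rho> R0'" by (metis multi_member_split)
        have "count (add_mset \<rho> (add_mset \<rho> R)) \<rho> = count (R0 + RC) \<rho>" using sR by simp
        then have "count RC \<rho> = Suc (count R \<rho>)" using one by simp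
        then have "\<rho> \<in># RC" by (metis count_greater_zero_iff zero_less_Suc)
        then obtain RC' where RC: "RC = add_mset \<rho> RC'" by (metis multi_member_split)
        have sR': "R = R0' + RC'" using sR R0 RC by simp
        have sub: "\<And>P. P \<in> set ps0 \<Longrightarrow> R0 \<subseteq># fst P" using core_R0_sub[OF c] by blast
        have "\<forall>P\<in>set ps0. deriv m n h (P \<oplus> (RC', GC))"
        proof
          fix P assume P: "P \<in> set ps0"
          obtain RP GP where PP: "P = (RP, GP)" by fastforce
          have "\<rho> \<in># RP" using sub[OF P] PP R0 by (simp add: mset_subset_eq_insertD)
          then obtain RP' where RP: "RP = add_mset \<rho> RP'" by (metis multi_member_split)
          have "deriv m n h (P \<oplus> (RC,GC))" using pr P by blast
          then have "deriv m n h (add_mset \<rho> (add_mset \<rho> (RP' + RC')), GP + GC)" using PP RP RC by simp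
          then have "deriv m n h (add_mset \<rho> (RP' + RC'), GP + GC)" by (rule IHR)
          then show "deriv m n h (P \<oplus> (RC', GC))" using PP RP by simp
        qed
        moreover have "E \<inter> labels (RC', GC) = {}" using e sR' sG by (cases \<rho>) (auto simp: labels_def)
        ultimately have "deriv m n (Suc h) ((R0,G0) \<oplus> (RC', GC))" using ctx_step[OF c eS0] by blast
        then show ?thesis using sR' sG R0 by simp
      next
        case zero
        then have nR0: "\<rho> \<notin># R0" by (simp add: count_eq_zero_iff)
        have "\<rho> \<in># R0 + RC" by (simp add: sR[symmetric])
        then have "\<rho> \<in># RC" using nR0 by simp
        then obtain RC1 where RC1: "RC = add_mset \<rho> RC1" by (metis multi_member_split)
        then have aR: "add_mset \<rho> R = R0 + RC1" using sR by simp
        have "\<rho> \<in># R0 + RC1" by (simp add: aR[symmetric])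
        then have "\<rho> \<in># RC1" using nR0 by simp
        then obtain RC2 where RC2: "RC1 = add_mset \<rho> RC2" by (metis multi_member_split)
        have sR2: "R = R0 + RC2" using sR RC1 RC2 by simp
        have "\<forall>P\<in>set ps0. deriv m n h (P \<oplus> (add_mset \<rho> RC2, GC))"
        proof
          fix P assume P: "P \<in> set ps0"
          obtain RP GP where PP: "P = (RP, GP)" by fastforce
          have "deriv m n h (P \<oplus> (RC,GC))" using pr P by blast
          then have "deriv m n h (add_mset \<rho> (add_mset \<rho> (RP + RC2)), GP + GC)" using PP RC1 RC2 by simp
          then have "deriv m n h (add_mset \<rho> (RP + RC2), GP + GC)" by (rule IHR)
          then show "deriv m n h (P \<oplus> (add_mset \<rho> RC2, GC))" using PP by simp
        qed
        moreover have "E \<inter> labels (add_mset \<rho> RC2, GC) = {}" using e sR2 sG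
          by (cases \<rho>) (auto simp: labels_def)
        ultimately have "deriv m n (Suc h) ((R0,G0) \<oplus> (add_mset \<rho> RC2, GC))" using ctx_step[OF c eS0] by blast
        then show ?thesis using sR2 sG by simp
      qed
    qed
  qed
qed

lemma contrG: "deriv m n h (R, add_mset \<phi> (add_mset \<phi> G)) \<Longrightarrow> deriv m n h (R, add_mset \<phi> G)"
  using contr_both by blast

lemma contrR: "deriv m n h (add_mset \<rho> (add_mset \<rho> R), G) \<Longrightarrow> deriv m n h (add_mset \<rho> R, G)"
  using contr_both by blast

lemma contrG_mset: "deriv m n h (R, G' + G' + G) \<Longrightarrow> deriv m n h (R, G' + G)"
proof (induction G' arbitrary: G)
  case empty
  then show ?case by simp
next
  case (add x G')
  have "deriv m n h (R, add_mset x (add_mset x (G' + G' + G)))" using add.prems by simp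
  then have "deriv m n h (R, add_mset x (G' + G' + G))" by (rule contrG)
  then have "deriv m n h (R, G' + G' + add_mset x G)" by simp
  then have "deriv m n h (R, G' + add_mset x G)" by (rule add.IH)
  then show ?case by simp
qed

lemma contrR_mset: "deriv m n h (R + R' + R', G) \<Longrightarrow> deriv m n h (R + R', G)"
proof (induction R' arbitrary: R)
  case empty
  then show ?case by simp
next
  case (add x R')
  have "deriv m n h (add_mset x (add_mset x (R + R' + R')), G)" using add.prems by simp
  then have "deriv m n h (add_mset x (R + R' + R'), G)" by (rule contrR)
  then have "deriv m n h (add_mset x R + R' + R', G)" by simp
  then have "deriv m n h (add_mset x R + R', G)" by (rule add.IH)
  then show ?case by simp
qed

lemma deriv_dec_fresh: "deriv m n (Suc h) S \<Longrightarrow> \<not> isid S \<Longrightarrow> finite L \<Longrightarrow> \<exists>ps0 R0 G0 E RC GC. core m n ps0 (R0,G0) E \<and>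
   E \<inter> (labels S \<union> L) = {} \<and> S = (R0 + RC, G0 + GC) \<and> (\<forall>P\<in>set ps0. deriv m n h (P \<oplus> (RC,GC)))"
proof -
  assume d: "deriv m n (Suc h) S" and ni: "\<not> isid S" and fL: "finite L"
  from deriv_dec[OF d ni] obtain ps0 R0 G0 E RC GC where c: "core m n ps0 (R0,G0) E" and e: "E \<inter> labels S = {}"
    and s: "S = (R0 + RC, G0 + GC)" and pr: "\<forall>P\<in>set ps0. deriv m n h (P \<oplus> (RC,GC))" by blast
  show ?thesis
  proof (cases "E = {}")
    case True
    then show ?thesis using c s pr by blast
  next
    case False
    then obtain e0 where E: "E = {e0}" using core_E[OF c] by auto
    obtain e' where e': "e' \<notin> labels S \<union> L" using fresh_ex[of "labels S \<union> L"] fL by auto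
    define f where "f = id(e0 := e')"
    have e0S: "e0 \<notin> labels S" using e E by auto
    have lS0: "labels (R0,G0) \<subseteq> labels S" "labels (RC,GC) \<subseteq> labels S" using s by auto
    have cond: "\<forall>e\<in>E. \<forall>z\<in>labels (R0,G0). f e \<noteq> f z"
    proof (intro ballI)
      fix e z assume "e \<in> E" "z \<in> labels (R0,G0)"
      then show "f e \<noteq> f z" using E e0S lS0 e' unfolding f_def by auto
    qed
    have c': "core m n (map (ren f) ps0) (ren f (R0,G0)) (f ` E)" by (rule core_ren[OF c cond])
    have r0: "ren f (R0,G0) = (R0,G0)" unfolding f_def by (rule ren_fresh) (use lS0 e0S in blast)
    have rC: "ren f (RC,GC) = (RC,GC)" unfolding f_def by (rule ren_fresh) (use lS0 e0S in blast)
    have "\<forall>P\<in>set (map (ren f) ps0). deriv m n h (P \<oplus> (RC,GC))"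
    proof
      fix P assume "P \<in> set (map (ren f) ps0)"
      then obtain P0 where P0: "P0 \<in> set ps0" "P = ren f P0" by auto
      have "deriv m n h (ren f (P0 \<oplus> (RC,GC)))" using pr P0 deriv_ren by blast
      then show "deriv m n h (P \<oplus> (RC,GC))" using P0 rC by (simp add: ren_sp)
    qed
    moreover have "f ` E \<inter> (labels S \<union> L) = {}" using E e' unfolding f_def by auto
    ultimately show ?thesis using c' r0 s by (intro exI[of _ "map (ren f) ps0"] exI[of _ R0] exI[of _ G0] exI[of _ "f ` E"] exI[of _ RC] exI[of _ GC]) simp
  qed
qed

lemma core_prem_sup: "core m n ps0 (R0,G0) E \<Longrightarrow> P \<in> set ps0 \<Longrightarrow> (\<And>w i a. G0 \<noteq> {#(w,Stit i a)#}) \<Longrightarrow>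
   \<exists>X. P = (R0, G0) \<oplus> X"
proof -
  assume c: "core m n ps0 (R0,G0) E" and P: "P \<in> set ps0" and ns: "\<And>w i a. G0 \<noteq> {#(w,Stit i a)#}"
  have a: "R0 \<subseteq># fst P" by (rule core_R0_sub[OF c P])
  have b: "G0 \<subseteq># snd P" by (rule core_G0_sub[OF c P ns])
  have "P = (R0, G0) \<oplus> (fst P - R0, snd P - G0)" using a b by (cases P) (simp add: subset_mset.add_diff_inverse)
  then show ?thesis by blast
qed

lemma inv_core: "core m n ps0 (R0,G0) E \<Longrightarrow> E \<inter> labels ((R0,G0) \<oplus> C) = {} \<Longrightarrow> deriv m n h ((R0,G0) \<oplus> C) \<Longrightarrow>
  P \<in> set ps0 \<Longrightarrow> deriv m n h (P \<oplus> C)"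
proof -
  assume c: "core m n ps0 (R0,G0) E" and e: "E \<inter> labels ((R0,G0) \<oplus> C) = {}" and d: "deriv m n h ((R0,G0) \<oplus> C)"
    and P: "P \<in> set ps0"
  show ?thesis
  proof (cases "\<exists>w i a. G0 = {#(w,Stit i a)#}")
    case True
    then obtain w i a where G0: "G0 = {#(w,Stit i a)#}" by blast
    from c G0 show ?thesis
    proof cases
      case (c_stit i' v w' a')
      have eqs: "i' = i" "w' = w" "a' = a" using c_stit G0 by auto
      obtain RC GC where C: "C = (RC, GC)" by fastforce
      have "deriv m n h (RC, add_mset (w, Stit i a) GC)" using d C c_stit eqs by simp
      moreover have "v \<notin> labels (RC, add_mset (w, Stit i a) GC)" using e C c_stit eqs by auto
      ultimately have "deriv m n h (add_mset (i,w,v) RC, add_mset (v,a) GC)" by (rule stit_inv)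
      then show ?thesis using P c_stit eqs C by simp
    qed auto
  next
    case False
    then obtain X where X: "P = (R0,G0) \<oplus> X" using core_prem_sup[OF c P] by blast
    have "deriv m n h (((R0,G0) \<oplus> C) \<oplus> X)" using d by (rule deriv_weak)
    then show ?thesis using X by (simp add: sp_assoc sp_commute[of X C])
  qed
qed

lemma rule_inv: "rule m n ps S \<Longrightarrow> deriv m n h S \<Longrightarrow> P \<in> set ps \<Longrightarrow> deriv m n h P"
proof -
  assume r: "rule m n ps S" and d: "deriv m n h S" and P: "P \<in> set ps"
  from r obtain ps0 S0 E C where c: "core m n ps0 S0 E" and e: "E \<inter> labels S = {}" and s: "S = S0 \<oplus> C"
    and p: "ps = map (\<lambda>P. P \<oplus> C) ps0" unfolding rule_core by blast
  obtain R0 G0 where S0: "S0 = (R0,G0)" by fastforce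
  from P p obtain P0 where P0: "P0 \<in> set ps0" "P = P0 \<oplus> C" by auto
  show ?thesis using inv_core[OF c[unfolded S0] _ _ P0(1)] e d s S0 P0 by simp
qed

lemma ctx_replace: "core m n ps0 (R0,G0) E \<Longrightarrow> E \<inter> labels (R0 + RC, G0 + add_mset \<phi> GC') = {} \<Longrightarrow>
  labels ({#}, X) \<subseteq> labels (R0 + RC, G0 + add_mset \<phi> GC') \<union> L \<Longrightarrow> E \<inter> L = {} \<Longrightarrow>
  (\<forall>P\<in>set ps0. deriv m n h (P \<oplus> (RC, X + GC'))) \<Longrightarrow> deriv m n (Suc h) (R0 + RC, X + (G0 + GC'))"
proof -
  assume c: "core m n ps0 (R0,G0) E" and e: "E \<inter> labels (R0 + RC, G0 + add_mset \<phi> GC') = {}"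
    and X: "labels ({#}, X) \<subseteq> labels (R0 + RC, G0 + add_mset \<phi> GC') \<union> L" and eL: "E \<inter> L = {}"
    and pr: "\<forall>P\<in>set ps0. deriv m n h (P \<oplus> (RC, X + GC'))"
  have e0: "E \<inter> labels (R0,G0) = {}" using e by (cases \<phi>) (auto simp: labels_def)
  have "labels (RC, X + GC') \<subseteq> labels (R0 + RC, G0 + add_mset \<phi> GC') \<union> L"
    using X by (cases \<phi>) (auto simp: labels_def)
  then have "E \<inter> labels (RC, X + GC') = {}" using e eL by blast
  then have "deriv m n (Suc h) ((R0,G0) \<oplus> (RC, X + GC'))" using ctx_step[OF c e0] pr by blast
  then show ?thesis by (simp add: add.left_commute)
qed

lemma dec_form: "deriv m n (Suc h) (R, add_mset \<phi> G) \<Longrightarrow> \<not> isid (R, add_mset \<phi> G) \<Longrightarrow> finite L \<Longrightarrow>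
  \<exists>ps0 R0 G0 E RC GC. core m n ps0 (R0,G0) E \<and> E \<inter> (labels (R, add_mset \<phi> G) \<union> L) = {} \<and> R = R0 + RC \<and>
   ((G0 = {#\<phi>#} \<and> GC = G) \<or> (\<exists>GC'. GC = add_mset \<phi> GC' \<and> G = G0 + GC')) \<and> (\<forall>P\<in>set ps0. deriv m n h (P \<oplus> (RC,GC)))"
proof -
  assume d: "deriv m n (Suc h) (R, add_mset \<phi> G)" and ni: "\<not> isid (R, add_mset \<phi> G)" and fL: "finite L"
  from deriv_dec_fresh[OF d ni fL] obtain ps0 R0 G0 E RC GC where c: "core m n ps0 (R0,G0) E"
    and e: "E \<inter> (labels (R, add_mset \<phi> G) \<union> L) = {}" and s: "(R, add_mset \<phi> G) = (R0 + RC, G0 + GC)"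
    and pr: "\<forall>P\<in>set ps0. deriv m n h (P \<oplus> (RC,GC))" by blast
  have sR: "R = R0 + RC" and sG: "add_mset \<phi> G = G0 + GC" using s by auto
  have "(G0 = {#\<phi>#} \<and> GC = G) \<or> (\<exists>GC'. GC = add_mset \<phi> GC' \<and> G = G0 + GC')"
  proof (cases "\<phi> \<in># G0")
    case True
    then have "G0 = {#\<phi>#}" using core_G0[OF c] by auto
    then show ?thesis using sG by simp
  next
    case False
    have "\<phi> \<in># G0 + GC" by (simp add: sG[symmetric])
    then have "\<phi> \<in># GC" using False by simp
    then obtain GC' where "GC = add_mset \<phi> GC'" by (metis multi_member_split)
    then show ?thesis using sG by simp
  qed
  then show ?thesis using c e sR pr by blast
qed

lemma conj_inv: "deriv m n h (R, add_mset (x, Conj a b) G) \<Longrightarrow>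
  deriv m n h (R, add_mset (x,a) G) \<and> deriv m n h (R, add_mset (x,b) G)"
proof (induction h arbitrary: R G)
  case 0
  from deriv_cases'[OF 0] have "isid (R, add_mset (x, Conj a b) G)" by auto
  then have "isid (R, add_mset (x,a) G)" "isid (R, add_mset (x,b) G)" by (auto intro: isid_swap)
  then show ?case using isid_deriv by blast
next
  case (Suc h)
  show ?case
  proof (cases "isid (R, add_mset (x, Conj a b) G)")
    case True
    then have "isid (R, add_mset (x,a) G)" "isid (R, add_mset (x,b) G)" by (auto intro: isid_swap)
    then show ?thesis using isid_deriv by blast
  next
    case False
    from dec_form[OF Suc.prems False, of "{}"] obtain ps0 R0 G0 E RC GC where c: "core m n ps0 (R0,G0) E"
      and e0: "E \<inter> (labels (R, add_mset (x, Conj a b) G) \<union> {}) = {}" and sR: "R = R0 + RC"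
      and alt: "(G0 = {#(x, Conj a b)#} \<and> GC = G) \<or> (\<exists>GC'. GC = add_mset (x, Conj a b) GC' \<and> G = G0 + GC')"
      and pr: "\<forall>P\<in>set ps0. deriv m n h (P \<oplus> (RC,GC))" by blast
    have e: "E \<inter> labels (R, add_mset (x, Conj a b) G) = {}" using e0 by simp
    from alt show ?thesis
    proof
      assume a1: "G0 = {#(x, Conj a b)#} \<and> GC = G"
      from c a1 show ?thesis
      proof cases
        case c_conj
        then have "deriv m n h (RC, add_mset (x, Conj a b) (add_mset (x,a) G))"
          "deriv m n h (RC, add_mset (x, Conj a b) (add_mset (x,b) G))" using pr a1 by auto
        then have "deriv m n h (RC, add_mset (x,a) (add_mset (x,a) G))" "deriv m n h (RC, add_mset (x,b) (add_mset (x,b) G))"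
          using Suc.IH by blast+
        then have "deriv m n h (RC, add_mset (x,a) G)" "deriv m n h (RC, add_mset (x,b) G)" using contrG by blast+
        then show ?thesis using sR c_conj deriv_mono[of m n h _ "Suc h"] by auto
      qed auto
    next
      assume "\<exists>GC'. GC = add_mset (x, Conj a b) GC' \<and> G = G0 + GC'"
      then obtain GC' where GC: "GC = add_mset (x, Conj a b) GC'" and sG: "G = G0 + GC'" by blast
      have e': "E \<inter> labels (R0 + RC, G0 + add_mset (x, Conj a b) GC') = {}" using e sR sG by simp
      have IH: "\<forall>P\<in>set ps0. deriv m n h (P \<oplus> (RC, {#(x,a)#} + GC')) \<and> deriv m n h (P \<oplus> (RC, {#(x,b)#} + GC'))"
      proof
        fix P assume P: "P \<in> set ps0"
        obtain RP GP where PP: "P = (RP,GP)" by fastforce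
        have "deriv m n h (RP + RC, add_mset (x, Conj a b) (GP + GC'))" using pr P PP GC by auto
        then show "deriv m n h (P \<oplus> (RC, {#(x,a)#} + GC')) \<and> deriv m n h (P \<oplus> (RC, {#(x,b)#} + GC'))"
          using Suc.IH PP by simp
      qed
      have lx: "labels ({#}, {#(x,c)#}) \<subseteq> labels (R0 + RC, G0 + add_mset (x, Conj a b) GC') \<union> {}" for c by auto
      have "deriv m n (Suc h) (R0 + RC, {#(x,a)#} + (G0 + GC'))"
        by (rule ctx_replace[OF c e' lx]) (use IH in auto)
      moreover have "deriv m n (Suc h) (R0 + RC, {#(x,b)#} + (G0 + GC'))"
        by (rule ctx_replace[OF c e' lx]) (use IH in auto)
      ultimately show ?thesis using sR sG by simp
    qed
  qed
qed

lemma disj_inv: "deriv m n h (R, add_mset (x, Disj a b) G) \<Longrightarrow>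
  deriv m n h (R, add_mset (x,a) (add_mset (x,b) G))"
proof (induction h arbitrary: R G)
  case 0
  from deriv_cases'[OF 0] have "isid (R, add_mset (x, Disj a b) G)" by auto
  then have "isid (R, add_mset (x,a) (add_mset (x,b) G))" by (auto simp: isid_def)
  then show ?case using isid_deriv by blast
next
  case (Suc h)
  show ?case
  proof (cases "isid (R, add_mset (x, Disj a b) G)")
    case True
    then have "isid (R, add_mset (x,a) (add_mset (x,b) G))" by (auto simp: isid_def)
    then show ?thesis using isid_deriv by blast
  next
    case False
    from dec_form[OF Suc.prems False, of "{}"] obtain ps0 R0 G0 E RC GC where c: "core m n ps0 (R0,G0) E"
      and e0: "E \<inter> (labels (R, add_mset (x, Disj a b) G) \<union> {}) = {}" and sR: "R = R0 + RC"
      and alt: "(G0 = {#(x, Disj a b)#} \<and> GC = G) \<or> (\<exists>GC'. GC = add_mset (x, Disj a b) GC' \<and> G = G0 + GC')"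
      and pr: "\<forall>P\<in>set ps0. deriv m n h (P \<oplus> (RC,GC))" by blast
    have e: "E \<inter> labels (R, add_mset (x, Disj a b) G) = {}" using e0 by simp
    from alt show ?thesis
    proof
      assume a1: "G0 = {#(x, Disj a b)#} \<and> GC = G"
      from c a1 show ?thesis
      proof cases
        case c_disj
        then have "deriv m n h (RC, add_mset (x, Disj a b) (add_mset (x,a) (add_mset (x,b) G)))"
          using pr a1 by auto
        then have "deriv m n h (RC, add_mset (x,a) (add_mset (x,b) (add_mset (x,a) (add_mset (x,b) G))))"
          using Suc.IH by blast
        then have "deriv m n h (RC, add_mset (x,a) (add_mset (x,a) (add_mset (x,b) (add_mset (x,b) G))))"
          by (simp add: add_mset_commute)
        then have "deriv m n h (RC, add_mset (x,a) (add_mset (x,b) (add_mset (x,b) G)))" using contrG by blast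
        then have "deriv m n h (RC, add_mset (x,b) (add_mset (x,b) (add_mset (x,a) G)))"
          by (simp add: add_mset_commute)
        then have "deriv m n h (RC, add_mset (x,b) (add_mset (x,a) G))" using contrG by blast
        then show ?thesis using sR c_disj deriv_mono[of m n h _ "Suc h"] by (auto simp: add_mset_commute)
      qed auto
    next
      assume "\<exists>GC'. GC = add_mset (x, Disj a b) GC' \<and> G = G0 + GC'"
      then obtain GC' where GC: "GC = add_mset (x, Disj a b) GC'" and sG: "G = G0 + GC'" by blast
      have e': "E \<inter> labels (R0 + RC, G0 + add_mset (x, Disj a b) GC') = {}" using e sR sG by simp
      have IH: "\<forall>P\<in>set ps0. deriv m n h (P \<oplus> (RC, {#(x,a),(x,b)#} + GC'))"
      proof
        fix P assume P: "P \<in> set ps0"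
        obtain RP GP where PP: "P = (RP,GP)" by fastforce
        have "deriv m n h (RP + RC, add_mset (x, Disj a b) (GP + GC'))" using pr P PP GC by auto
        then show "deriv m n h (P \<oplus> (RC, {#(x,a),(x,b)#} + GC'))"
          using Suc.IH PP by simp
      qed
      have lx: "labels ({#}, {#(x,a),(x,b)#}) \<subseteq> labels (R0 + RC, G0 + add_mset (x, Disj a b) GC') \<union> {}" by auto
      have "deriv m n (Suc h) (R0 + RC, {#(x,a),(x,b)#} + (G0 + GC'))"
        by (rule ctx_replace[OF c e' lx]) (use IH in auto)
      then show ?thesis using sR sG by simp
    qed
  qed
qed

lemma box_inv: "deriv m n h (R, add_mset (x, Box a) G) \<Longrightarrow> deriv m n h (R, add_mset (y,a) G)"
proof (induction h arbitrary: R G)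
  case 0
  from deriv_cases'[OF 0] have "isid (R, add_mset (x, Box a) G)" by auto
  then have "isid (R, add_mset (y,a) G)" by (auto intro: isid_swap)
  then show ?case using isid_deriv by blast
next
  case (Suc h)
  show ?case
  proof (cases "isid (R, add_mset (x, Box a) G)")
    case True
    then have "isid (R, add_mset (y,a) G)" by (auto intro: isid_swap)
    then show ?thesis using isid_deriv by blast
  next
    case False
    from dec_form[OF Suc.prems False, of "{y}"] obtain ps0 R0 G0 E RC GC where c: "core m n ps0 (R0,G0) E"
      and e: "E \<inter> (labels (R, add_mset (x, Box a) G) \<union> {y}) = {}" and sR: "R = R0 + RC"
      and alt: "(G0 = {#(x, Box a)#} \<and> GC = G) \<or> (\<exists>GC'. GC = add_mset (x, Box a) GC' \<and> G = G0 + GC')"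
      and pr: "\<forall>P\<in>set ps0. deriv m n h (P \<oplus> (RC,GC))" by blast
    from alt show ?thesis
    proof
      assume a1: "G0 = {#(x, Box a)#} \<and> GC = G"
      from c a1 show ?thesis
      proof cases
        case (c_box v)
        have vf: "v \<notin> labels (RC, G)" using e sR c_box a1 by auto
        have "deriv m n h (RC, add_mset (x, Box a) (add_mset (v,a) G))" using pr a1 c_box by auto
        then have "deriv m n h (RC, add_mset (y,a) (add_mset (v,a) G))" using Suc.IH by blast
        from deriv_ren[OF this, of "id(v:=y)"]
        have "deriv m n h (RC, add_mset (y,a) (add_mset (y,a) G))"
          using vf ren_fresh_R[OF vf] ren_fresh_G[OF vf] by (cases "y = v") auto
        then have "deriv m n h (RC, add_mset (y,a) G)" using contrG by blast
        then show ?thesis using sR c_box deriv_mono[of m n h _ "Suc h"] by auto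
      qed auto
    next
      assume "\<exists>GC'. GC = add_mset (x, Box a) GC' \<and> G = G0 + GC'"
      then obtain GC' where GC: "GC = add_mset (x, Box a) GC'" and sG: "G = G0 + GC'" by blast
      have e': "E \<inter> labels (R0 + RC, G0 + add_mset (x, Box a) GC') = {}" using e sR sG by auto
      have IH: "\<forall>P\<in>set ps0. deriv m n h (P \<oplus> (RC, {#(y,a)#} + GC'))"
      proof
        fix P assume P: "P \<in> set ps0"
        obtain RP GP where PP: "P = (RP,GP)" by fastforce
        have "deriv m n h (RP + RC, add_mset (x, Box a) (GP + GC'))" using pr P PP GC by auto
        then show "deriv m n h (P \<oplus> (RC, {#(y,a)#} + GC'))"
          using Suc.IH PP by simp
      qed
      have lx: "labels ({#}, {#(y,a)#}) \<subseteq> labels (R0 + RC, G0 + add_mset (x, Box a) GC') \<union> {y}" by auto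
      have ey: "E \<inter> {y} = {}" using e by auto
      have "deriv m n (Suc h) (R0 + RC, {#(y,a)#} + (G0 + GC'))"
        by (rule ctx_replace[OF c e' lx ey]) (use IH in auto)
      then show ?thesis using sR sG by simp
    qed
  qed
qed

lemma neg_neg[simp]: "neg (neg a) = a"
  by (induction a) auto

lemma ps_max: "(\<forall>P\<in>set ps. derivable m n P) \<Longrightarrow> \<exists>h. \<forall>P\<in>set ps. deriv m n h P"
proof (induction ps)
  case Nil
  then show ?case by simp
next
  case (Cons P ps)
  then obtain h1 where h1: "\<forall>P\<in>set ps. deriv m n h1 P" by auto
  obtain h2 where h2: "deriv m n h2 P" using Cons.prems unfolding derivable_def by auto
  have "\<forall>Q\<in>set (P # ps). deriv m n (max h1 h2) Q"
    using h1 h2 deriv_mono[of m n _ _ "max h1 h2"] by auto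
  then show ?case by blast
qed

lemma rebuild: "core m n ps0 S0 E \<Longrightarrow> E \<inter> labels (S0 \<oplus> C) = {} \<Longrightarrow> (\<forall>P\<in>set ps0. derivable m n (P \<oplus> C)) \<Longrightarrow>
  derivable m n (S0 \<oplus> C)"
proof -
  assume c: "core m n ps0 S0 E" and e: "E \<inter> labels (S0 \<oplus> C) = {}" and d: "\<forall>P\<in>set ps0. derivable m n (P \<oplus> C)"
  from d have "\<forall>P\<in>set (map (\<lambda>P. P \<oplus> C) ps0). derivable m n P" by auto
  from ps_max[OF this] obtain h where "\<forall>P\<in>set ps0. deriv m n h (P \<oplus> C)" by auto
  then have "deriv m n (Suc h) (S0 \<oplus> C)" using deriv_step'[OF c e] by blast
  then show ?thesis unfolding derivable_def by blast
qed

lemma derivable_weak: "derivable m n S \<Longrightarrow> derivable m n (S \<oplus> W)"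
  unfolding derivable_def using deriv_weak by blast

lemma derivable_weakG: "derivable m n (R, G) \<Longrightarrow> derivable m n (R, add_mset x G)"
  using derivable_weak[of m n "(R,G)" "({#},{#x#})"] by simp

lemma derivable_contrG: "derivable m n (R, add_mset x (add_mset x G)) \<Longrightarrow> derivable m n (R, add_mset x G)"
  unfolding derivable_def using contrG by blast

lemma derivable_contrR: "derivable m n (add_mset x (add_mset x R), G) \<Longrightarrow> derivable m n (add_mset x R, G)"
  unfolding derivable_def using contrR by blast

lemma ctx_cut:
  assumes c: "core m n ps0 (R0,G0) E" and e: "E \<inter> labels (R0 + RC, add_mset \<phi> (G0 + GC')) = {}"
    and eq: "fst \<psi> = fst \<phi>"
    and hyp: "derivable m n (R0 + RC, add_mset \<psi> (G0 + GC'))"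
    and step: "\<And>P. P \<in> set ps0 \<Longrightarrow> derivable m n (P \<oplus> (RC, add_mset \<psi> GC')) \<Longrightarrow> derivable m n (P \<oplus> (RC, GC'))"
  shows "derivable m n (R0 + RC, G0 + GC')"
proof -
  have lab: "labels (R0 + RC, add_mset \<psi> (G0 + GC')) = labels (R0 + RC, add_mset \<phi> (G0 + GC'))"
    using eq by (cases \<phi>; cases \<psi>) auto
  obtain h where h: "deriv m n h ((R0,G0) \<oplus> (RC, add_mset \<psi> GC'))" using hyp unfolding derivable_def by auto
  have e1: "E \<inter> labels ((R0,G0) \<oplus> (RC, add_mset \<psi> GC')) = {}" using e lab by simp
  have "\<forall>P\<in>set ps0. derivable m n (P \<oplus> (RC, GC'))"
  proof
    fix P assume P: "P \<in> set ps0"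
    have "deriv m n h (P \<oplus> (RC, add_mset \<psi> GC'))" by (rule inv_core[OF c e1 h P])
    then show "derivable m n (P \<oplus> (RC, GC'))" using step[OF P] unfolding derivable_def by blast
  qed
  moreover have "E \<inter> labels ((R0,G0) \<oplus> (RC, GC')) = {}" using e by (cases \<phi>) (auto simp: labels_def)
  ultimately have "derivable m n ((R0,G0) \<oplus> (RC, GC'))" using rebuild[OF c] by blast
  then show ?thesis by simp
qed

lemma isid_del: "isid (R, add_mset (w, a) G) \<Longrightarrow> (\<And>p. a \<noteq> At p) \<Longrightarrow> (\<And>p. a \<noteq> NAt p) \<Longrightarrow> isid (R, G)"
  by (auto simp: isid_def)

definition cutP :: "nat \<Rightarrow> nat \<Rightarrow> fm \<Rightarrow> bool" where
  "cutP m n a \<longleftrightarrow> (\<forall>R G x. derivable m n (R, add_mset (x,a) G) \<longrightarrow> derivable m n (R, add_mset (x, neg a) G) \<longrightarrow> derivable m n (R,G))"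

lemma cutP_neg: "cutP m n a \<Longrightarrow> cutP m n (neg a)"
  unfolding cutP_def by auto

lemma cut_at: "deriv m n h (R, add_mset (x, At p) G) \<Longrightarrow> derivable m n (R, add_mset (x, NAt p) G) \<Longrightarrow> derivable m n (R, G)"
proof (induction h arbitrary: R G)
  case 0
  from deriv_cases'[OF 0(1)] have i: "isid (R, add_mset (x, At p) G)" by auto
  show ?case
  proof (cases "(x, NAt p) \<in># G")
    case True
    then obtain G1 where G1: "G = add_mset (x, NAt p) G1" by (metis multi_member_split)
    then show ?thesis using 0(2) derivable_contrG by simp
  next
    case False
    then have "isid (R,G)" using i by (auto simp: isid_def)
    then show ?thesis unfolding derivable_def using isid_deriv by blast
  qed
next
  case (Suc h)
  show ?case
  proof (cases "isid (R, add_mset (x, At p) G)")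
    case i: True
    show ?thesis
    proof (cases "(x, NAt p) \<in># G")
      case True
      then obtain G1 where G1: "G = add_mset (x, NAt p) G1" by (metis multi_member_split)
      then show ?thesis using Suc(3) derivable_contrG by simp
    next
      case False
      then have "isid (R,G)" using i by (auto simp: isid_def)
      then show ?thesis unfolding derivable_def using isid_deriv by blast
    qed
  next
    case False
    from dec_form[OF Suc(2) False, of "{}"] obtain ps0 R0 G0 E RC GC where c: "core m n ps0 (R0,G0) E"
      and e0: "E \<inter> (labels (R, add_mset (x, At p) G) \<union> {}) = {}" and sR: "R = R0 + RC"
      and alt: "(G0 = {#(x, At p)#} \<and> GC = G) \<or> (\<exists>GC'. GC = add_mset (x, At p) GC' \<and> G = G0 + GC')"
      and pr: "\<forall>P\<in>set ps0. deriv m n h (P \<oplus> (RC,GC))" by blast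
    have e: "E \<inter> labels (R, add_mset (x, At p) G) = {}" using e0 by simp
    from alt show ?thesis
    proof
      assume a1: "G0 = {#(x, At p)#} \<and> GC = G"
      from c a1 show ?thesis by cases auto
    next
      assume "\<exists>GC'. GC = add_mset (x, At p) GC' \<and> G = G0 + GC'"
      then obtain GC' where GC: "GC = add_mset (x, At p) GC'" and sG: "G = G0 + GC'" by blast
      have "derivable m n (R0 + RC, G0 + GC')"
      proof (rule ctx_cut[OF c, where \<phi>="(x, At p)" and \<psi>="(x, NAt p)"])
        show "E \<inter> labels (R0 + RC, add_mset (x, At p) (G0 + GC')) = {}" using e sR sG by simp
        show "fst (x, NAt p) = fst (x, At p)" by simp
        show "derivable m n (R0 + RC, add_mset (x, NAt p) (G0 + GC'))" using Suc(3) sR sG by simp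
      next
        fix P assume P: "P \<in> set ps0" and d2: "derivable m n (P \<oplus> (RC, add_mset (x, NAt p) GC'))"
        obtain RP GP where PP: "P = (RP,GP)" by fastforce
        have "deriv m n h (RP + RC, add_mset (x, At p) (GP + GC'))" using pr P PP GC by auto
        moreover have "derivable m n (RP + RC, add_mset (x, NAt p) (GP + GC'))" using d2 PP by simp
        ultimately have "derivable m n (RP + RC, GP + GC')" by (rule Suc.IH)
        then show "derivable m n (P \<oplus> (RC, GC'))" using PP by simp
      qed
      then show ?thesis using sR sG by simp
    qed
  qed
qed

lemma cutP_At: "cutP m n (At p)"
  unfolding cutP_def derivable_def using cut_at unfolding derivable_def by fastforce

lemma cutP_Conj: "cutP m n a \<Longrightarrow> cutP m n b \<Longrightarrow> cutP m n (Conj a b)"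
proof (unfold cutP_def, intro allI impI)
  fix R G x
  assume ca: "\<forall>R G x. derivable m n (R, add_mset (x, a) G) \<longrightarrow> derivable m n (R, add_mset (x, neg a) G) \<longrightarrow> derivable m n (R, G)"
    and cb: "\<forall>R G x. derivable m n (R, add_mset (x, b) G) \<longrightarrow> derivable m n (R, add_mset (x, neg b) G) \<longrightarrow> derivable m n (R, G)"
    and d1: "derivable m n (R, add_mset (x, Conj a b) G)" and d2: "derivable m n (R, add_mset (x, neg (Conj a b)) G)"
  from d1 have da: "derivable m n (R, add_mset (x, a) G)" and db: "derivable m n (R, add_mset (x, b) G)"
    unfolding derivable_def using conj_inv by blast+
  from d2 have dn: "derivable m n (R, add_mset (x, neg a) (add_mset (x, neg b) G))"
    unfolding derivable_def using disj_inv by fastforce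
  have "derivable m n (R, add_mset (x, a) (add_mset (x, neg b) G))"
    using derivable_weakG[OF da, of "(x, neg b)"] by (simp add: add_mset_commute)
  then have "derivable m n (R, add_mset (x, neg b) G)" using ca dn by blast
  then show "derivable m n (R, G)" using cb db by blast
qed

lemma dia_side: "deriv m n h (R, add_mset (x, Dia (neg a)) G) \<Longrightarrow> derivable m n (R, add_mset (x, Box a) G) \<Longrightarrow>
   cutP m n a \<Longrightarrow> derivable m n (R, G)"
proof (induction h arbitrary: R G)
  case 0
  from deriv_cases'[OF 0(1)] have i: "isid (R, add_mset (x, Dia (neg a)) G)" by auto
  then have "isid (R,G)" by (rule isid_del) auto
  then show ?case unfolding derivable_def using isid_deriv by blast
next
  case (Suc h)
  show ?case
  proof (cases "isid (R, add_mset (x, Dia (neg a)) G)")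
    case True
    then have "isid (R,G)" by (rule isid_del) auto
    then show ?thesis unfolding derivable_def using isid_deriv by blast
  next
    case False
    from dec_form[OF Suc(2) False, of "{}"] obtain ps0 R0 G0 E RC GC where c: "core m n ps0 (R0,G0) E"
      and e0: "E \<inter> (labels (R, add_mset (x, Dia (neg a)) G) \<union> {}) = {}" and sR: "R = R0 + RC"
      and alt: "(G0 = {#(x, Dia (neg a))#} \<and> GC = G) \<or> (\<exists>GC'. GC = add_mset (x, Dia (neg a)) GC' \<and> G = G0 + GC')"
      and pr: "\<forall>P\<in>set ps0. deriv m n h (P \<oplus> (RC,GC))" by blast
    have e: "E \<inter> labels (R, add_mset (x, Dia (neg a)) G) = {}" using e0 by simp
    from alt show ?thesis
    proof
      assume a1: "G0 = {#(x, Dia (neg a))#} \<and> GC = G"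
      from c a1 show ?thesis
      proof cases
        case (c_dia w b u)
        have eqs: "w = x" "b = neg a" using c_dia a1 by auto
        have "deriv m n h (RC, add_mset (x, Dia (neg a)) (add_mset (u, neg a) G))" using pr a1 c_dia eqs by auto
        moreover have "derivable m n (RC, add_mset (x, Box a) (add_mset (u, neg a) G))"
          using derivable_weakG[OF Suc(3), of "(u, neg a)"] sR c_dia by (simp add: add_mset_commute)
        ultimately have d1: "derivable m n (RC, add_mset (u, neg a) G)" using Suc.IH Suc(4) by blast
        have d2: "derivable m n (RC, add_mset (u, a) G)" using Suc(3) sR c_dia box_inv unfolding derivable_def by fastforce
        show ?thesis using Suc(4) d1 d2 sR c_dia unfolding cutP_def by auto
      qed auto
    next
      assume "\<exists>GC'. GC = add_mset (x, Dia (neg a)) GC' \<and> G = G0 + GC'"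
      then obtain GC' where GC: "GC = add_mset (x, Dia (neg a)) GC'" and sG: "G = G0 + GC'" by blast
      have "derivable m n (R0 + RC, G0 + GC')"
      proof (rule ctx_cut[OF c, where \<phi>="(x, Dia (neg a))" and \<psi>="(x, Box a)"])
        show "E \<inter> labels (R0 + RC, add_mset (x, Dia (neg a)) (G0 + GC')) = {}" using e sR sG by simp
        show "fst (x, Box a) = fst (x, Dia (neg a))" by simp
        show "derivable m n (R0 + RC, add_mset (x, Box a) (G0 + GC'))" using Suc(3) sR sG by simp
      next
        fix P assume P: "P \<in> set ps0" and d2: "derivable m n (P \<oplus> (RC, add_mset (x, Box a) GC'))"
        obtain RP GP where PP: "P = (RP,GP)" by fastforce
        have "deriv m n h (RP + RC, add_mset (x, Dia (neg a)) (GP + GC'))" using pr P PP GC by auto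
        moreover have "derivable m n (RP + RC, add_mset (x, Box a) (GP + GC'))" using d2 PP by simp
        ultimately have "derivable m n (RP + RC, GP + GC')" using Suc.IH Suc(4) by blast
        then show "derivable m n (P \<oplus> (RC, GC'))" using PP by simp
      qed
      then show ?thesis using sR sG by simp
    qed
  qed
qed

lemma cutP_Box: "cutP m n a \<Longrightarrow> cutP m n (Box a)"
proof -
  assume ca: "cutP m n a"
  show "cutP m n (Box a)" unfolding cutP_def
  proof (intro allI impI)
    fix R G x assume d1: "derivable m n (R, add_mset (x, Box a) G)" and d2: "derivable m n (R, add_mset (x, neg (Box a)) G)"
    from d2 obtain h where "deriv m n h (R, add_mset (x, Dia (neg a)) G)" unfolding derivable_def by auto
    then show "derivable m n (R, G)" using dia_side d1 ca by blast
  qed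
qed

lemma cstit_side: "deriv m n h (R, add_mset (x, Cstit i (neg a)) G) \<Longrightarrow> derivable m n (R, add_mset (x, Stit i a) G) \<Longrightarrow>
   cutP m n a \<Longrightarrow> derivable m n (R, G)"
proof (induction h arbitrary: R G)
  case 0
  from deriv_cases'[OF 0(1)] have i: "isid (R, add_mset (x, Cstit i (neg a)) G)" by auto
  then have "isid (R,G)" by (rule isid_del) auto
  then show ?case unfolding derivable_def using isid_deriv by blast
next
  case (Suc h)
  show ?case
  proof (cases "isid (R, add_mset (x, Cstit i (neg a)) G)")
    case True
    then have "isid (R,G)" by (rule isid_del) auto
    then show ?thesis unfolding derivable_def using isid_deriv by blast
  next
    case False
    from dec_form[OF Suc(2) False, of "{}"] obtain ps0 R0 G0 E RC GC where c: "core m n ps0 (R0,G0) E"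
      and e0: "E \<inter> (labels (R, add_mset (x, Cstit i (neg a)) G) \<union> {}) = {}" and sR: "R = R0 + RC"
      and alt: "(G0 = {#(x, Cstit i (neg a))#} \<and> GC = G) \<or> (\<exists>GC'. GC = add_mset (x, Cstit i (neg a)) GC' \<and> G = G0 + GC')"
      and pr: "\<forall>P\<in>set ps0. deriv m n h (P \<oplus> (RC,GC))" by blast
    have e: "E \<inter> labels (R, add_mset (x, Cstit i (neg a)) G) = {}" using e0 by simp
    from alt show ?thesis
    proof
      assume a1: "G0 = {#(x, Cstit i (neg a))#} \<and> GC = G"
      from c a1 show ?thesis
      proof cases
        case (c_cstit i' w u b)
        have eqs: "i' = i" "w = x" "b = neg a" using c_cstit a1 by auto
        have R: "R = add_mset (i,x,u) RC" using sR c_cstit eqs by simp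
        have "deriv m n h (R, add_mset (x, Cstit i (neg a)) (add_mset (u, neg a) G))" using pr a1 c_cstit eqs R by auto
        moreover have "derivable m n (R, add_mset (x, Stit i a) (add_mset (u, neg a) G))"
          using derivable_weakG[OF Suc(3), of "(u, neg a)"] by (simp add: add_mset_commute)
        ultimately have d1: "derivable m n (R, add_mset (u, neg a) G)" using Suc.IH Suc(4) by blast
        obtain v where v: "v \<notin> labels (R, add_mset (x, Stit i a) G)" using fresh_ex finite_labels by blast
        have "derivable m n (add_mset (i,x,v) R, add_mset (v,a) G)"
          using Suc(3) stit_inv[OF _ v] unfolding derivable_def by blast
        then obtain h' where "deriv m n h' (add_mset (i,x,v) R, add_mset (v,a) G)" unfolding derivable_def by blast
        from deriv_ren[OF this, of "id(v:=u)"]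
        have "deriv m n h' (add_mset (i,x,u) R, add_mset (u,a) G)"
          using v ren_fresh_R[of v R G u] ren_fresh_G[of v R G u] by auto
        then have "deriv m n h' (add_mset (i,x,u) (add_mset (i,x,u) RC), add_mset (u,a) G)" using R by simp
        then have "deriv m n h' (R, add_mset (u,a) G)" using R contrR by blast
        then have d2: "derivable m n (R, add_mset (u, a) G)" unfolding derivable_def by blast
        show ?thesis using Suc(4) d1 d2 unfolding cutP_def by auto
      qed auto
    next
      assume "\<exists>GC'. GC = add_mset (x, Cstit i (neg a)) GC' \<and> G = G0 + GC'"
      then obtain GC' where GC: "GC = add_mset (x, Cstit i (neg a)) GC'" and sG: "G = G0 + GC'" by blast
      have "derivable m n (R0 + RC, G0 + GC')"
      proof (rule ctx_cut[OF c, where \<phi>="(x, Cstit i (neg a))" and \<psi>="(x, Stit i a)"])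
        show "E \<inter> labels (R0 + RC, add_mset (x, Cstit i (neg a)) (G0 + GC')) = {}" using e sR sG by simp
        show "fst (x, Stit i a) = fst (x, Cstit i (neg a))" by simp
        show "derivable m n (R0 + RC, add_mset (x, Stit i a) (G0 + GC'))" using Suc(3) sR sG by simp
      next
        fix P assume P: "P \<in> set ps0" and d2: "derivable m n (P \<oplus> (RC, add_mset (x, Stit i a) GC'))"
        obtain RP GP where PP: "P = (RP,GP)" by fastforce
        have "deriv m n h (RP + RC, add_mset (x, Cstit i (neg a)) (GP + GC'))" using pr P PP GC by auto
        moreover have "derivable m n (RP + RC, add_mset (x, Stit i a) (GP + GC'))" using d2 PP by simp
        ultimately have "derivable m n (RP + RC, GP + GC')" using Suc.IH Suc(4) by blast
        then show "derivable m n (P \<oplus> (RC, GC'))" using PP by simp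
      qed
      then show ?thesis using sR sG by simp
    qed
  qed
qed

lemma cutP_Stit: "cutP m n a \<Longrightarrow> cutP m n (Stit i a)"
proof -
  assume ca: "cutP m n a"
  show "cutP m n (Stit i a)" unfolding cutP_def
  proof (intro allI impI)
    fix R G x assume d1: "derivable m n (R, add_mset (x, Stit i a) G)" and d2: "derivable m n (R, add_mset (x, neg (Stit i a)) G)"
    from d2 obtain h where "deriv m n h (R, add_mset (x, Cstit i (neg a)) G)" unfolding derivable_def by auto
    then show "derivable m n (R, G)" using cstit_side d1 ca by blast
  qed
qed

lemma cutP_all: "cutP m n a \<and> cutP m n (neg a)"
proof (induction a)
  case (At p)
  then show ?case using cutP_At cutP_neg by blast
next
  case (NAt p)
  then show ?case using cutP_At[of m n p] cutP_neg[of m n "At p"] by simp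
next
  case (Conj a b)
  then show ?case using cutP_Conj cutP_neg by blast
next
  case (Disj a b)
  have "cutP m n (Conj (neg a) (neg b))" using Disj cutP_Conj by blast
  then show ?case using cutP_neg[of m n "Conj (neg a) (neg b)"] by simp
next
  case (Box a)
  then show ?case using cutP_Box cutP_neg by blast
next
  case (Dia a)
  have "cutP m n (Box (neg a))" using Dia cutP_Box by blast
  then show ?case using cutP_neg[of m n "Box (neg a)"] by simp
next
  case (Stit i a)
  then show ?case using cutP_Stit cutP_neg by blast
next
  case (Cstit i a)
  have "cutP m n (Stit i (neg a))" using Cstit cutP_Stit by blast
  then show ?case using cutP_neg[of m n "Stit i (neg a)"] by simp
qed

theorem cut_adm: "derivable m n (R, add_mset (x,a) G) \<Longrightarrow> derivable m n (R, add_mset (x, neg a) G) \<Longrightarrow> derivable m n (R,G)"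
  using cutP_all[of m n a] unfolding cutP_def by blast

lemma absorbR: "set_mset R0 \<subseteq> set_mset R \<Longrightarrow> derivable m n (R0 + R, G) \<Longrightarrow> derivable m n (R, G)"
proof (induction R0)
  case empty
  then show ?case by simp
next
  case (add x R0)
  then obtain R1 where R1: "R = add_mset x R1" by (metis insert_subset multi_member_split set_mset_add_mset_insert)
  have "derivable m n (add_mset x (add_mset x (R0 + R1)), G)" using add.prems R1 by simp
  then have "derivable m n (add_mset x (R0 + R1), G)" by (rule derivable_contrR)
  then have "derivable m n (R0 + R, G)" using R1 by simp
  then show ?case using add.IH add.prems by auto
qed

lemma absorbG: "set_mset G0 \<subseteq> set_mset G \<Longrightarrow> derivable m n (R, G0 + G) \<Longrightarrow> derivable m n (R, G)"
proof (induction G0)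
  case empty
  then show ?case by simp
next
  case (add x G0)
  then obtain G1 where G1: "G = add_mset x G1" by (metis insert_subset multi_member_split set_mset_add_mset_insert)
  have "derivable m n (R, add_mset x (add_mset x (G0 + G1)))" using add.prems G1 by simp
  then have "derivable m n (R, add_mset x (G0 + G1))" by (rule derivable_contrG)
  then have "derivable m n (R, G0 + G)" using G1 by simp
  then show ?case using add.IH add.prems by auto
qed

lemma labels_subset: "set_mset R0 \<subseteq> set_mset R \<Longrightarrow> set_mset G0 \<subseteq> set_mset G \<Longrightarrow> labels (R0,G0) \<subseteq> labels (R,G)"
  by (auto simp: labels_def)

lemma d_core: "core m n ps0 (R0,G0) E \<Longrightarrow> E \<inter> labels (R,G) = {} \<Longrightarrow> set_mset R0 \<subseteq> set_mset R \<Longrightarrow>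
  set_mset G0 \<subseteq> set_mset G \<Longrightarrow> (\<forall>P\<in>set ps0. derivable m n (P \<oplus> (R,G))) \<Longrightarrow> derivable m n (R,G)"
proof -
  assume c: "core m n ps0 (R0,G0) E" and e: "E \<inter> labels (R,G) = {}" and sR: "set_mset R0 \<subseteq> set_mset R"
    and sG: "set_mset G0 \<subseteq> set_mset G" and pr: "\<forall>P\<in>set ps0. derivable m n (P \<oplus> (R,G))"
  have "E \<inter> labels ((R0,G0) \<oplus> (R,G)) = {}" using e labels_subset[OF sR sG] by (auto simp: labels_sp)
  then have "derivable m n ((R0,G0) \<oplus> (R,G))" using rebuild[OF c] pr by blast
  then have "derivable m n (R0 + R, G0 + G)" by simp
  then have "derivable m n (R, G0 + G)" using absorbR[of R0 R m n "G0 + G"] sR by simp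
  then show ?thesis using absorbG sG by blast
qed

lemma d_conj: "(w, Conj a b) \<in># G \<Longrightarrow> derivable m n (R, add_mset (w,a) G) \<Longrightarrow> derivable m n (R, add_mset (w,b) G) \<Longrightarrow>
  derivable m n (R, G)"
  apply (rule d_core[OF c_conj[of m n w a b]])
  using derivable_weakG[of m n R "add_mset (w,a) G" "(w, Conj a b)"] derivable_weakG[of m n R "add_mset (w,b) G" "(w, Conj a b)"]
  by auto

lemma d_disj: "(w, Disj a b) \<in># G \<Longrightarrow> derivable m n (R, add_mset (w,a) (add_mset (w,b) G)) \<Longrightarrow> derivable m n (R, G)"
  apply (rule d_core[OF c_disj[of m n w a b]])
  using derivable_weakG[of m n R "add_mset (w,a) (add_mset (w,b) G)" "(w, Disj a b)"]
  by auto

lemma d_box: "(w, Box a) \<in># G \<Longrightarrow> v \<notin> labels (R,G) \<Longrightarrow> derivable m n (R, add_mset (v,a) G) \<Longrightarrow> derivable m n (R, G)"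
proof -
  assume a: "(w, Box a) \<in># G" and v: "v \<notin> labels (R,G)" and d: "derivable m n (R, add_mset (v,a) G)"
  have vw: "v \<noteq> w" using a v by (auto simp: labels_def)
  show ?thesis
    apply (rule d_core[OF c_box[OF vw, of m n a]])
    using a v derivable_weakG[OF d, of "(w, Box a)"] by auto
qed

lemma d_dia: "(w, Dia a) \<in># G \<Longrightarrow> derivable m n (R, add_mset (u,a) G) \<Longrightarrow> derivable m n (R, G)"
  apply (rule d_core[OF c_dia[of m n w a u]])
  using derivable_weakG[of m n R "add_mset (u,a) G" "(w, Dia a)"]
  by auto

lemma d_stit: "(w, Stit i a) \<in># G \<Longrightarrow> i \<in> {1..m} \<Longrightarrow> v \<notin> labels (R,G) \<Longrightarrow> derivable m n (add_mset (i,w,v) R, add_mset (v,a) G) \<Longrightarrow>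
   derivable m n (R, G)"
proof -
  assume a: "(w, Stit i a) \<in># G" and i: "i \<in> {1..m}" and v: "v \<notin> labels (R,G)" and d: "derivable m n (add_mset (i,w,v) R, add_mset (v,a) G)"
  have vw: "v \<noteq> w" using a v by (auto simp: labels_def)
  show ?thesis
    apply (rule d_core[OF c_stit[OF i vw, of n a]])
    using a v d by auto
qed

lemma d_cstit: "(w, Cstit i a) \<in># G \<Longrightarrow> (i,w,u) \<in># R \<Longrightarrow> i \<in> {1..m} \<Longrightarrow> derivable m n (R, add_mset (u,a) G) \<Longrightarrow>
   derivable m n (R, G)"
  apply (rule d_core[OF c_cstit[of i m n w u a]])
  using derivable_weakG[of m n R "add_mset (u,a) G" "(w, Cstit i a)"]
     derivable_weak[of m n "(R, add_mset (w, Cstit i a) (add_mset (u, a) G))" "({#(i,w,u)#},{#})"]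
  by auto

lemma d_refl: "i \<in> {1..m} \<Longrightarrow> derivable m n (add_mset (i,w,w) R, G) \<Longrightarrow> derivable m n (R, G)"
  apply (rule d_core[OF c_refl[of i m n w]])
  by auto

lemma d_eucl: "(i,w,u) \<in># R \<Longrightarrow> (i,w,v) \<in># R \<Longrightarrow> i \<in> {1..m} \<Longrightarrow> derivable m n (add_mset (i,u,v) R, G) \<Longrightarrow>
   derivable m n (R, G)"
  apply (rule d_core[OF c_eucl[of i m n w u v]])
  using derivable_weak[of m n "(add_mset (i,u,v) R, G)" "({#(i,w,u),(i,w,v)#},{#})"]
  by (auto simp: add_mset_commute)

lemma d_ioa: "v \<notin> labels (R,G) \<Longrightarrow> derivable m n (R + image_mset (\<lambda>i. (i, u i, v)) (mset [1..<Suc m]), G) \<Longrightarrow>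
   derivable m n (R, G)"
  apply (rule d_core[OF c_ioa[of m n u v]])
  by (auto simp: add.commute simp del: mset_upt)

lemma d_apc: "n > 0 \<Longrightarrow> i \<in> {1..m} \<Longrightarrow> (\<And>k j. k < n \<Longrightarrow> k < j \<Longrightarrow> j \<le> n \<Longrightarrow> derivable m n (add_mset (i, ws k, ws j) R, G)) \<Longrightarrow>
   derivable m n (R, G)"
  apply (rule d_core[OF c_apc[of n i m ws]])
  by (auto simp del: upt_Suc)

lemma agents_neg[simp]: "agents (neg a) = agents a"
  by (induction a) auto

lemma wf_simps[simp]: "wf_fm m (At p)" "wf_fm m (NAt p)" "wf_fm m (Conj a b) \<longleftrightarrow> wf_fm m a \<and> wf_fm m b"
  "wf_fm m (Disj a b) \<longleftrightarrow> wf_fm m a \<and> wf_fm m b" "wf_fm m (Box a) \<longleftrightarrow> wf_fm m a" "wf_fm m (Dia a) \<longleftrightarrow> wf_fm m a"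
  "wf_fm m (Stit i a) \<longleftrightarrow> i \<in> {1..m} \<and> wf_fm m a" "wf_fm m (Cstit i a) \<longleftrightarrow> i \<in> {1..m} \<and> wf_fm m a"
  "wf_fm m (neg a) \<longleftrightarrow> wf_fm m a"
  by (auto simp: wf_fm_def)

lemma fresh_lab: "\<exists>v. v \<notin> labels S"
  using fresh_ex finite_labels by blast

lemma idg: "wf_fm m a \<Longrightarrow> (w,a) \<in># G \<Longrightarrow> (w, neg a) \<in># G \<Longrightarrow> derivable m n (R,G)"
proof (induction a arbitrary: R G w)
  case (At p)
  then have "isid (R,G)" by (auto simp: isid_def)
  then show ?case unfolding derivable_def using isid_deriv by blast
next
  case (NAt p)
  then have "isid (R,G)" by (auto simp: isid_def)
  then show ?case unfolding derivable_def using isid_deriv by blast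
next
  case (Conj a b)
  show ?case
  proof (rule d_disj[where w=w and a="neg a" and b="neg b"])
    show "(w, Disj (neg a) (neg b)) \<in># G" using Conj by simp
    show "derivable m n (R, add_mset (w, neg a) (add_mset (w, neg b) G))"
      by (rule d_conj[where w=w and a=a and b=b]) (use Conj in \<open>auto intro: Conj.IH\<close>)
  qed
next
  case (Disj a b)
  show ?case
  proof (rule d_disj[where w=w and a=a and b=b])
    show "(w, Disj a b) \<in># G" using Disj by simp
    show "derivable m n (R, add_mset (w, a) (add_mset (w, b) G))"
      by (rule d_conj[where w=w and a="neg a" and b="neg b"]) (use Disj in \<open>auto intro: Disj.IH\<close>)
  qed
next
  case (Box a)
  obtain v where v: "v \<notin> labels (R,G)" using fresh_lab by blast
  show ?case
  proof (rule d_box[where w=w and a=a and v=v])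
    show "(w, Box a) \<in># G" "v \<notin> labels (R,G)" using Box v by auto
    show "derivable m n (R, add_mset (v, a) G)"
      by (rule d_dia[where w=w and a="neg a" and u=v]) (use Box in \<open>auto intro: Box.IH\<close>)
  qed
next
  case (Dia a)
  obtain v where v: "v \<notin> labels (R,G)" using fresh_lab by blast
  show ?case
  proof (rule d_box[where w=w and a="neg a" and v=v])
    show "(w, Box (neg a)) \<in># G" "v \<notin> labels (R,G)" using Dia v by auto
    show "derivable m n (R, add_mset (v, neg a) G)"
      by (rule d_dia[where w=w and a=a and u=v]) (use Dia in \<open>auto intro: Dia.IH\<close>)
  qed
next
  case (Stit i a)
  obtain v where v: "v \<notin> labels (R,G)" using fresh_lab by blast
  show ?case
  proof (rule d_stit[where w=w and a=a and v=v and i=i])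
    show "(w, Stit i a) \<in># G" "v \<notin> labels (R,G)" "i \<in> {1..m}" using Stit v by auto
    show "derivable m n (add_mset (i,w,v) R, add_mset (v, a) G)"
      by (rule d_cstit[where w=w and a="neg a" and u=v and i=i]) (use Stit in \<open>auto intro: Stit.IH\<close>)
  qed
next
  case (Cstit i a)
  obtain v where v: "v \<notin> labels (R,G)" using fresh_lab by blast
  show ?case
  proof (rule d_stit[where w=w and a="neg a" and v=v and i=i])
    show "(w, Stit i (neg a)) \<in># G" "v \<notin> labels (R,G)" "i \<in> {1..m}" using Cstit v by auto
    show "derivable m n (add_mset (i,w,v) R, add_mset (v, neg a) G)"
      by (rule d_cstit[where w=w and a=a and u=v and i=i]) (use Cstit in \<open>auto intro: Cstit.IH\<close>)
  qed
qed

lemma ident: "wf_fm m a \<Longrightarrow> derivable m n (R, add_mset (w, a) (add_mset (w, neg a) G))"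
  by (rule idg) auto

lemma fresh2: "\<exists>v. v \<notin> labels S \<and> v \<notin> X" if "finite X"
  using fresh_ex[of "labels S \<union> X"] that by auto

lemma lab_mem: "(w, a) \<in># G \<Longrightarrow> v \<notin> labels (R, G) \<Longrightarrow> v \<noteq> w"
  by (auto simp: labels_def)

lemma ax_A1: "(w, imp a (imp b a)) \<in># G \<Longrightarrow> wf_fm m a \<Longrightarrow> derivable m n (R,G)"
  unfolding imp_def
  apply (rule d_disj[where w=w and a="neg a" and b="Disj (neg b) a"], simp)
  apply (rule d_disj[where w=w and a="neg b" and b="a"], simp)
  apply (rule idg[where a=a and w=w], auto)
  done

lemma ax_A2: "(w, imp (imp (neg b) (neg a)) (imp a b)) \<in># G \<Longrightarrow> wf_fm m a \<Longrightarrow> wf_fm m b \<Longrightarrow> derivable m n (R,G)"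
  unfolding imp_def
  apply (rule d_disj[where w=w and a="Conj (neg b) a" and b="Disj (neg a) b"], simp)
  apply (rule d_disj[where w=w and a="neg a" and b="b"], simp)
  apply (rule d_conj[where w=w and a="neg b" and b=a], simp)
   apply (rule idg[where a=b and w=w], auto)
  apply (rule idg[where a=a and w=w], auto)
  done

lemma ax_A3: "(w, imp (imp a (imp b c)) (imp (imp a b) (imp a c))) \<in># G \<Longrightarrow> wf_fm m a \<Longrightarrow> wf_fm m b \<Longrightarrow> wf_fm m c \<Longrightarrow>
  derivable m n (R,G)"
  unfolding imp_def
  apply (rule d_disj[where w=w and a="Conj a (Conj b (neg c))" and b="Disj (Conj a (neg b)) (Disj (neg a) c)"], simp)
  apply (rule d_disj[where w=w and a="Conj a (neg b)" and b="Disj (neg a) c"], simp)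
  apply (rule d_disj[where w=w and a="neg a" and b="c"], simp)
  apply (rule d_conj[where w=w and a=a and b="Conj b (neg c)"], simp)
   apply (rule idg[where a=a and w=w], auto)
  apply (rule d_conj[where w=w and a=b and b="neg c"], simp)
   apply (rule d_conj[where w=w and a=a and b="neg b"], simp)
    apply (rule idg[where a=a and w=w], auto)
   apply (rule idg[where a=b and w=w], auto)
  apply (rule idg[where a=c and w=w], auto)
  done

lemma ax_BoxK: "(w, imp (Box (imp a b)) (imp (Box a) (Box b))) \<in># G \<Longrightarrow> wf_fm m a \<Longrightarrow> wf_fm m b \<Longrightarrow> derivable m n (R,G)"
proof -
  assume h: "(w, imp (Box (imp a b)) (imp (Box a) (Box b))) \<in># G" and wa: "wf_fm m a" and wb: "wf_fm m b"
  obtain v where v: "v \<notin> labels (R,G)" using fresh_lab by blast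
  have vw: "v \<noteq> w" using lab_mem[OF h v] .
  show ?thesis using h unfolding imp_def
    apply -
    apply (rule d_disj[where w=w and a="Dia (Conj a (neg b))" and b="Disj (Dia (neg a)) (Box b)"], simp)
    apply (rule d_disj[where w=w and a="Dia (neg a)" and b="Box b"], simp)
    apply (rule d_box[where w=w and a=b and v=v], simp)
     apply (use v vw in simp)
    apply (rule d_dia[where w=w and a="Conj a (neg b)" and u=v], simp)
    apply (rule d_dia[where w=w and a="neg a" and u=v], simp)
    apply (rule d_conj[where w=v and a=a and b="neg b"], simp)
     apply (rule idg[where a=a and w=v], use wa in auto)
    apply (rule idg[where a=b and w=v], use wb in auto)
    done
qed

lemma ax_BoxT: "(w, imp (Box a) a) \<in># G \<Longrightarrow> wf_fm m a \<Longrightarrow> derivable m n (R,G)"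
  unfolding imp_def
  apply (rule d_disj[where w=w and a="Dia (neg a)" and b="a"], simp)
  apply (rule d_dia[where w=w and a="neg a" and u=w], simp)
  apply (rule idg[where a=a and w=w], auto)
  done

lemma ax_Box5: "(w, imp (Dia a) (Box (Dia a))) \<in># G \<Longrightarrow> wf_fm m a \<Longrightarrow> derivable m n (R,G)"
proof -
  assume h: "(w, imp (Dia a) (Box (Dia a))) \<in># G" and wa: "wf_fm m a"
  obtain v where v: "v \<notin> labels (R,G)" using fresh_lab by blast
  obtain u where u: "u \<notin> labels (R,G)" "u \<notin> {v}" using fresh2[of "{v}" "(R,G)"] by auto
  have vw: "v \<noteq> w" "u \<noteq> w" using lab_mem[OF h v] lab_mem[OF h u(1)] by auto
  show ?thesis using h unfolding imp_def
    apply -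
    apply (rule d_disj[where w=w and a="Box (neg a)" and b="Box (Dia a)"], simp)
    apply (rule d_box[where w=w and a="Dia a" and v=v], simp)
     apply (use v vw in simp)
    apply (rule d_box[where w=w and a="neg a" and v=u], simp)
     apply (use u vw in simp)
    apply (rule d_dia[where w=v and a="a" and u=u], simp)
    apply (rule idg[where a=a and w=u], use wa in auto)
    done
qed

lemma ax_BoxD: "(w, Disj (Box a) (Dia (neg a))) \<in># G \<Longrightarrow> wf_fm m a \<Longrightarrow> derivable m n (R,G)"
  apply (rule d_disj[where w=w and a="Box a" and b="Dia (neg a)"], simp)
  apply (rule idg[where a="Box a" and w=w], auto)
  done

lemma ax_StitK: "(w, imp (Stit i (imp a b)) (imp (Stit i a) (Stit i b))) \<in># G \<Longrightarrow> i \<in> {1..m} \<Longrightarrow> wf_fm m a \<Longrightarrow> wf_fm m b \<Longrightarrow>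
  derivable m n (R,G)"
proof -
  assume h: "(w, imp (Stit i (imp a b)) (imp (Stit i a) (Stit i b))) \<in># G" and i: "i \<in> {1..m}" and wa: "wf_fm m a" and wb: "wf_fm m b"
  obtain v where v: "v \<notin> labels (R,G)" using fresh_lab by blast
  have vw: "v \<noteq> w" using lab_mem[OF h v] .
  show ?thesis using h unfolding imp_def
    apply -
    apply (rule d_disj[where w=w and a="Cstit i (Conj a (neg b))" and b="Disj (Cstit i (neg a)) (Stit i b)"], simp)
    apply (rule d_disj[where w=w and a="Cstit i (neg a)" and b="Stit i b"], simp)
    apply (rule d_stit[where w=w and a=b and v=v and i=i], simp)
      apply (rule i)
     apply (use v vw in simp)
    apply (rule d_cstit[where w=w and a="Conj a (neg b)" and u=v and i=i], simp, simp, rule i)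
    apply (rule d_cstit[where w=w and a="neg a" and u=v and i=i], simp, simp, rule i)
    apply (rule d_conj[where w=v and a=a and b="neg b"], simp)
     apply (rule idg[where a=a and w=v], use wa in auto)
    apply (rule idg[where a=b and w=v], use wb in auto)
    done
qed

lemma ax_StitT: "(w, imp (Stit i a) a) \<in># G \<Longrightarrow> i \<in> {1..m} \<Longrightarrow> wf_fm m a \<Longrightarrow> derivable m n (R,G)"
  unfolding imp_def
  apply (rule d_disj[where w=w and a="Cstit i (neg a)" and b="a"], simp)
  apply (rule d_refl[where i=i and w=w], simp)
  apply (rule d_cstit[where w=w and a="neg a" and u=w and i=i], simp, simp, simp)
  apply (rule idg[where a=a and w=w], auto)
  done

lemma ax_Stit5: "(w, imp (Cstit i a) (Stit i (Cstit i a))) \<in># G \<Longrightarrow> i \<in> {1..m} \<Longrightarrow> wf_fm m a \<Longrightarrow> derivable m n (R,G)"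
proof -
  assume h: "(w, imp (Cstit i a) (Stit i (Cstit i a))) \<in># G" and i: "i \<in> {1..m}" and wa: "wf_fm m a"
  obtain v where v: "v \<notin> labels (R,G)" using fresh_lab by blast
  obtain u where u: "u \<notin> labels (R,G)" "u \<notin> {v}" using fresh2[of "{v}" "(R,G)"] by auto
  have vw: "v \<noteq> w" "u \<noteq> w" using lab_mem[OF h v] lab_mem[OF h u(1)] by auto
  show ?thesis using h unfolding imp_def
    apply -
    apply (rule d_disj[where w=w and a="Stit i (neg a)" and b="Stit i (Cstit i a)"], simp)
    apply (rule d_stit[where w=w and a="Cstit i a" and v=v and i=i], simp)
      apply (rule i)
     apply (use v vw in simp)
    apply (rule d_stit[where w=w and a="neg a" and v=u and i=i], simp)
      apply (rule i)
     apply (use u v vw in simp)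
    apply (rule d_eucl[where i=i and w=w and u=v and v=u], simp, simp, rule i)
    apply (rule d_cstit[where w=v and a="a" and u=u and i=i], simp, simp, rule i)
    apply (rule idg[where a=a and w=u], use wa in auto)
    done
qed

lemma ax_StitD: "(w, Disj (Stit i a) (Cstit i (neg a))) \<in># G \<Longrightarrow> i \<in> {1..m} \<Longrightarrow> wf_fm m a \<Longrightarrow> derivable m n (R,G)"
  apply (rule d_disj[where w=w and a="Stit i a" and b="Cstit i (neg a)"], simp)
  apply (rule idg[where a="Stit i a" and w=w], auto)
  done

lemma ax_Bridge: "(w, imp (Box a) (Stit i a)) \<in># G \<Longrightarrow> i \<in> {1..m} \<Longrightarrow> wf_fm m a \<Longrightarrow> derivable m n (R,G)"
proof -
  assume h: "(w, imp (Box a) (Stit i a)) \<in># G" and i: "i \<in> {1..m}" and wa: "wf_fm m a"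
  obtain v where v: "v \<notin> labels (R,G)" using fresh_lab by blast
  have vw: "v \<noteq> w" using lab_mem[OF h v] .
  show ?thesis using h unfolding imp_def
    apply -
    apply (rule d_disj[where w=w and a="Dia (neg a)" and b="Stit i a"], simp)
    apply (rule d_stit[where w=w and a=a and v=v and i=i], simp)
      apply (rule i)
     apply (use v vw in simp)
    apply (rule d_dia[where w=w and a="neg a" and u=v], simp)
    apply (rule idg[where a=a and w=v], use wa in auto)
    done
qed

lemma neg_Conjs: "L \<noteq> [] \<Longrightarrow> neg (Conjs L) = Disjs (map neg L)"
  by (induction L rule: Conjs.induct) auto

lemma d_disjs: "(w, Disjs L) \<in># G \<Longrightarrow> derivable m n (R, mset (map (Pair w) L) + G) \<Longrightarrow> derivable m n (R,G)"
proof (induction L arbitrary: G rule: Disjs.induct)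
  case 1
  then show ?case by simp
next
  case (2 a)
  then show ?case using absorbG[of "{#(w,a)#}" G m n R] by simp
next
  case (3 a b L)
  let ?D = "Disjs (b # L)"
  have m1: "(w, Disj a ?D) \<in># G" using 3 by simp
  show ?case
  proof (rule d_disj[OF m1])
    have "derivable m n (R, mset (map (Pair w) (b # L)) + add_mset (w, a) (add_mset (w, ?D) G))"
      using derivable_weakG[OF "3.prems"(2), of "(w, ?D)"] by (simp add: add_mset_commute)
    then show "derivable m n (R, add_mset (w, a) (add_mset (w, ?D) G))" by (rule "3.IH"[rotated]) simp
  qed
qed

lemma d_conjs: "(w, Conjs L) \<in># G \<Longrightarrow> L \<noteq> [] \<Longrightarrow> (\<forall>a\<in>set L. derivable m n (R, add_mset (w,a) G)) \<Longrightarrow> derivable m n (R,G)"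
proof (induction L arbitrary: G rule: Conjs.induct)
  case 1
  then show ?case by simp
next
  case (2 a)
  then show ?case using absorbG[of "{#(w,a)#}" G m n R] by simp
next
  case (3 a b L)
  let ?C = "Conjs (b # L)"
  have m1: "(w, Conj a ?C) \<in># G" using 3 by simp
  show ?case
  proof (rule d_conj[OF m1])
    show "derivable m n (R, add_mset (w, a) G)" using "3.prems" by simp
    show "derivable m n (R, add_mset (w, ?C) G)"
    proof (rule "3.IH")
      show "(w, ?C) \<in># add_mset (w, ?C) G" by simp
      show "b # L \<noteq> []" by simp
      show "\<forall>c\<in>set (b # L). derivable m n (R, add_mset (w, c) (add_mset (w, ?C) G))"
      proof
        fix c assume "c \<in> set (b # L)"
        then have "derivable m n (R, add_mset (w, c) G)" using "3.prems"(3) by auto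
        from derivable_weakG[OF this, of "(w, ?C)"]
        show "derivable m n (R, add_mset (w, c) (add_mset (w, ?C) G))" by (simp add: add_mset_commute)
      qed
    qed
  qed
qed

lemma box_many: "distinct K \<Longrightarrow> (\<forall>k\<in>set K. (w, Box (b k)) \<in># G) \<Longrightarrow>
  (\<forall>z\<in>labels (R,G). z < N \<or> (\<exists>k'. z = N + k' \<and> k' \<notin> set K)) \<Longrightarrow>
  derivable m n (R, mset (map (\<lambda>k. (N + k, b k)) K) + G) \<Longrightarrow> derivable m n (R,G)"
proof (induction K arbitrary: G)
  case Nil
  then show ?case by simp
next
  case (Cons k K)
  let ?G' = "add_mset (N + k, b k) G"
  have "derivable m n (R, ?G')"
  proof (rule Cons.IH)
    show "distinct K" using Cons by simp
    show "\<forall>k\<in>set K. (w, Box (b k)) \<in># ?G'" using Cons by simp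
    show "\<forall>z\<in>labels (R, ?G'). z < N \<or> (\<exists>k'. z = N + k' \<and> k' \<notin> set K)"
    proof
      fix z assume "z \<in> labels (R, ?G')"
      then have "z = N + k \<or> z \<in> labels (R, G)" by simp
      then show "z < N \<or> (\<exists>k'. z = N + k' \<and> k' \<notin> set K)" using Cons.prems(1,3) by auto
    qed
    show "derivable m n (R, mset (map (\<lambda>k. (N + k, b k)) K) + ?G')" using Cons.prems(4) by simp
  qed
  moreover have "N + k \<notin> labels (R, G)" using Cons.prems(3) by fastforce
  ultimately show ?case using d_box[of w "b k" G "N + k" R m n] Cons.prems(2) by simp
qed

lemma disjs_many: "(\<forall>k\<in>set K. (u k, Disjs (L k)) \<in># G) \<Longrightarrow>
  derivable m n (R, sum_list (map (\<lambda>k. mset (map (Pair (u k)) (L k))) K) + G) \<Longrightarrow> derivable m n (R,G)"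
proof (induction K arbitrary: G)
  case Nil
  then show ?case by simp
next
  case (Cons k K)
  let ?G' = "mset (map (Pair (u k)) (L k)) + G"
  have "derivable m n (R, ?G')"
    by (rule Cons.IH) (use Cons.prems in \<open>auto simp: add.assoc add.commute add.left_commute\<close>)
  then show ?case using d_disjs Cons.prems(1) by fastforce
qed

lemma labels_lt_N: "z \<in> labels S \<Longrightarrow> z < Suc (Max (labels S))"
  by (simp add: le_imp_less_Suc)

lemma mem_lab: "(w, a) \<in># G \<Longrightarrow> w \<in> labels (R, G)"
  by (auto simp: labels_def)

lemma ax_IOA:
  assumes m1: "1 \<le> m" and wf: "\<forall>i\<in>{1..m}. wf_fm m (as i)"
    and h: "(w, imp (Conjs (map (\<lambda>i. Dia (Stit i (as i))) [1..<Suc m])) (Dia (Conjs (map (\<lambda>i. Stit i (as i)) [1..<Suc m])))) \<in># G"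
  shows "derivable m n (R,G)"
proof -
  define A where "A = [1..<Suc m]"
  have An: "A \<noteq> []" using m1 by (simp add: A_def)
  have setA: "set A = {1..m}" by (auto simp: A_def)
  have dA: "distinct A" by (simp add: A_def)
  define B where "B = map (\<lambda>i. Box (Cstit i (neg (as i)))) A"
  define C where "C = Conjs (map (\<lambda>i. Stit i (as i)) A)"
  have eq: "imp (Conjs (map (\<lambda>i. Dia (Stit i (as i))) A)) (Dia C) = Disj (Disjs B) (Dia C)"
    using An by (simp add: imp_def neg_Conjs B_def C_def comp_def)
  have h': "(w, imp (Conjs (map (\<lambda>i. Dia (Stit i (as i))) A)) (Dia C)) \<in># G" using h by (simp only: A_def C_def)
  have h1: "(w, Disj (Disjs B) (Dia C)) \<in># G" using h' unfolding eq .
  define N where "N = Suc (Max (labels (R,G)))"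
  have ltN: "\<And>z. z \<in> labels (R,G) \<Longrightarrow> z < N" unfolding N_def by (rule labels_lt_N)
  have wN: "w < N" using ltN[OF mem_lab[OF h1]] .
  define V where "V = N + Suc m"
  define G1 where "G1 = add_mset (w, Disjs B) (add_mset (w, Dia C) G)"
  define G2 where "G2 = mset (map (Pair w) B) + G1"
  define G3 where "G3 = mset (map (\<lambda>k. (N + k, Cstit k (neg (as k)))) A) + G2"
  define R' where "R' = R + image_mset (\<lambda>i. (i, N + i, V)) (mset A)"
  define G4 where "G4 = add_mset (V, C) G3"
  have lab2: "\<And>z. z \<in> labels (R,G2) \<Longrightarrow> z < N"
  proof -
    fix z assume "z \<in> labels (R,G2)"
    then have "z \<in> labels (R,G) \<or> z = w" by (auto simp: labels_def G2_def G1_def split: if_splits)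
    then show "z < N" using ltN wN by blast
  qed
  have lab3: "\<And>z. z \<in> labels (R,G3) \<Longrightarrow> z < V"
  proof -
    fix z assume "z \<in> labels (R,G3)"
    then have "z \<in> labels (R,G2) \<or> (\<exists>k\<in>set A. z = N + k)" by (auto simp: labels_def G3_def split: if_splits)
    then show "z < V" using lab2 setA unfolding V_def by fastforce
  qed
  have main: "\<forall>a\<in>set (map (\<lambda>i. Stit i (as i)) A). derivable m n (R', add_mset (V,a) G4)"
  proof
    fix a assume "a \<in> set (map (\<lambda>i. Stit i (as i)) A)"
    then obtain i where i: "i \<in> set A" and a: "a = Stit i (as i)" by auto
    have im: "i \<in> {1..m}" using i setA by auto
    have wfi: "wf_fm m (as i)" using wf im by blast
    obtain z where z: "z \<notin> labels (R', add_mset (V, a) G4)" using fresh_lab by blast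
    have m1: "(N + i, Cstit i (neg (as i))) \<in># G4" using i by (simp add: G4_def G3_def)
    have m2: "(i, N + i, V) \<in># R'" using i by (simp add: R'_def)
    show "derivable m n (R', add_mset (V,a) G4)"
      apply (rule d_stit[where w=V and a="as i" and v=z and i=i])
         apply (simp add: a)
        apply (rule im)
       apply (rule z)
      apply (rule d_refl[where i=i and w="N+i"], rule im)
      apply (rule d_eucl[where i=i and w="N+i" and u=V and v="N+i"])
         apply (simp add: m2)
        apply simp
       apply (rule im)
      apply (rule d_eucl[where i=i and w=V and u="N+i" and v=z])
         apply simp
        apply simp
       apply (rule im)
      apply (rule d_cstit[where w="N+i" and a="neg (as i)" and u=z and i=i])
         apply (simp add: m1)
        apply simp
       apply (rule im)
      apply (rule idg[where a="as i" and w=z])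
        apply (rule wfi)
       apply simp
      apply simp
      done
  qed
  have d4: "derivable m n (R', G4)"
    by (rule d_conjs[where w=V and L="map (\<lambda>i. Stit i (as i)) A"]) (use main An in \<open>auto simp: G4_def C_def\<close>)
  have d3: "derivable m n (R', G3)"
    by (rule d_dia[where w=w and a=C and u=V]) (use d4 in \<open>auto simp: G4_def G3_def G2_def G1_def\<close>)
  have dR: "derivable m n (R, G3)"
  proof (rule d_ioa[where v=V and u="\<lambda>i. N + i"])
    show "V \<notin> labels (R, G3)" using lab3 by blast
    show "derivable m n (R + {#(i, N + i, V). i \<in># mset [1..<Suc m]#}, G3)" using d3 unfolding R'_def A_def .
  qed
  have d2: "derivable m n (R, G2)"
  proof (rule box_many[where K=A and w=w and b="\<lambda>k. Cstit k (neg (as k))" and N=N])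
    show "distinct A" by (rule dA)
    show "\<forall>k\<in>set A. (w, Box (Cstit k (neg (as k)))) \<in># G2" by (auto simp: G2_def B_def)
    show "\<forall>z\<in>labels (R, G2). z < N \<or> (\<exists>k'. z = N + k' \<and> k' \<notin> set A)" using lab2 by blast
    show "derivable m n (R, mset (map (\<lambda>k. (N + k, Cstit k (neg (as k)))) A) + G2)" using dR unfolding G3_def .
  qed
  have d1: "derivable m n (R, G1)"
    by (rule d_disjs[where w=w and L=B]) (use d2 in \<open>auto simp: G1_def G2_def\<close>)
  show ?thesis
    by (rule d_disj[where w=w and a="Disjs B" and b="Dia C"]) (use h1 d1 in \<open>auto simp: G1_def\<close>)
qed

lemma mem_sum_list: "y \<in># M \<Longrightarrow> M \<in> set Ms \<Longrightarrow> y \<in># sum_list Ms"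
  by (induction Ms) auto

lemma ax_APC:
  assumes n0: "n > 0" and i: "i \<in> {1..m}" and len: "length as = n" and wf: "\<forall>a\<in>set as. wf_fm m a"
    and h: "(w, imp (Conjs (map (\<lambda>k. Dia (Conjs (map neg (take k as) @ [Stit i (as ! k)]))) [0..<n])) (Disjs as)) \<in># G"
  shows "derivable m n (R,G)"
proof -
  define K where "K = [0..<n]"
  define L where "L = (\<lambda>k. take k as @ [Cstit i (neg (as ! k))])"
  define B where "B = map (\<lambda>k. Box (Disjs (L k))) K"
  have Kn: "K \<noteq> []" using n0 by (simp add: K_def)
  have eq: "neg (Conjs (map (\<lambda>k. Dia (Conjs (map neg (take k as) @ [Stit i (as ! k)]))) K)) = Disjs B"
    using Kn by (simp add: neg_Conjs B_def L_def comp_def)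
  have h1: "(w, Disj (Disjs B) (Disjs as)) \<in># G" using h eq unfolding K_def imp_def by simp
  define N where "N = Suc (Max (labels (R,G)))"
  have ltN: "\<And>z. z \<in> labels (R,G) \<Longrightarrow> z < N" unfolding N_def by (rule labels_lt_N)
  have wN: "w < N" using ltN[OF mem_lab[OF h1]] .
  define G1 where "G1 = add_mset (w, Disjs B) (add_mset (w, Disjs as) G)"
  define G2 where "G2 = mset (map (Pair w) B) + G1"
  define G3 where "G3 = mset (map (Pair w) as) + G2"
  define G4 where "G4 = mset (map (\<lambda>k. (N + k, Disjs (L k))) K) + G3"
  define G5 where "G5 = sum_list (map (\<lambda>k. mset (map (Pair (N + k)) (L k))) K) + G4"
  define ws where "ws = (\<lambda>k. if k < n then N + k else w)"
  have inG5: "\<And>k x. k < n \<Longrightarrow> x \<in> set (L k) \<Longrightarrow> (N + k, x) \<in># G5"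
  proof -
    fix k x assume k: "k < n" and x: "x \<in> set (L k)"
    have a1: "(N + k, x) \<in># mset (map (Pair (N + k)) (L k))" using x by simp
    have kK: "k \<in> set K" using k by (simp add: K_def)
    have a2: "mset (map (Pair (N + k)) (L k)) \<in> set (map (\<lambda>k. mset (map (Pair (N + k)) (L k))) K)"
      unfolding set_map by (rule imageI[OF kK])
    have "(N + k, x) \<in># sum_list (map (\<lambda>k. mset (map (Pair (N + k)) (L k))) K)" by (rule mem_sum_list[OF a1 a2])
    then show "(N + k, x) \<in># G5" unfolding G5_def by simp
  qed
  have d5: "derivable m n (R, G5)"
  proof (rule d_apc[where ws=ws and i=i, OF n0 i])
    fix k j assume k: "k < n" and kj: "k < j" and jn: "j \<le> n"
    have wk: "ws k = N + k" using k by (simp add: ws_def)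
    have wfk: "wf_fm m (as ! k)" using wf k len by auto
    have c1: "(N + k, Cstit i (neg (as ! k))) \<in># G5" using inG5[OF k] by (simp add: L_def)
    have c2: "(ws j, as ! k) \<in># G5"
    proof (cases "j < n")
      case True
      have t1: "take j as ! k = as ! k" using kj by simp
      have t2: "k < length (take j as)" using kj True len by simp
      have "as ! k \<in> set (take j as)" using nth_mem[OF t2] t1 by simp
      then have "as ! k \<in> set (L j)" by (simp add: L_def)
      then show ?thesis using inG5[OF True] True by (simp add: ws_def)
    next
      case False
      then have "ws j = w" using jn by (simp add: ws_def)
      moreover have "(w, as ! k) \<in># G3" using k len by (simp add: G3_def)
      ultimately show ?thesis by (simp add: G5_def G4_def)
    qed
    show "derivable m n (add_mset (i, ws k, ws j) R, G5)"
      apply (rule d_cstit[where w="N+k" and a="neg (as ! k)" and u="ws j" and i=i])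
         apply (rule c1)
        apply (simp add: wk)
       apply (rule i)
      apply (rule idg[where a="as ! k" and w="ws j"])
        apply (rule wfk)
       apply (simp add: c2)
      apply simp
      done
  qed
  have d4: "derivable m n (R, G4)"
    by (rule disjs_many[where K=K and u="\<lambda>k. N + k" and L=L]) (use d5 in \<open>auto simp: G4_def G5_def\<close>)
  have lab3: "\<And>z. z \<in> labels (R,G3) \<Longrightarrow> z < N"
  proof -
    fix z assume "z \<in> labels (R,G3)"
    then have "z \<in> labels (R,G) \<or> z = w" by (auto simp: labels_def G3_def G2_def G1_def split: if_splits)
    then show "z < N" using ltN wN by blast
  qed
  have d3: "derivable m n (R, G3)"
  proof (rule box_many[where K=K and w=w and b="\<lambda>k. Disjs (L k)" and N=N])
    show "distinct K" by (simp add: K_def)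
    show "\<forall>k\<in>set K. (w, Box (Disjs (L k))) \<in># G3" by (auto simp: G3_def G2_def B_def)
    show "\<forall>z\<in>labels (R, G3). z < N \<or> (\<exists>k'. z = N + k' \<and> k' \<notin> set K)" using lab3 by blast
    show "derivable m n (R, mset (map (\<lambda>k. (N + k, Disjs (L k))) K) + G3)" using d4 unfolding G4_def .
  qed
  have d2: "derivable m n (R, G2)"
    by (rule d_disjs[where w=w and L=as]) (use d3 in \<open>auto simp: G3_def G2_def G1_def\<close>)
  have d1: "derivable m n (R, G1)"
    by (rule d_disjs[where w=w and L=B]) (use d2 in \<open>auto simp: G1_def G2_def\<close>)
  show ?thesis
    by (rule d_disj[where w=w and a="Disjs B" and b="Disjs as"]) (use h1 d1 in \<open>auto simp: G1_def\<close>)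
qed

lemma Ldm_G3: "Ldm m n a \<Longrightarrow> 1 \<le> m \<Longrightarrow> derivable m n (R, add_mset (w,a) G)"
proof (induction a arbitrary: R G w rule: Ldm.induct)
  case (A1 a b)
  then show ?case by (intro ax_A1[where w=w and a=a and b=b]) auto
next
  case (A2 a b)
  then show ?case by (intro ax_A2[where w=w and a=a and b=b]) auto
next
  case (A3 a b c)
  then show ?case by (intro ax_A3[where w=w and a=a and b=b and c=c]) auto
next
  case (BoxK a b)
  then show ?case by (intro ax_BoxK[where w=w and a=a and b=b]) auto
next
  case (BoxT a)
  then show ?case by (intro ax_BoxT[where w=w and a=a]) auto
next
  case (Box5 a)
  then show ?case by (intro ax_Box5[where w=w and a=a]) auto
next
  case (BoxD a)
  then show ?case by (intro ax_BoxD[where w=w and a=a]) auto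
next
  case (StitK i a b)
  then show ?case by (intro ax_StitK[where w=w and a=a and b=b and i=i]) auto
next
  case (StitT i a)
  then show ?case by (intro ax_StitT[where w=w and a=a and i=i]) auto
next
  case (Stit5 i a)
  then show ?case by (intro ax_Stit5[where w=w and a=a and i=i]) auto
next
  case (StitD i a)
  then show ?case by (intro ax_StitD[where w=w and a=a and i=i]) auto
next
  case (Bridge i a)
  then show ?case by (intro ax_Bridge[where w=w and a=a and i=i]) auto
next
  case (IOA as)
  then show ?case by (intro ax_IOA[where w=w and as=as]) auto
next
  case (APC i as)
  then show ?case by (intro ax_APC[where w=w and as=as and i=i]) auto
next
  case (MP a b)
  have d1: "derivable m n (R, add_mset (w, Disj (neg a) b) G)" using MP.IH(1)[OF MP.prems] by (simp add: imp_def)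
  then have d1': "derivable m n (R, add_mset (w, neg a) (add_mset (w, b) G))"
    unfolding derivable_def using disj_inv by blast
  have d2: "derivable m n (R, add_mset (w, a) (add_mset (w, b) G))" using MP.IH(2)[OF MP.prems] .
  show ?case by (rule cut_adm[OF d2 d1'])
next
  case (Nec a)
  obtain v where v: "v \<notin> labels (R, add_mset (w, Box a) G)" using fresh_lab by blast
  show ?case
    by (rule d_box[where w=w and a=a and v=v]) (use v Nec in auto)
qed

fun sat :: "'w set \<Rightarrow> (nat \<Rightarrow> 'w \<Rightarrow> 'w \<Rightarrow> bool) \<Rightarrow> (nat \<Rightarrow> 'w \<Rightarrow> bool) \<Rightarrow> 'w \<Rightarrow> fm \<Rightarrow> bool" where
  "sat W Rl V x (At p) = V p x"
| "sat W Rl V x (NAt p) = (\<not> V p x)"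
| "sat W Rl V x (Conj a b) = (sat W Rl V x a \<and> sat W Rl V x b)"
| "sat W Rl V x (Disj a b) = (sat W Rl V x a \<or> sat W Rl V x b)"
| "sat W Rl V x (Box a) = (\<forall>y\<in>W. sat W Rl V y a)"
| "sat W Rl V x (Dia a) = (\<exists>y\<in>W. sat W Rl V y a)"
| "sat W Rl V x (Stit i a) = (\<forall>y\<in>W. Rl i x y \<longrightarrow> sat W Rl V y a)"
| "sat W Rl V x (Cstit i a) = (\<exists>y\<in>W. Rl i x y \<and> sat W Rl V y a)"

lemma sat_neg[simp]: "sat W Rl V x (neg a) = (\<not> sat W Rl V x a)"
  by (induction a arbitrary: x) auto

definition frame :: "nat \<Rightarrow> nat \<Rightarrow> 'w set \<Rightarrow> (nat \<Rightarrow> 'w \<Rightarrow> 'w \<Rightarrow> bool) \<Rightarrow> bool" where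
  "frame m n W Rl \<longleftrightarrow> (\<forall>i\<in>{1..m}. \<forall>x\<in>W. Rl i x x) \<and>
     (\<forall>i\<in>{1..m}. \<forall>x\<in>W. \<forall>y\<in>W. \<forall>z\<in>W. Rl i x y \<longrightarrow> Rl i x z \<longrightarrow> Rl i y z) \<and>
     (\<forall>f. (\<forall>i\<in>{1..m}. f i \<in> W) \<longrightarrow> (\<exists>v\<in>W. \<forall>i\<in>{1..m}. Rl i (f i) v)) \<and>
     (n > 0 \<longrightarrow> (\<forall>i\<in>{1..m}. \<forall>ws. (\<forall>k\<le>n. ws k \<in> W) \<longrightarrow> (\<exists>k<n. \<exists>j. k < j \<and> j \<le> n \<and> Rl i (ws k) (ws j))))"

definition Rsat :: "(nat \<Rightarrow> 'w \<Rightarrow> 'w \<Rightarrow> bool) \<Rightarrow> (nat \<Rightarrow> 'w) \<Rightarrow> ratom multiset \<Rightarrow> bool" where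
  "Rsat Rl \<rho> R \<longleftrightarrow> (\<forall>r\<in>#R. Rl (fst r) (\<rho> (fst (snd r))) (\<rho> (snd (snd r))))"

definition Gsat :: "'w set \<Rightarrow> (nat \<Rightarrow> 'w \<Rightarrow> 'w \<Rightarrow> bool) \<Rightarrow> (nat \<Rightarrow> 'w \<Rightarrow> bool) \<Rightarrow> (nat \<Rightarrow> 'w) \<Rightarrow> lfm multiset \<Rightarrow> bool" where
  "Gsat W Rl V \<rho> G \<longleftrightarrow> (\<exists>g\<in>#G. sat W Rl V (\<rho> (fst g)) (snd g))"

lemma Rsat_simps[simp]: "Rsat Rl \<rho> {#} = True" "Rsat Rl \<rho> (add_mset (i,x,y) R) = (Rl i (\<rho> x) (\<rho> y) \<and> Rsat Rl \<rho> R)"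
  "Rsat Rl \<rho> (R1 + R2) = (Rsat Rl \<rho> R1 \<and> Rsat Rl \<rho> R2)"
  by (auto simp: Rsat_def)

lemma Gsat_simps[simp]: "Gsat W Rl V \<rho> {#} = False" "Gsat W Rl V \<rho> (add_mset (x,a) G) = (sat W Rl V (\<rho> x) a \<or> Gsat W Rl V \<rho> G)"
  "Gsat W Rl V \<rho> (G1 + G2) = (Gsat W Rl V \<rho> G1 \<or> Gsat W Rl V \<rho> G2)"
  by (auto simp: Gsat_def)

lemma lab_r: "r \<in># R \<Longrightarrow> fst (snd r) \<in> labels (R,G) \<and> snd (snd r) \<in> labels (R,G)"
  unfolding labels_def by (cases r) force

lemma lab_g: "g \<in># G \<Longrightarrow> fst g \<in> labels (R,G)"
  unfolding labels_def by (cases g) force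

lemma Rsat_cong: "(\<forall>z\<in>labels (R,G). \<rho> z = \<rho>' z) \<Longrightarrow> Rsat Rl \<rho> R = Rsat Rl \<rho>' R"
proof -
  assume a: "\<forall>z\<in>labels (R,G). \<rho> z = \<rho>' z"
  have "\<And>r. r \<in># R \<Longrightarrow> Rl (fst r) (\<rho> (fst (snd r))) (\<rho> (snd (snd r))) = Rl (fst r) (\<rho>' (fst (snd r))) (\<rho>' (snd (snd r)))"
    using a lab_r[of _ R G] by metis
  then show ?thesis unfolding Rsat_def by blast
qed

lemma Gsat_cong: "(\<forall>z\<in>labels (R,G). \<rho> z = \<rho>' z) \<Longrightarrow> Gsat W Rl V \<rho> G = Gsat W Rl V \<rho>' G"
proof -
  assume a: "\<forall>z\<in>labels (R,G). \<rho> z = \<rho>' z"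
  have "\<And>g. g \<in># G \<Longrightarrow> sat W Rl V (\<rho> (fst g)) (snd g) = sat W Rl V (\<rho>' (fst g)) (snd g)"
    using a lab_g[of _ G R] by metis
  then show ?thesis unfolding Gsat_def by blast
qed

lemma Rsat_upd: "v \<notin> labels (R,G) \<Longrightarrow> Rsat Rl (\<rho>(v:=y)) R = Rsat Rl \<rho> R"
  by (rule Rsat_cong[where G=G]) auto

lemma Gsat_upd: "v \<notin> labels (R,G) \<Longrightarrow> Gsat W Rl V (\<rho>(v:=y)) G = Gsat W Rl V \<rho> G"
  by (rule Gsat_cong[where R=R]) auto

lemma Rsat_image: "Rsat Rl \<rho> (image_mset f M) = (\<forall>k\<in>#M. Rl (fst (f k)) (\<rho> (fst (snd (f k)))) (\<rho> (snd (snd (f k)))))"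
  by (auto simp: Rsat_def)

lemma set_concat_mem: "x \<in> set xs \<Longrightarrow> y \<in> set (f x) \<Longrightarrow> g x y \<in> set (concat (map (\<lambda>x. map (g x) (f x)) xs))"
  by auto

lemma soundness: "deriv m n h S \<Longrightarrow> frame m n W Rl \<Longrightarrow> (\<forall>z. \<rho> z \<in> W) \<Longrightarrow>
  Rsat Rl \<rho> (fst S) \<Longrightarrow> Gsat W Rl V \<rho> (snd S)"
proof (induction h S arbitrary: \<rho> rule: deriv.induct)
  case (id h R w p G)
  then show ?case by auto
next
  case (step ps S h)
  note fr = step.prems(1)
  have fr_refl: "\<And>i x. i \<in> {1..m} \<Longrightarrow> x \<in> W \<Longrightarrow> Rl i x x" using fr unfolding frame_def by blast
  have fr_eucl: "\<And>i x y z. i \<in> {1..m} \<Longrightarrow> x \<in> W \<Longrightarrow> y \<in> W \<Longrightarrow> z \<in> W \<Longrightarrow> Rl i x y \<Longrightarrow> Rl i x z \<Longrightarrow> Rl i y z"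
    using fr unfolding frame_def by blast
  have fr_ioa: "\<And>f. (\<forall>i\<in>{1..m}. f i \<in> W) \<Longrightarrow> \<exists>v\<in>W. \<forall>i\<in>{1..m}. Rl i (f i) v" using fr unfolding frame_def by blast
  have fr_apc: "\<And>i ws. n > 0 \<Longrightarrow> i \<in> {1..m} \<Longrightarrow> (\<forall>k\<le>n. ws k \<in> W) \<Longrightarrow> \<exists>k<n. \<exists>j. k < j \<and> j \<le> n \<and> Rl i (ws k) (ws j)"
    using fr unfolding frame_def by blast
  have IH: "\<And>P \<rho>. P \<in> set ps \<Longrightarrow> (\<forall>z. \<rho> z \<in> W) \<Longrightarrow> Rsat Rl \<rho> (fst P) \<Longrightarrow> Gsat W Rl V \<rho> (snd P)"
    using step.IH fr by blast
  note W = step.prems(2) and RS = step.prems(3)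
  from step.hyps(1) show ?case
  proof cases
    case (conj R w a b G)
    then show ?thesis using IH[of "(R, add_mset (w, Conj a b) (add_mset (w, a) G))" \<rho>]
      IH[of "(R, add_mset (w, Conj a b) (add_mset (w, b) G))" \<rho>] W RS by auto
  next
    case (disj R w a b G)
    then show ?thesis using IH[of "(R, add_mset (w, Disj a b) (add_mset (w, a) (add_mset (w, b) G)))" \<rho>] W RS by auto
  next
    case (stit i v R w a G)
    show ?thesis
    proof (rule ccontr)
      assume nG: "\<not> Gsat W Rl V \<rho> (snd S)"
      then have ns: "\<not> sat W Rl V (\<rho> w) (Stit i a)" and nG': "\<not> Gsat W Rl V \<rho> G" using stit by auto
      then obtain y where y: "y \<in> W" "Rl i (\<rho> w) y" "\<not> sat W Rl V y a" by auto
      have vw: "v \<noteq> w" and vRG: "v \<notin> labels (R,G)" using stit by auto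
      have "Gsat W Rl V (\<rho>(v:=y)) (snd (add_mset (i, w, v) R, add_mset (v, a) G))"
      proof (rule IH[of "(add_mset (i, w, v) R, add_mset (v, a) G)"])
        show "(add_mset (i, w, v) R, add_mset (v, a) G) \<in> set ps" using stit by simp
        show "\<forall>z. (\<rho>(v:=y)) z \<in> W" using W y by auto
        show "Rsat Rl (\<rho>(v:=y)) (fst (add_mset (i, w, v) R, add_mset (v, a) G))"
        proof -
          have "Rsat Rl (\<rho>(v:=y)) R = Rsat Rl \<rho> R" by (rule Rsat_upd[OF vRG])
          then show ?thesis using y vw RS stit by auto
        qed
      qed
      moreover have "Gsat W Rl V (\<rho>(v:=y)) G = Gsat W Rl V \<rho> G" by (rule Gsat_upd[OF vRG])
      ultimately show False using y nG' by auto
    qed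
  next
    case (box v R w a G)
    show ?thesis
    proof (rule ccontr)
      assume nG: "\<not> Gsat W Rl V \<rho> (snd S)"
      then have ns: "\<not> sat W Rl V (\<rho> w) (Box a)" and nG': "\<not> Gsat W Rl V \<rho> G" using box by auto
      then obtain y where y: "y \<in> W" "\<not> sat W Rl V y a" by auto
      have vw: "v \<noteq> w" and vRG: "v \<notin> labels (R,G)" using box by auto
      have "Gsat W Rl V (\<rho>(v:=y)) (snd (R, add_mset (w, Box a) (add_mset (v,a) G)))"
      proof (rule IH[of "(R, add_mset (w, Box a) (add_mset (v,a) G))"])
        show "(R, add_mset (w, Box a) (add_mset (v,a) G)) \<in> set ps" using box by simp
        show "\<forall>z. (\<rho>(v:=y)) z \<in> W" using W y by auto
        show "Rsat Rl (\<rho>(v:=y)) (fst (R, add_mset (w, Box a) (add_mset (v,a) G)))"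
        proof -
          have "Rsat Rl (\<rho>(v:=y)) R = Rsat Rl \<rho> R" by (rule Rsat_upd[OF vRG])
          then show ?thesis using RS box by auto
        qed
      qed
      moreover have "Gsat W Rl V (\<rho>(v:=y)) G = Gsat W Rl V \<rho> G" by (rule Gsat_upd[OF vRG])
      ultimately show False using y nG' ns vw by auto
    qed
  next
    case (dia R w a u G)
    then show ?thesis using IH[of "(R, add_mset (w, Dia a) (add_mset (u, a) G))" \<rho>] W RS by auto
  next
    case (ioa v R G u)
    have "\<forall>i\<in>{1..m}. \<rho> (u i) \<in> W" using W by auto
    then obtain y where y: "y \<in> W" "\<forall>i\<in>{1..m}. Rl i (\<rho> (u i)) y" using fr_ioa[of "\<lambda>i. \<rho> (u i)"] by blast
    have vRG: "v \<notin> labels (R,G)" using ioa by auto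
    have yy: "\<forall>i\<in>{1..m}. Rl i ((\<rho>(v:=y)) (u i)) y"
    proof
      fix i assume i: "i \<in> {1..m}"
      show "Rl i ((\<rho>(v:=y)) (u i)) y"
      proof (cases "u i = v")
        case True
        then show ?thesis using fr_refl[OF i y(1)] by simp
      next
        case False
        then show ?thesis using y(2) i by simp
      qed
    qed
    have R1: "Rsat Rl (\<rho>(v:=y)) (image_mset (\<lambda>i. (i, u i, v)) (mset [1..<Suc m]))"
      unfolding Rsat_image
    proof
      fix k assume "k \<in># mset [1..<Suc m]"
      then have "k \<in> {1..m}" by (auto simp del: mset_upt)
      then show "Rl (fst (k, u k, v)) ((\<rho>(v:=y)) (fst (snd (k, u k, v)))) ((\<rho>(v:=y)) (snd (snd (k, u k, v))))"
        using yy by simp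
    qed
    have R2: "Rsat Rl (\<rho>(v:=y)) R = Rsat Rl \<rho> R" by (rule Rsat_upd[OF vRG])
    have G2: "Gsat W Rl V (\<rho>(v:=y)) G = Gsat W Rl V \<rho> G" by (rule Gsat_upd[OF vRG])
    have P: "(R + image_mset (\<lambda>i. (i, u i, v)) (mset [1..<Suc m]), G) \<in> set ps" using ioa(1) by (simp del: mset_upt)
    have W': "\<forall>z. (\<rho>(v:=y)) z \<in> W" using W y by auto
    have RS': "Rsat Rl (\<rho>(v:=y)) (fst (R + image_mset (\<lambda>i. (i, u i, v)) (mset [1..<Suc m]), G))"
      using R1 R2 RS ioa(2) by (simp del: mset_upt)
    have "Gsat W Rl V (\<rho>(v:=y)) (snd (R + image_mset (\<lambda>i. (i, u i, v)) (mset [1..<Suc m]), G))"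
      by (rule IH[OF P W' RS'])
    then show ?thesis using G2 ioa(2) by simp
  next
    case (cstit i w u R a G)
    then show ?thesis using IH[of "(add_mset (i, w, u) R, add_mset (w, Cstit i a) (add_mset (u, a) G))" \<rho>] W RS by auto
  next
    case (refl i w R G)
    then show ?thesis using IH[of "(add_mset (i, w, w) R, G)" \<rho>] W RS fr_refl[of i "\<rho> w"] by auto
  next
    case (eucl i w u v R G)
    then show ?thesis using IH[of "(add_mset (i, w, u) (add_mset (i, w, v) (add_mset (i, u, v) R)), G)" \<rho>] W RS
        fr_eucl[of i "\<rho> w" "\<rho> u" "\<rho> v"] by auto
  next
    case (apc i ws R G)
    have "\<forall>k\<le>n. (\<rho> \<circ> ws) k \<in> W" using W by auto
    then obtain k j where kj: "k < n" "k < j" "j \<le> n" "Rl i (\<rho> (ws k)) (\<rho> (ws j))" using fr_apc[OF apc(3) apc(4), of "\<lambda>k. \<rho> (ws k)"] by auto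
    have k1: "k \<in> set [0..<n]" and j1: "j \<in> set [Suc k..<Suc n]" using kj by auto
    have "(add_mset (i, ws k, ws j) R, G) \<in> set ps" unfolding apc(1)
      using set_concat_mem[OF k1, of j "\<lambda>k. [Suc k..<Suc n]" "\<lambda>k j. (add_mset (i, ws k, ws j) R, G)", OF j1] by simp
    then show ?thesis using IH[of "(add_mset (i, ws k, ws j) R, G)" \<rho>] W RS apc kj by auto
  qed
qed

lemma sound_single: "derivable m n ({#}, {#(x, a)#}) \<Longrightarrow> frame m n W Rl \<Longrightarrow> y \<in> W \<Longrightarrow> sat W Rl V y a"
proof -
  assume d: "derivable m n ({#}, {#(x, a)#})" and fr: "frame m n W Rl" and y: "y \<in> W"
  from d obtain h where "deriv m n h ({#}, {#(x, a)#})" unfolding derivable_def by blast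
  from soundness[OF this fr, of "\<lambda>_. y"] y show ?thesis by simp
qed

abbreviation TT :: fm where "TT \<equiv> imp (At 0) (At 0)"
abbreviation FF :: fm where "FF \<equiv> neg TT"

lemma wf_imp[simp]: "wf_fm m (imp a b) \<longleftrightarrow> wf_fm m a \<and> wf_fm m b"
  by (simp add: imp_def)

lemma wf_Conjs: "(\<forall>a\<in>set L. wf_fm m a) \<Longrightarrow> wf_fm m (Conjs L)"
  by (induction L rule: Conjs.induct) auto

lemma wf_Disjs: "(\<forall>a\<in>set L. wf_fm m a) \<Longrightarrow> wf_fm m (Disjs L)"
  by (induction L rule: Disjs.induct) auto

lemma Ldm_wf: "Ldm m n a \<Longrightarrow> wf_fm m a"
proof (induction rule: Ldm.induct)
  case (IOA as)
  then show ?case by (auto intro!: wf_Conjs)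
next
  case (APC i as)
  have "\<forall>k<n. wf_fm m (as ! k)" using APC by (metis nth_mem)
  moreover have "\<forall>k. \<forall>x\<in>set (take k as). wf_fm m x" using APC by (meson in_set_takeD)
  ultimately show ?case using APC by (auto intro!: wf_Conjs wf_Disjs)
qed auto

lemma thm_I: "wf_fm m a \<Longrightarrow> Ldm m n (imp a a)"
proof -
  assume wa: "wf_fm m a"
  have 1: "Ldm m n (imp (imp a (imp (imp a a) a)) (imp (imp a (imp a a)) (imp a a)))" using wa by (intro Ldm.A3) auto
  have 2: "Ldm m n (imp a (imp (imp a a) a))" using wa by (intro Ldm.A1) auto
  have 3: "Ldm m n (imp a (imp a a))" using wa by (intro Ldm.A1) auto
  show ?thesis using Ldm.MP[OF Ldm.MP[OF 1 2] 3] .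
qed

lemma thm_K1: "Ldm m n b \<Longrightarrow> wf_fm m a \<Longrightarrow> Ldm m n (imp a b)"
  using Ldm.MP[OF Ldm.A1[of m b a n]] Ldm_wf by blast

lemma thm_HS: "Ldm m n (imp a b) \<Longrightarrow> Ldm m n (imp b c) \<Longrightarrow> Ldm m n (imp a c)"
proof -
  assume ab: "Ldm m n (imp a b)" and bc: "Ldm m n (imp b c)"
  have w: "wf_fm m a" "wf_fm m b" "wf_fm m c" using Ldm_wf[OF ab] Ldm_wf[OF bc] by auto
  have 1: "Ldm m n (imp a (imp b c))" using thm_K1[OF bc w(1)] .
  have 2: "Ldm m n (imp (imp a (imp b c)) (imp (imp a b) (imp a c)))" using w by (intro Ldm.A3)
  show ?thesis using Ldm.MP[OF Ldm.MP[OF 2 1] ab] .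
qed

lemma thm_HS_under: "Ldm m n (imp p q) \<Longrightarrow> wf_fm m r \<Longrightarrow> Ldm m n (imp (imp r p) (imp r q))"
proof -
  assume pq: "Ldm m n (imp p q)" and wr: "wf_fm m r"
  have w: "wf_fm m p" "wf_fm m q" using Ldm_wf[OF pq] by auto
  have 1: "Ldm m n (imp r (imp p q))" using thm_K1[OF pq wr] .
  have 2: "Ldm m n (imp (imp r (imp p q)) (imp (imp r p) (imp r q)))" using w wr by (intro Ldm.A3)
  show ?thesis using Ldm.MP[OF 2 1] .
qed

lemma thm_contra: "Ldm m n (imp p q) \<Longrightarrow> Ldm m n (imp (neg q) (neg p))"
proof -
  assume pq: "Ldm m n (imp p q)"
  have w: "wf_fm m p" "wf_fm m q" using Ldm_wf[OF pq] by auto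
  have "Ldm m n (imp (imp (neg (neg p)) (neg (neg q))) (imp (neg q) (neg p)))" using w by (intro Ldm.A2) auto
  then show ?thesis using Ldm.MP pq by simp
qed

lemma thm_efq: "wf_fm m a \<Longrightarrow> wf_fm m b \<Longrightarrow> Ldm m n (imp (neg a) (imp a b))"
proof -
  assume w: "wf_fm m a" "wf_fm m b"
  have 1: "Ldm m n (imp (neg a) (imp (neg b) (neg a)))" using w by (intro Ldm.A1) auto
  have 2: "Ldm m n (imp (imp (neg b) (neg a)) (imp a b))" using w by (intro Ldm.A2)
  show ?thesis by (rule thm_HS[OF 1 2])
qed

lemma thm_TT: "Ldm m n TT"
  by (rule thm_I) simp

lemma thm_dropT: "Ldm m n (imp p (imp TT x)) \<Longrightarrow> Ldm m n (imp p x)"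
proof -
  assume h: "Ldm m n (imp p (imp TT x))"
  have w: "wf_fm m p" "wf_fm m x" using Ldm_wf[OF h] by auto
  have 1: "Ldm m n (imp (imp p (imp TT x)) (imp (imp p TT) (imp p x)))" using w by (intro Ldm.A3) auto
  have 2: "Ldm m n (imp p TT)" by (rule thm_K1[OF thm_TT w(1)])
  show ?thesis using Ldm.MP[OF Ldm.MP[OF 1 h] 2] .
qed

lemma thm_cls: "wf_fm m a \<Longrightarrow> Ldm m n (imp (imp (neg a) FF) a)"
proof -
  assume w: "wf_fm m a"
  have "Ldm m n (imp (imp (neg a) (neg TT)) (imp TT a))" using w by (intro Ldm.A2) auto
  then show ?thesis by (rule thm_dropT)
qed

lemma thm_negI: "wf_fm m a \<Longrightarrow> Ldm m n (imp (imp a FF) (neg a))"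
  using thm_cls[of m "neg a" n] by simp

fun imps :: "fm list \<Rightarrow> fm \<Rightarrow> fm" where
  "imps [] b = b"
| "imps (x # L) b = imp x (imps L b)"

lemma imps_append: "imps (L1 @ L2) b = imps L1 (imps L2 b)"
  by (induction L1) auto

lemma wf_imps[simp]: "wf_fm m (imps L b) \<longleftrightarrow> (\<forall>x\<in>set L. wf_fm m x) \<and> wf_fm m b"
  by (induction L) auto

lemma imps_weak: "Ldm m n b \<Longrightarrow> \<forall>x\<in>set L. wf_fm m x \<Longrightarrow> Ldm m n (imps L b)"
  by (induction L) (auto intro: thm_K1)

lemma imps_K: "\<forall>x\<in>set L. wf_fm m x \<Longrightarrow> wf_fm m b \<Longrightarrow> wf_fm m c \<Longrightarrow>
  Ldm m n (imp (imps L (imp b c)) (imp (imps L b) (imps L c)))"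
proof (induction L)
  case Nil
  then show ?case using thm_I[of m "imp b c" n] by simp
next
  case (Cons x L)
  let ?X = "imps L (imp b c)" and ?Y = "imps L b" and ?Z = "imps L c"
  have IH: "Ldm m n (imp ?X (imp ?Y ?Z))" using Cons by simp
  have wx: "wf_fm m x" and wXYZ: "wf_fm m ?X" "wf_fm m ?Y" "wf_fm m ?Z" using Cons.prems by auto
  have 1: "Ldm m n (imp x (imp ?X (imp ?Y ?Z)))" by (rule thm_K1[OF IH wx])
  have 2: "Ldm m n (imp (imp x (imp ?X (imp ?Y ?Z))) (imp (imp x ?X) (imp x (imp ?Y ?Z))))"
    using wx wXYZ by (intro Ldm.A3) auto
  have 3: "Ldm m n (imp (imp x ?X) (imp x (imp ?Y ?Z)))" by (rule Ldm.MP[OF 2 1])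
  have 4: "Ldm m n (imp (imp x (imp ?Y ?Z)) (imp (imp x ?Y) (imp x ?Z)))" using wx wXYZ by (intro Ldm.A3)
  show ?case using thm_HS[OF 3 4] by simp
qed

lemma imps_mp: "Ldm m n (imps L (imp b c)) \<Longrightarrow> Ldm m n (imps L b) \<Longrightarrow> Ldm m n (imps L c)"
proof -
  assume h1: "Ldm m n (imps L (imp b c))" and h2: "Ldm m n (imps L b)"
  have w: "\<forall>x\<in>set L. wf_fm m x" "wf_fm m b" "wf_fm m c" using Ldm_wf[OF h1] by auto
  show ?thesis using Ldm.MP[OF Ldm.MP[OF imps_K[OF w] h1] h2] .
qed

lemma imps_self: "\<forall>y\<in>set L. wf_fm m y \<Longrightarrow> wf_fm m x \<Longrightarrow> Ldm m n (imp x (imps L x))"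
proof (induction L)
  case Nil
  then show ?case using thm_I by simp
next
  case (Cons y L)
  have 1: "Ldm m n (imp x (imps L x))" using Cons by simp
  have 2: "Ldm m n (imp (imps L x) (imp y (imps L x)))" using Cons.prems by (intro Ldm.A1) auto
  show ?case using thm_HS[OF 1 2] by simp
qed

lemma imps_assm: "\<forall>y\<in>set L. wf_fm m y \<Longrightarrow> a \<in> set L \<Longrightarrow> Ldm m n (imps L a)"
proof (induction L)
  case Nil
  then show ?case by simp
next
  case (Cons x L)
  show ?case
  proof (cases "a = x")
    case True
    then show ?thesis using imps_self[of L m x n] Cons.prems by simp
  next
    case False
    then have "Ldm m n (imps L a)" using Cons by simp
    then show ?thesis using thm_K1 Cons.prems by simp
  qed
qed

lemma imps_trans0: "Ldm m n (imps L' (imps L b)) \<Longrightarrow> \<forall>a\<in>set L. Ldm m n (imps L' a) \<Longrightarrow> Ldm m n (imps L' b)"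
proof (induction L)
  case Nil
  then show ?case by simp
next
  case (Cons x L)
  have "Ldm m n (imps L' (imps L b))" using imps_mp[of m n L' x "imps L b"] Cons.prems by simp
  then show ?case using Cons by simp
qed

lemma imps_trans: "\<forall>y\<in>set L'. wf_fm m y \<Longrightarrow> Ldm m n (imps L b) \<Longrightarrow> \<forall>a\<in>set L. Ldm m n (imps L' a) \<Longrightarrow> Ldm m n (imps L' b)"
  using imps_trans0 imps_weak by blast

definition derives :: "nat \<Rightarrow> nat \<Rightarrow> fm set \<Rightarrow> fm \<Rightarrow> bool" where
  "derives m n \<Gamma> b \<longleftrightarrow> (\<exists>L. set L \<subseteq> \<Gamma> \<and> Ldm m n (imps L b))"

definition cons :: "nat \<Rightarrow> nat \<Rightarrow> fm set \<Rightarrow> bool" where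
  "cons m n \<Gamma> \<longleftrightarrow> \<not> derives m n \<Gamma> FF"

definition wfs :: "nat \<Rightarrow> fm set \<Rightarrow> bool" where
  "wfs m \<Gamma> \<longleftrightarrow> (\<forall>a\<in>\<Gamma>. wf_fm m a)"

definition MCS :: "nat \<Rightarrow> nat \<Rightarrow> fm set \<Rightarrow> bool" where
  "MCS m n \<Gamma> \<longleftrightarrow> wfs m \<Gamma> \<and> cons m n \<Gamma> \<and> (\<forall>a. wf_fm m a \<longrightarrow> a \<notin> \<Gamma> \<longrightarrow> \<not> cons m n (insert a \<Gamma>))"

lemma derives_mp: "wfs m \<Gamma> \<Longrightarrow> derives m n \<Gamma> (imp a b) \<Longrightarrow> derives m n \<Gamma> a \<Longrightarrow> derives m n \<Gamma> b"
proof -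
  assume w: "wfs m \<Gamma>" and h1: "derives m n \<Gamma> (imp a b)" and h2: "derives m n \<Gamma> a"
  obtain L1 where L1: "set L1 \<subseteq> \<Gamma>" "Ldm m n (imps L1 (imp a b))" using h1 unfolding derives_def by blast
  obtain L2 where L2: "set L2 \<subseteq> \<Gamma>" "Ldm m n (imps L2 a)" using h2 unfolding derives_def by blast
  have wL: "\<forall>y\<in>set (L1 @ L2). wf_fm m y" using L1 L2 w unfolding wfs_def by auto
  have as: "\<forall>x\<in>set L1. Ldm m n (imps (L1 @ L2) x)" "\<forall>x\<in>set L2. Ldm m n (imps (L1 @ L2) x)"
    using imps_assm[OF wL] by auto
  have "Ldm m n (imps (L1 @ L2) (imp a b))" by (rule imps_trans[OF wL L1(2) as(1)])
  moreover have "Ldm m n (imps (L1 @ L2) a)" by (rule imps_trans[OF wL L2(2) as(2)])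
  ultimately have "Ldm m n (imps (L1 @ L2) b)" by (rule imps_mp)
  then show ?thesis unfolding derives_def using L1 L2 by (intro exI[of _ "L1 @ L2"]) auto
qed

lemma derives_thm: "Ldm m n b \<Longrightarrow> derives m n \<Gamma> b"
  unfolding derives_def by (intro exI[of _ "[]"]) auto

lemma derives_mem: "wfs m \<Gamma> \<Longrightarrow> a \<in> \<Gamma> \<Longrightarrow> derives m n \<Gamma> a"
  unfolding derives_def wfs_def by (intro exI[of _ "[a]"]) (auto intro: thm_I)

lemma derives_ded: "wfs m \<Gamma> \<Longrightarrow> wf_fm m a \<Longrightarrow> derives m n (insert a \<Gamma>) b \<Longrightarrow> derives m n \<Gamma> (imp a b)"
proof -
  assume w: "wfs m \<Gamma>" and wa: "wf_fm m a" and h: "derives m n (insert a \<Gamma>) b"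
  obtain L where L: "set L \<subseteq> insert a \<Gamma>" "Ldm m n (imps L b)" using h unfolding derives_def by blast
  define L0 where "L0 = filter (\<lambda>x. x \<noteq> a) L"
  have L0G: "set L0 \<subseteq> \<Gamma>" using L unfolding L0_def by auto
  have wL: "\<forall>y\<in>set (L0 @ [a]). wf_fm m y" using L0G w wa unfolding wfs_def by auto
  have "\<forall>x\<in>set L. Ldm m n (imps (L0 @ [a]) x)"
  proof
    fix x assume "x \<in> set L"
    then have "x \<in> set (L0 @ [a])" unfolding L0_def by auto
    then show "Ldm m n (imps (L0 @ [a]) x)" by (rule imps_assm[OF wL])
  qed
  then have "Ldm m n (imps (L0 @ [a]) b)" by (rule imps_trans[OF wL L(2)])
  then have "Ldm m n (imps L0 (imp a b))" by (simp add: imps_append)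
  then show ?thesis unfolding derives_def using L0G by blast
qed

lemma MCS_closed: "MCS m n \<Gamma> \<Longrightarrow> derives m n \<Gamma> a \<Longrightarrow> wf_fm m a \<Longrightarrow> a \<in> \<Gamma>"
proof (rule ccontr)
  assume M: "MCS m n \<Gamma>" and d: "derives m n \<Gamma> a" and wa: "wf_fm m a" and na: "a \<notin> \<Gamma>"
  have w: "wfs m \<Gamma>" and c: "cons m n \<Gamma>" using M unfolding MCS_def by auto
  have "\<not> cons m n (insert a \<Gamma>)" using M wa na unfolding MCS_def by blast
  then have "derives m n \<Gamma> (imp a FF)" using derives_ded[OF w wa] unfolding cons_def by blast
  then have "derives m n \<Gamma> FF" using derives_mp[OF w _ d] by blast
  then show False using c unfolding cons_def by blast
qed

lemma MCS_thm: "MCS m n \<Gamma> \<Longrightarrow> Ldm m n a \<Longrightarrow> a \<in> \<Gamma>"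
  using MCS_closed derives_thm Ldm_wf by blast

lemma MCS_mp: "MCS m n \<Gamma> \<Longrightarrow> imp a b \<in> \<Gamma> \<Longrightarrow> a \<in> \<Gamma> \<Longrightarrow> b \<in> \<Gamma>"
proof -
  assume M: "MCS m n \<Gamma>" and h1: "imp a b \<in> \<Gamma>" and h2: "a \<in> \<Gamma>"
  have w: "wfs m \<Gamma>" using M unfolding MCS_def by auto
  have "wf_fm m b" using w h1 unfolding wfs_def by auto
  then show ?thesis using MCS_closed[OF M derives_mp[OF w derives_mem[OF w h1] derives_mem[OF w h2]]] by blast
qed

lemma MCS_thm_mp: "MCS m n \<Gamma> \<Longrightarrow> Ldm m n (imp a b) \<Longrightarrow> a \<in> \<Gamma> \<Longrightarrow> b \<in> \<Gamma>"
  using MCS_mp MCS_thm by blast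

lemma MCS_not_both: "MCS m n \<Gamma> \<Longrightarrow> a \<in> \<Gamma> \<Longrightarrow> neg a \<in> \<Gamma> \<Longrightarrow> False"
proof -
  assume M: "MCS m n \<Gamma>" and h1: "a \<in> \<Gamma>" and h2: "neg a \<in> \<Gamma>"
  have w: "wfs m \<Gamma>" and c: "cons m n \<Gamma>" using M unfolding MCS_def by auto
  have wa: "wf_fm m a" using w h1 unfolding wfs_def by auto
  have "derives m n \<Gamma> (imp (neg a) (imp a FF))" using thm_efq[OF wa, of FF] derives_thm by simp
  then have "derives m n \<Gamma> FF" using derives_mp[OF w] derives_mem[OF w h1] derives_mem[OF w h2] by blast
  then show False using c unfolding cons_def by blast
qed

lemma MCS_one: "MCS m n \<Gamma> \<Longrightarrow> wf_fm m a \<Longrightarrow> a \<in> \<Gamma> \<or> neg a \<in> \<Gamma>"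
proof (rule ccontr)
  assume M: "MCS m n \<Gamma>" and wa: "wf_fm m a" and nn: "\<not> (a \<in> \<Gamma> \<or> neg a \<in> \<Gamma>)"
  have w: "wfs m \<Gamma>" and c: "cons m n \<Gamma>" using M unfolding MCS_def by auto
  have "\<not> cons m n (insert a \<Gamma>)" "\<not> cons m n (insert (neg a) \<Gamma>)" using M wa nn unfolding MCS_def by auto
  then have d1: "derives m n \<Gamma> (imp a FF)" and d2: "derives m n \<Gamma> (imp (neg a) FF)"
    using derives_ded[OF w] wa unfolding cons_def by auto
  have "derives m n \<Gamma> a" using derives_mp[OF w derives_thm[OF thm_cls[OF wa]] d2] .
  then have "derives m n \<Gamma> FF" using derives_mp[OF w d1] by blast
  then show False using c unfolding cons_def by blast
qed

lemma MCS_neg: "MCS m n \<Gamma> \<Longrightarrow> wf_fm m a \<Longrightarrow> neg a \<in> \<Gamma> \<longleftrightarrow> a \<notin> \<Gamma>"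
  using MCS_one MCS_not_both by blast

lemma MCS_disj: "MCS m n \<Gamma> \<Longrightarrow> wf_fm m a \<Longrightarrow> wf_fm m b \<Longrightarrow> Disj a b \<in> \<Gamma> \<longleftrightarrow> a \<in> \<Gamma> \<or> b \<in> \<Gamma>"
proof -
  assume M: "MCS m n \<Gamma>" and wa: "wf_fm m a" and wb: "wf_fm m b"
  have eq: "Disj a b = imp (neg a) b" by (simp add: imp_def)
  show ?thesis
  proof
    assume h: "Disj a b \<in> \<Gamma>"
    show "a \<in> \<Gamma> \<or> b \<in> \<Gamma>"
    proof (cases "a \<in> \<Gamma>")
      case False
      then have "neg a \<in> \<Gamma>" using MCS_neg[OF M wa] by blast
      then show ?thesis using MCS_mp[OF M h[unfolded eq]] by blast
    qed blast
  next
    assume "a \<in> \<Gamma> \<or> b \<in> \<Gamma>"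
    then show "Disj a b \<in> \<Gamma>"
    proof
      assume "a \<in> \<Gamma>"
      moreover have "Ldm m n (imp a (imp (neg a) b))" using thm_efq[of m "neg a" b n] wa wb by simp
      ultimately show ?thesis using MCS_thm_mp[OF M] eq by metis
    next
      assume "b \<in> \<Gamma>"
      moreover have "Ldm m n (imp b (imp (neg a) b))" using wa wb by (intro Ldm.A1) auto
      ultimately show ?thesis using MCS_thm_mp[OF M] eq by metis
    qed
  qed
qed

lemma MCS_conj: "MCS m n \<Gamma> \<Longrightarrow> wf_fm m a \<Longrightarrow> wf_fm m b \<Longrightarrow> Conj a b \<in> \<Gamma> \<longleftrightarrow> a \<in> \<Gamma> \<and> b \<in> \<Gamma>"
proof -
  assume M: "MCS m n \<Gamma>" and wa: "wf_fm m a" and wb: "wf_fm m b"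
  have "Conj a b = neg (Disj (neg a) (neg b))" by simp
  then have "Conj a b \<in> \<Gamma> \<longleftrightarrow> Disj (neg a) (neg b) \<notin> \<Gamma>" using MCS_neg[OF M, of "Disj (neg a) (neg b)"] wa wb by simp
  also have "\<dots> \<longleftrightarrow> neg a \<notin> \<Gamma> \<and> neg b \<notin> \<Gamma>" using MCS_disj[OF M, of "neg a" "neg b"] wa wb by simp
  also have "\<dots> \<longleftrightarrow> a \<in> \<Gamma> \<and> b \<in> \<Gamma>" using MCS_neg[OF M] wa wb by blast
  finally show ?thesis .
qed

lemma lindenbaum: "wfs m \<Gamma> \<Longrightarrow> cons m n \<Gamma> \<Longrightarrow> \<exists>\<Delta>. MCS m n \<Delta> \<and> \<Gamma> \<subseteq> \<Delta>"
proof -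
  assume w: "wfs m \<Gamma>" and c: "cons m n \<Gamma>"
  define A where "A = {\<Delta>. \<Gamma> \<subseteq> \<Delta> \<and> wfs m \<Delta> \<and> cons m n \<Delta>}"
  have "\<forall>C\<in>chains A. \<exists>U\<in>A. \<forall>X\<in>C. X \<subseteq> U"
  proof
    fix C assume C: "C \<in> chains A"
    show "\<exists>U\<in>A. \<forall>X\<in>C. X \<subseteq> U"
    proof (cases "C = {}")
      case True
      then show ?thesis using w c unfolding A_def by blast
    next
      case False
      have CA: "C \<subseteq> A" using C unfolding chains_def by auto
      have ch: "subset.chain A C" using C unfolding chains_alt_def by auto
      have "\<Union>C \<in> A"
      proof -
        have "\<Gamma> \<subseteq> \<Union>C" using False CA unfolding A_def by blast
        moreover have "wfs m (\<Union>C)" using CA unfolding A_def wfs_def by blast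
        moreover have "cons m n (\<Union>C)"
        proof (unfold cons_def, rule notI)
          assume "derives m n (\<Union>C) FF"
          then obtain L where L: "set L \<subseteq> \<Union>C" "Ldm m n (imps L FF)" unfolding derives_def by blast
          obtain B where B: "B \<in> C" "set L \<subseteq> B" using finite_subset_Union_chain[OF _ L(1) False ch] by blast
          then have "derives m n B FF" using L unfolding derives_def by blast
          then show False using B CA unfolding A_def cons_def by blast
        qed
        ultimately show ?thesis unfolding A_def by blast
      qed
      then show ?thesis by blast
    qed
  qed
  then obtain M where M: "M \<in> A" and mx: "\<forall>X\<in>A. M \<subseteq> X \<longrightarrow> X = M" using Zorn_Lemma2[of A] by blast
  have "MCS m n M"
    unfolding MCS_def
  proof (intro conjI allI impI)
    show "wfs m M" "cons m n M" using M unfolding A_def by auto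
  next
    fix a assume wa: "wf_fm m a" and na: "a \<notin> M"
    show "\<not> cons m n (insert a M)"
    proof
      assume "cons m n (insert a M)"
      then have "insert a M \<in> A" using M wa unfolding A_def wfs_def by auto
      then show False using mx na by blast
    qed
  qed
  then show ?thesis using M unfolding A_def by blast
qed

lemma nec_stit: "i \<in> {1..m} \<Longrightarrow> Ldm m n a \<Longrightarrow> Ldm m n (Stit i a)"
  using Ldm.MP[OF Ldm.Bridge Ldm.Nec] Ldm_wf by blast

lemma boxK_imps: "\<forall>x\<in>set L. wf_fm m x \<Longrightarrow> wf_fm m b \<Longrightarrow> Ldm m n (imp (Box (imps L b)) (imps (map Box L) (Box b)))"
proof (induction L)
  case Nil
  then show ?case using thm_I[of m "Box b" n] by simp
next
  case (Cons x L)
  have IH: "Ldm m n (imp (Box (imps L b)) (imps (map Box L) (Box b)))" using Cons by simp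
  have w: "wf_fm m x" "wf_fm m (imps L b)" using Cons.prems by auto
  have 1: "Ldm m n (imp (Box (imp x (imps L b))) (imp (Box x) (Box (imps L b))))" using w by (intro Ldm.BoxK)
  have 2: "Ldm m n (imp (imp (Box x) (Box (imps L b))) (imp (Box x) (imps (map Box L) (Box b))))"
    using thm_HS_under[OF IH, of "Box x"] w by simp
  show ?case using thm_HS[OF 1 2] by simp
qed

lemma stitK_imps: "i \<in> {1..m} \<Longrightarrow> \<forall>x\<in>set L. wf_fm m x \<Longrightarrow> wf_fm m b \<Longrightarrow>
  Ldm m n (imp (Stit i (imps L b)) (imps (map (Stit i) L) (Stit i b)))"
proof (induction L)
  case Nil
  then show ?case using thm_I[of m "Stit i b" n] by simp
next
  case (Cons x L)
  have IH: "Ldm m n (imp (Stit i (imps L b)) (imps (map (Stit i) L) (Stit i b)))" using Cons by simp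
  have w: "wf_fm m x" "wf_fm m (imps L b)" using Cons.prems by auto
  have 1: "Ldm m n (imp (Stit i (imp x (imps L b))) (imp (Stit i x) (Stit i (imps L b))))" using w Cons.prems by (intro Ldm.StitK)
  have 2: "Ldm m n (imp (imp (Stit i x) (Stit i (imps L b))) (imp (Stit i x) (imps (map (Stit i) L) (Stit i b))))"
    using thm_HS_under[OF IH, of "Stit i x"] w Cons.prems by simp
  show ?case using thm_HS[OF 1 2] by simp
qed

lemma Klift_box: "Ldm m n (imps L b) \<Longrightarrow> Ldm m n (imps (map Box L) (Box b))"
  using Ldm.MP[OF boxK_imps Ldm.Nec] Ldm_wf by fastforce

lemma Klift_stit: "i \<in> {1..m} \<Longrightarrow> Ldm m n (imps L b) \<Longrightarrow> Ldm m n (imps (map (Stit i) L) (Stit i b))"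
  using Ldm.MP[OF stitK_imps nec_stit] Ldm_wf by fastforce

lemma box4: "wf_fm m b \<Longrightarrow> Ldm m n (imp (Box b) (Box (Box b)))"
proof -
  assume w: "wf_fm m b"
  have s1: "Ldm m n (imp (Box b) (Dia (Box b)))"
    using thm_contra[OF Ldm.BoxT[of m "Dia (neg b)" n]] w by simp
  have s2: "Ldm m n (imp (Dia (Box b)) (Box (Dia (Box b))))" using w by (intro Ldm.Box5) simp
  have s3: "Ldm m n (imp (Dia (Box b)) (Box b))"
    using thm_contra[OF Ldm.Box5[of m "neg b" n]] w by simp
  have s4: "Ldm m n (imp (Box (Dia (Box b))) (Box (Box b)))"
    using Ldm.MP[OF Ldm.BoxK Ldm.Nec[OF s3]] w by simp
  show ?thesis using thm_HS[OF thm_HS[OF s1 s2] s4] .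
qed

lemma MCS_wf: "MCS m n \<Gamma> \<Longrightarrow> a \<in> \<Gamma> \<Longrightarrow> wf_fm m a"
  unfolding MCS_def wfs_def by blast

lemma exist_box: "MCS m n \<Delta> \<Longrightarrow> Dia a \<in> \<Delta> \<Longrightarrow> \<exists>\<Delta>'. MCS m n \<Delta>' \<and> {b. Box b \<in> \<Delta>} \<subseteq> \<Delta>' \<and> a \<in> \<Delta>'"
proof -
  assume M: "MCS m n \<Delta>" and h: "Dia a \<in> \<Delta>"
  have wa: "wf_fm m a" using MCS_wf[OF M h] by simp
  have wB: "wfs m {b. Box b \<in> \<Delta>}" using MCS_wf[OF M] unfolding wfs_def by fastforce
  have wI: "wfs m (insert a {b. Box b \<in> \<Delta>})" using wB wa unfolding wfs_def by auto
  have "cons m n (insert a {b. Box b \<in> \<Delta>})"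
  proof (unfold cons_def, rule notI)
    assume "derives m n (insert a {b. Box b \<in> \<Delta>}) FF"
    then have "derives m n {b. Box b \<in> \<Delta>} (imp a FF)" using derives_ded[OF wB wa] by blast
    then obtain L where L: "set L \<subseteq> {b. Box b \<in> \<Delta>}" "Ldm m n (imps L (imp a FF))" unfolding derives_def by blast
    have "Ldm m n (imps (map Box L) (Box (imp a FF)))" by (rule Klift_box[OF L(2)])
    moreover have "set (map Box L) \<subseteq> \<Delta>" using L by auto
    ultimately have "derives m n \<Delta> (Box (imp a FF))" unfolding derives_def by blast
    then have b1: "Box (imp a FF) \<in> \<Delta>" using MCS_closed[OF M] wa by simp
    have "Ldm m n (imp (Box (imp a FF)) (Box (neg a)))"
      using Ldm.MP[OF Ldm.BoxK Ldm.Nec[OF thm_negI[OF wa]]] wa by simp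
    then have "Box (neg a) \<in> \<Delta>" using MCS_thm_mp[OF M _ b1] by blast
    then show False using MCS_not_both[OF M h] by simp
  qed
  then obtain \<Delta>' where "MCS m n \<Delta>'" "insert a {b. Box b \<in> \<Delta>} \<subseteq> \<Delta>'" using lindenbaum[OF wI] by blast
  then show ?thesis by blast
qed

lemma exist_stit: "MCS m n \<Delta> \<Longrightarrow> Cstit i a \<in> \<Delta> \<Longrightarrow> \<exists>\<Delta>'. MCS m n \<Delta>' \<and> {b. Stit i b \<in> \<Delta>} \<subseteq> \<Delta>' \<and> a \<in> \<Delta>'"
proof -
  assume M: "MCS m n \<Delta>" and h: "Cstit i a \<in> \<Delta>"
  have wa: "wf_fm m a" and i: "i \<in> {1..m}" using MCS_wf[OF M h] by auto
  have wB: "wfs m {b. Stit i b \<in> \<Delta>}" using MCS_wf[OF M] unfolding wfs_def by fastforce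
  have wI: "wfs m (insert a {b. Stit i b \<in> \<Delta>})" using wB wa unfolding wfs_def by auto
  have "cons m n (insert a {b. Stit i b \<in> \<Delta>})"
  proof (unfold cons_def, rule notI)
    assume "derives m n (insert a {b. Stit i b \<in> \<Delta>}) FF"
    then have "derives m n {b. Stit i b \<in> \<Delta>} (imp a FF)" using derives_ded[OF wB wa] by blast
    then obtain L where L: "set L \<subseteq> {b. Stit i b \<in> \<Delta>}" "Ldm m n (imps L (imp a FF))" unfolding derives_def by blast
    have "Ldm m n (imps (map (Stit i) L) (Stit i (imp a FF)))" by (rule Klift_stit[OF i L(2)])
    moreover have "set (map (Stit i) L) \<subseteq> \<Delta>" using L by auto
    ultimately have "derives m n \<Delta> (Stit i (imp a FF))" unfolding derives_def by blast
    then have b1: "Stit i (imp a FF) \<in> \<Delta>" using MCS_closed[OF M] wa i by simp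
    have "Ldm m n (imp (Stit i (imp a FF)) (Stit i (neg a)))"
      using Ldm.MP[OF Ldm.StitK nec_stit[OF i thm_negI[OF wa]]] wa i by simp
    then have "Stit i (neg a) \<in> \<Delta>" using MCS_thm_mp[OF M _ b1] by blast
    then show False using MCS_not_both[OF M h] by simp
  qed
  then obtain \<Delta>' where "MCS m n \<Delta>'" "insert a {b. Stit i b \<in> \<Delta>} \<subseteq> \<Delta>'" using lindenbaum[OF wI] by blast
  then show ?thesis by blast
qed

definition Wc :: "nat \<Rightarrow> nat \<Rightarrow> fm set \<Rightarrow> fm set set" where
  "Wc m n G0 = {\<Delta>. MCS m n \<Delta> \<and> {b. Box b \<in> G0} \<subseteq> \<Delta>}"

definition Rc :: "nat \<Rightarrow> fm set \<Rightarrow> fm set \<Rightarrow> bool" where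
  "Rc i \<Delta> \<Delta>' \<longleftrightarrow> {b. Stit i b \<in> \<Delta>} \<subseteq> \<Delta>'"

definition Vc :: "nat \<Rightarrow> fm set \<Rightarrow> bool" where
  "Vc p \<Delta> \<longleftrightarrow> At p \<in> \<Delta>"

lemma W1: "MCS m n G0 \<Longrightarrow> \<Delta> \<in> Wc m n G0 \<Longrightarrow> Box b \<in> G0 \<Longrightarrow> Box b \<in> \<Delta>"
proof -
  assume M: "MCS m n G0" and D: "\<Delta> \<in> Wc m n G0" and h: "Box b \<in> G0"
  have "wf_fm m b" using MCS_wf[OF M h] by simp
  then have "Box (Box b) \<in> G0" using MCS_thm_mp[OF M box4 h] by blast
  then show ?thesis using D unfolding Wc_def by blast
qed

lemma W2: "MCS m n G0 \<Longrightarrow> \<Delta> \<in> Wc m n G0 \<Longrightarrow> Box a \<in> \<Delta> \<Longrightarrow> Box a \<in> G0"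
proof (rule ccontr)
  assume M: "MCS m n G0" and D: "\<Delta> \<in> Wc m n G0" and h: "Box a \<in> \<Delta>" and n: "Box a \<notin> G0"
  have MD: "MCS m n \<Delta>" using D unfolding Wc_def by blast
  have wa: "wf_fm m a" using MCS_wf[OF MD h] by simp
  have "Dia (neg a) \<in> G0" using MCS_neg[OF M, of "Box a"] n wa by simp
  then have "Box (Dia (neg a)) \<in> G0" using MCS_thm_mp[OF M Ldm.Box5] wa by simp
  then have "Dia (neg a) \<in> \<Delta>" using D unfolding Wc_def by blast
  then show False using MCS_not_both[OF MD h] by simp
qed

lemma G0_in: "MCS m n G0 \<Longrightarrow> G0 \<in> Wc m n G0"
proof -
  assume M: "MCS m n G0"
  have "{b. Box b \<in> G0} \<subseteq> G0"
  proof
    fix b assume "b \<in> {b. Box b \<in> G0}"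
    then have h: "Box b \<in> G0" by simp
    then have "wf_fm m b" using MCS_wf[OF M h] by simp
    then show "b \<in> G0" using MCS_thm_mp[OF M Ldm.BoxT h] by blast
  qed
  then show ?thesis using M unfolding Wc_def by blast
qed

lemma truth: "MCS m n G0 \<Longrightarrow> \<Delta> \<in> Wc m n G0 \<Longrightarrow> wf_fm m a \<Longrightarrow> sat (Wc m n G0) Rc Vc \<Delta> a \<longleftrightarrow> a \<in> \<Delta>"
proof (induction a arbitrary: \<Delta>)
  case (At p)
  then show ?case by (simp add: Vc_def)
next
  case (NAt p)
  have MD: "MCS m n \<Delta>" using NAt unfolding Wc_def by blast
  then show ?case using MCS_neg[OF MD, of "At p"] by (simp add: Vc_def)
next
  case (Conj a b)
  have MD: "MCS m n \<Delta>" using Conj unfolding Wc_def by blast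
  then show ?case using Conj MCS_conj[OF MD, of a b] by simp
next
  case (Disj a b)
  have MD: "MCS m n \<Delta>" using Disj unfolding Wc_def by blast
  then show ?case using Disj MCS_disj[OF MD, of a b] by simp
next
  case (Box a)
  have MD: "MCS m n \<Delta>" using Box unfolding Wc_def by blast
  have wa: "wf_fm m a" using Box by simp
  have "Box a \<in> \<Delta> \<longleftrightarrow> (\<forall>\<Delta>'\<in>Wc m n G0. a \<in> \<Delta>')"
  proof
    assume "Box a \<in> \<Delta>"
    then have "Box a \<in> G0" using W2[OF Box.prems(1,2)] by blast
    then show "\<forall>\<Delta>'\<in>Wc m n G0. a \<in> \<Delta>'" unfolding Wc_def by blast
  next
    assume all: "\<forall>\<Delta>'\<in>Wc m n G0. a \<in> \<Delta>'"
    show "Box a \<in> \<Delta>"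
    proof (rule ccontr)
      assume "Box a \<notin> \<Delta>"
      then have "Dia (neg a) \<in> \<Delta>" using MCS_neg[OF MD, of "Box a"] wa by simp
      then obtain D' where D': "MCS m n D'" "{b. Box b \<in> \<Delta>} \<subseteq> D'" "neg a \<in> D'" using exist_box[OF MD] by blast
      have "{b. Box b \<in> G0} \<subseteq> D'" using W1[OF Box.prems(1,2)] D'(2) by blast
      then have "D' \<in> Wc m n G0" using D'(1) unfolding Wc_def by blast
      then have "a \<in> D'" using all by blast
      then show False using MCS_not_both[OF D'(1) _ D'(3)] by blast
    qed
  qed
  then show ?case using Box.IH Box.prems(1) wa by simp
next
  case (Dia a)
  have MD: "MCS m n \<Delta>" using Dia unfolding Wc_def by blast
  have wa: "wf_fm m a" using Dia by simp
  have "Dia a \<in> \<Delta> \<longleftrightarrow> (\<exists>\<Delta>'\<in>Wc m n G0. a \<in> \<Delta>')"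
  proof
    assume "Dia a \<in> \<Delta>"
    then obtain D' where D': "MCS m n D'" "{b. Box b \<in> \<Delta>} \<subseteq> D'" "a \<in> D'" using exist_box[OF MD] by blast
    have "{b. Box b \<in> G0} \<subseteq> D'" using W1[OF Dia.prems(1,2)] D'(2) by blast
    then have "D' \<in> Wc m n G0" using D'(1) unfolding Wc_def by blast
    then show "\<exists>\<Delta>'\<in>Wc m n G0. a \<in> \<Delta>'" using D'(3) by blast
  next
    assume "\<exists>\<Delta>'\<in>Wc m n G0. a \<in> \<Delta>'"
    then obtain D' where D': "D' \<in> Wc m n G0" "a \<in> D'" by blast
    show "Dia a \<in> \<Delta>"
    proof (rule ccontr)
      assume "Dia a \<notin> \<Delta>"
      then have "Box (neg a) \<in> \<Delta>" using MCS_neg[OF MD, of "Dia a"] wa by simp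
      then have "Box (neg a) \<in> G0" using W2[OF Dia.prems(1,2)] by blast
      then have "neg a \<in> D'" using D'(1) unfolding Wc_def by blast
      moreover have "MCS m n D'" using D'(1) unfolding Wc_def by blast
      ultimately show False using MCS_not_both D'(2) by blast
    qed
  qed
  then show ?case using Dia.IH Dia.prems(1) wa by simp
next
  case (Stit i a)
  have MD: "MCS m n \<Delta>" using Stit unfolding Wc_def by blast
  have wa: "wf_fm m a" and i: "i \<in> {1..m}" using Stit by auto
  have "Stit i a \<in> \<Delta> \<longleftrightarrow> (\<forall>\<Delta>'\<in>Wc m n G0. Rc i \<Delta> \<Delta>' \<longrightarrow> a \<in> \<Delta>')"
  proof
    assume "Stit i a \<in> \<Delta>"
    then show "\<forall>\<Delta>'\<in>Wc m n G0. Rc i \<Delta> \<Delta>' \<longrightarrow> a \<in> \<Delta>'" unfolding Rc_def by blast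
  next
    assume all: "\<forall>\<Delta>'\<in>Wc m n G0. Rc i \<Delta> \<Delta>' \<longrightarrow> a \<in> \<Delta>'"
    show "Stit i a \<in> \<Delta>"
    proof (rule ccontr)
      assume "Stit i a \<notin> \<Delta>"
      then have "Cstit i (neg a) \<in> \<Delta>" using MCS_neg[OF MD, of "Stit i a"] wa i by simp
      then obtain D' where D': "MCS m n D'" "{b. Stit i b \<in> \<Delta>} \<subseteq> D'" "neg a \<in> D'" using exist_stit[OF MD] by blast
      have "{b. Box b \<in> G0} \<subseteq> D'"
      proof
        fix b assume "b \<in> {b. Box b \<in> G0}"
        then have bD: "Box b \<in> \<Delta>" using W1[OF Stit.prems(1,2)] by blast
        have "wf_fm m b" using MCS_wf[OF MD bD] by simp
        then have "Stit i b \<in> \<Delta>" using MCS_thm_mp[OF MD Ldm.Bridge[OF i] bD] by blast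
        then show "b \<in> D'" using D'(2) by blast
      qed
      then have "D' \<in> Wc m n G0" using D'(1) unfolding Wc_def by blast
      then have "a \<in> D'" using all D'(2) unfolding Rc_def by blast
      then show False using MCS_not_both[OF D'(1) _ D'(3)] by blast
    qed
  qed
  then show ?case using Stit.IH Stit.prems(1) wa by (auto simp: Rc_def)
next
  case (Cstit i a)
  have MD: "MCS m n \<Delta>" using Cstit unfolding Wc_def by blast
  have wa: "wf_fm m a" and i: "i \<in> {1..m}" using Cstit by auto
  have "Cstit i a \<in> \<Delta> \<longleftrightarrow> (\<exists>\<Delta>'\<in>Wc m n G0. Rc i \<Delta> \<Delta>' \<and> a \<in> \<Delta>')"
  proof
    assume "Cstit i a \<in> \<Delta>"
    then obtain D' where D': "MCS m n D'" "{b. Stit i b \<in> \<Delta>} \<subseteq> D'" "a \<in> D'" using exist_stit[OF MD] by blast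
    have "{b. Box b \<in> G0} \<subseteq> D'"
    proof
      fix b assume "b \<in> {b. Box b \<in> G0}"
      then have bD: "Box b \<in> \<Delta>" using W1[OF Cstit.prems(1,2)] by blast
      have "wf_fm m b" using MCS_wf[OF MD bD] by simp
      then have "Stit i b \<in> \<Delta>" using MCS_thm_mp[OF MD Ldm.Bridge[OF i] bD] by blast
      then show "b \<in> D'" using D'(2) by blast
    qed
    then have "D' \<in> Wc m n G0" using D'(1) unfolding Wc_def by blast
    then show "\<exists>\<Delta>'\<in>Wc m n G0. Rc i \<Delta> \<Delta>' \<and> a \<in> \<Delta>'" using D'(2,3) unfolding Rc_def by blast
  next
    assume "\<exists>\<Delta>'\<in>Wc m n G0. Rc i \<Delta> \<Delta>' \<and> a \<in> \<Delta>'"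
    then obtain D' where D': "D' \<in> Wc m n G0" "Rc i \<Delta> D'" "a \<in> D'" by blast
    show "Cstit i a \<in> \<Delta>"
    proof (rule ccontr)
      assume "Cstit i a \<notin> \<Delta>"
      then have "Stit i (neg a) \<in> \<Delta>" using MCS_neg[OF MD, of "Cstit i a"] wa i by simp
      then have "neg a \<in> D'" using D'(2) unfolding Rc_def by blast
      moreover have "MCS m n D'" using D'(1) unfolding Wc_def by blast
      ultimately show False using MCS_not_both D'(3) by blast
    qed
  qed
  then show ?case using Cstit.IH Cstit.prems(1) wa by (auto simp: Rc_def)
qed

lemma sat_Conjs: "L \<noteq> [] \<Longrightarrow> sat W Rl V x (Conjs L) \<longleftrightarrow> (\<forall>a\<in>set L. sat W Rl V x a)"
  by (induction L rule: Conjs.induct) auto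

lemma sat_Disjs: "L \<noteq> [] \<Longrightarrow> sat W Rl V x (Disjs L) \<longleftrightarrow> (\<exists>a\<in>set L. sat W Rl V x a)"
  by (induction L rule: Disjs.induct) auto

lemma sat_imp: "sat W Rl V x (imp a b) \<longleftrightarrow> (sat W Rl V x a \<longrightarrow> sat W Rl V x b)"
  by (simp add: imp_def)

lemma sat_TT: "sat W Rl V x TT"
  by (simp add: imp_def)

lemma c_refl: "MCS m n G0 \<Longrightarrow> i \<in> {1..m} \<Longrightarrow> \<Delta> \<in> Wc m n G0 \<Longrightarrow> Rc i \<Delta> \<Delta>"
proof -
  assume M: "MCS m n G0" and i: "i \<in> {1..m}" and D: "\<Delta> \<in> Wc m n G0"
  have MD: "MCS m n \<Delta>" using D unfolding Wc_def by blast
  show ?thesis unfolding Rc_def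
  proof
    fix b assume "b \<in> {b. Stit i b \<in> \<Delta>}"
    then have h: "Stit i b \<in> \<Delta>" by simp
    then have "wf_fm m b" using MCS_wf[OF MD h] by simp
    then show "b \<in> \<Delta>" using MCS_thm_mp[OF MD Ldm.StitT[OF i] h] by blast
  qed
qed

lemma c_eucl: "MCS m n G0 \<Longrightarrow> i \<in> {1..m} \<Longrightarrow> \<Delta> \<in> Wc m n G0 \<Longrightarrow> D1 \<in> Wc m n G0 \<Longrightarrow> D2 \<in> Wc m n G0 \<Longrightarrow>
  Rc i \<Delta> D1 \<Longrightarrow> Rc i \<Delta> D2 \<Longrightarrow> Rc i D1 D2"
proof -
  assume M: "MCS m n G0" and i: "i \<in> {1..m}" and D: "\<Delta> \<in> Wc m n G0" "D1 \<in> Wc m n G0" "D2 \<in> Wc m n G0"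
    and r1: "Rc i \<Delta> D1" and r2: "Rc i \<Delta> D2"
  have MD: "MCS m n \<Delta>" "MCS m n D1" using D unfolding Wc_def by blast+
  show ?thesis unfolding Rc_def
  proof
    fix b assume "b \<in> {b. Stit i b \<in> D1}"
    then have h: "Stit i b \<in> D1" by simp
    have wb: "wf_fm m b" using MCS_wf[OF MD(2) h] by simp
    have "Stit i b \<in> \<Delta>"
    proof (rule ccontr)
      assume "Stit i b \<notin> \<Delta>"
      then have c: "Cstit i (neg b) \<in> \<Delta>" using MCS_neg[OF MD(1), of "Stit i b"] wb i by simp
      have "Stit i (Cstit i (neg b)) \<in> \<Delta>" using MCS_thm_mp[OF MD(1) Ldm.Stit5[OF i] c] wb by simp
      then have "Cstit i (neg b) \<in> D1" using r1 unfolding Rc_def by blast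
      then show False using MCS_not_both[OF MD(2) h] by simp
    qed
    then show "b \<in> D2" using r2 unfolding Rc_def by blast
  qed
qed

lemma c_sym: "MCS m n G0 \<Longrightarrow> i \<in> {1..m} \<Longrightarrow> x \<in> Wc m n G0 \<Longrightarrow> y \<in> Wc m n G0 \<Longrightarrow> Rc i x y \<Longrightarrow> Rc i y x"
  using c_eucl c_refl by blast

lemma c_ioa:
  assumes m1: "1 \<le> m" and M: "MCS m n G0" and f: "\<forall>i\<in>{1..m}. f i \<in> Wc m n G0"
  shows "\<exists>v\<in>Wc m n G0. \<forall>i\<in>{1..m}. Rc i (f i) v"
proof -
  let ?W = "Wc m n G0"
  let ?S = "sat ?W Rc Vc"
  define U where "U = (\<Union>i\<in>{1..m}. {b. Stit i b \<in> f i})"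
  have Mf: "\<And>i. i \<in> {1..m} \<Longrightarrow> MCS m n (f i)" using f unfolding Wc_def by blast
  have wU: "wfs m U" unfolding U_def wfs_def using Mf MCS_wf by fastforce
  have cU: "cons m n U"
  proof (unfold cons_def, rule notI)
    assume "derives m n U FF"
    then obtain L where L: "set L \<subseteq> U" "Ldm m n (imps L FF)" unfolding derives_def by blast
    define ag where "ag = (\<lambda>x. SOME i. i \<in> {1..m} \<and> Stit i x \<in> f i)"
    have ag: "\<And>x. x \<in> set L \<Longrightarrow> ag x \<in> {1..m} \<and> Stit (ag x) x \<in> f (ag x)"
    proof -
      fix x assume "x \<in> set L"
      then have "\<exists>i. i \<in> {1..m} \<and> Stit i x \<in> f i" using L(1) unfolding U_def by blast
      then show "ag x \<in> {1..m} \<and> Stit (ag x) x \<in> f (ag x)" unfolding ag_def by (rule someI_ex)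
    qed
    have wL: "\<And>x. x \<in> set L \<Longrightarrow> wf_fm m x" using L(1) wU unfolding wfs_def by blast
    define C where "C = (\<lambda>i. Conjs (filter (\<lambda>x. ag x = i) L @ [TT]))"
    have wC: "\<And>i. wf_fm m (C i)" unfolding C_def using wL by (intro wf_Conjs) auto
    have sS: "\<And>i. i \<in> {1..m} \<Longrightarrow> ?S (f i) (Stit i (C i))"
    proof -
      fix i assume i: "i \<in> {1..m}"
      show "?S (f i) (Stit i (C i))"
      proof (simp, intro ballI impI)
        fix D assume D: "D \<in> ?W" and r: "Rc i (f i) D"
        show "?S D (C i)" unfolding C_def
        proof (subst sat_Conjs, simp, intro ballI)
          fix a assume "a \<in> set (filter (\<lambda>x. ag x = i) L @ [TT])"
          then have "a = TT \<or> (a \<in> set L \<and> ag a = i)" by auto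
          then show "?S D a"
          proof
            assume "a = TT" then show ?thesis using sat_TT by simp
          next
            assume a: "a \<in> set L \<and> ag a = i"
            then have "Stit i a \<in> f i" using ag by blast
            then have "a \<in> D" using r unfolding Rc_def by blast
            then show ?thesis using truth[OF M D wL] a by blast
          qed
        qed
      qed
    qed
    have G0W: "G0 \<in> ?W" by (rule G0_in[OF M])
    let ?A = "[1..<Suc m]"
    have An: "?A \<noteq> []" using m1 by simp
    have ax: "Ldm m n (imp (Conjs (map (\<lambda>i. Dia (Stit i (C i))) ?A)) (Dia (Conjs (map (\<lambda>i. Stit i (C i)) ?A))))"
      using wC by (intro Ldm.IOA) auto
    have "?S G0 (imp (Conjs (map (\<lambda>i. Dia (Stit i (C i))) ?A)) (Dia (Conjs (map (\<lambda>i. Stit i (C i)) ?A))))"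
      using truth[OF M G0W Ldm_wf[OF ax]] MCS_thm[OF M ax] by blast
    moreover have "?S G0 (Conjs (map (\<lambda>i. Dia (Stit i (C i))) ?A))"
    proof (subst sat_Conjs)
      show "map (\<lambda>i. Dia (Stit i (C i))) ?A \<noteq> []" using An by simp
      show "\<forall>a\<in>set (map (\<lambda>i. Dia (Stit i (C i))) ?A). ?S G0 a"
      proof
        fix a assume "a \<in> set (map (\<lambda>i. Dia (Stit i (C i))) ?A)"
        then obtain i where i: "i \<in> {1..m}" and a: "a = Dia (Stit i (C i))" by auto
        have "f i \<in> ?W" using f i by blast
        then show "?S G0 a" using a sS[OF i] by (simp only: sat.simps) blast
      qed
    qed
    ultimately have "?S G0 (Dia (Conjs (map (\<lambda>i. Stit i (C i)) ?A)))" by (simp only: sat_imp)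
    then obtain D where D: "D \<in> ?W" "?S D (Conjs (map (\<lambda>i. Stit i (C i)) ?A))" by auto
    have DS: "\<And>i. i \<in> {1..m} \<Longrightarrow> ?S D (Stit i (C i))" using D(2) An by (subst (asm) sat_Conjs) auto
    have MD: "MCS m n D" using D(1) unfolding Wc_def by blast
    have "set L \<subseteq> D"
    proof
      fix x assume x: "x \<in> set L"
      have i: "ag x \<in> {1..m}" using ag[OF x] by blast
      have "?S D (C (ag x))" using DS[OF i] c_refl[OF M i D(1)] D(1) by simp
      then have "?S D x" unfolding C_def using x by (subst (asm) sat_Conjs) auto
      then show "x \<in> D" using truth[OF M D(1) wL[OF x]] by blast
    qed
    then have "derives m n D FF" using L(2) unfolding derives_def by blast
    then show False using MD unfolding MCS_def cons_def by blast
  qed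
  obtain v where v: "MCS m n v" "U \<subseteq> v" using lindenbaum[OF wU cU] by blast
  have "{b. Box b \<in> G0} \<subseteq> v"
  proof
    fix b assume "b \<in> {b. Box b \<in> G0}"
    then have h: "Box b \<in> G0" by simp
    have one: "1 \<in> {1..m}" using m1 by simp
    have bD: "Box b \<in> f 1" using W1[OF M _ h] f one by blast
    have "wf_fm m b" using MCS_wf[OF M h] by simp
    then have "Stit 1 b \<in> f 1" using MCS_thm_mp[OF Mf[OF one] Ldm.Bridge[OF one] bD] by blast
    then have "b \<in> U" unfolding U_def using one by blast
    then show "b \<in> v" using v by blast
  qed
  then have "v \<in> Wc m n G0" using v unfolding Wc_def by blast
  moreover have "\<forall>i\<in>{1..m}. Rc i (f i) v" using v unfolding Rc_def U_def by blast
  ultimately show ?thesis by blast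
qed

lemma c_apc:
  assumes n0: "n > 0" and M: "MCS m n G0" and i: "i \<in> {1..m}" and ws: "\<forall>k\<le>n. ws k \<in> Wc m n G0"
  shows "\<exists>k<n. \<exists>j. k < j \<and> j \<le> n \<and> Rc i (ws k) (ws j)"
proof (rule ccontr)
  assume H: "\<not> (\<exists>k<n. \<exists>j. k < j \<and> j \<le> n \<and> Rc i (ws k) (ws j))"
  let ?W = "Wc m n G0"
  let ?S = "sat ?W Rc Vc"
  have MC: "\<And>k. k \<le> n \<Longrightarrow> MCS m n (ws k)" using ws unfolding Wc_def by blast
  have nrel: "\<And>k j. k \<le> n \<Longrightarrow> j \<le> n \<Longrightarrow> k \<noteq> j \<Longrightarrow> \<not> Rc i (ws k) (ws j)"
  proof -
    fix k j assume k: "k \<le> n" and j: "j \<le> n" and kj: "k \<noteq> j"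
    show "\<not> Rc i (ws k) (ws j)"
    proof (cases "k < j")
      case True
      then show ?thesis using H j by auto
    next
      case False
      then have jk: "j < k" using kj by simp
      show ?thesis
      proof
        assume "Rc i (ws k) (ws j)"
        then have "Rc i (ws j) (ws k)" using c_sym[OF M i] ws k j by blast
        then show False using H jk k by auto
      qed
    qed
  qed
  define \<alpha> where "\<alpha> = (\<lambda>k j. SOME a. Stit i a \<in> ws k \<and> a \<notin> ws j)"
  have \<alpha>p: "\<And>k j. k \<le> n \<Longrightarrow> j \<le> n \<Longrightarrow> k \<noteq> j \<Longrightarrow> Stit i (\<alpha> k j) \<in> ws k \<and> \<alpha> k j \<notin> ws j"
  proof -
    fix k j assume "k \<le> n" "j \<le> n" "k \<noteq> j"
    then have "\<exists>a. Stit i a \<in> ws k \<and> a \<notin> ws j" using nrel unfolding Rc_def by blast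
    then show "Stit i (\<alpha> k j) \<in> ws k \<and> \<alpha> k j \<notin> ws j" unfolding \<alpha>_def by (rule someI_ex)
  qed
  have w\<alpha>: "\<And>k j. k \<le> n \<Longrightarrow> j \<le> n \<Longrightarrow> k \<noteq> j \<Longrightarrow> wf_fm m (\<alpha> k j)"
  proof -
    fix k j assume a: "k \<le> n" "j \<le> n" "k \<noteq> j"
    have "Stit i (\<alpha> k j) \<in> ws k" using \<alpha>p[OF a] by blast
    then show "wf_fm m (\<alpha> k j)" using MCS_wf[OF MC[OF a(1)]] by fastforce
  qed
  define \<phi> where "\<phi> = (\<lambda>k. Conjs (map (\<alpha> k) (filter (\<lambda>j. j \<noteq> k) [0..<Suc n]) @ [TT]))"
  have w\<phi>: "\<And>k. k \<le> n \<Longrightarrow> wf_fm m (\<phi> k)"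
    unfolding \<phi>_def using w\<alpha> by (intro wf_Conjs) auto
  have sS\<phi>: "\<And>k. k \<le> n \<Longrightarrow> ?S (ws k) (Stit i (\<phi> k))"
  proof -
    fix k assume k: "k \<le> n"
    show "?S (ws k) (Stit i (\<phi> k))"
    proof (simp only: sat.simps, intro ballI impI)
      fix D assume D: "D \<in> ?W" and r: "Rc i (ws k) D"
      show "?S D (\<phi> k)" unfolding \<phi>_def
      proof (subst sat_Conjs, simp, intro ballI)
        fix a assume "a \<in> set (map (\<alpha> k) (filter (\<lambda>j. j \<noteq> k) [0..<Suc n]) @ [TT])"
        then have "a = TT \<or> (\<exists>j\<le>n. j \<noteq> k \<and> a = \<alpha> k j)" by (force simp del: upt_Suc simp: less_Suc_eq_le)
        then show "?S D a"
        proof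
          assume "a = TT" then show ?thesis using sat_TT by simp
        next
          assume "\<exists>j\<le>n. j \<noteq> k \<and> a = \<alpha> k j"
          then obtain j where j: "j \<le> n" "j \<noteq> k" "a = \<alpha> k j" by blast
          then have "Stit i a \<in> ws k" using \<alpha>p[OF k j(1)] by auto
          then have "a \<in> D" using r unfolding Rc_def by blast
          then show ?thesis using truth[OF M D] w\<alpha>[OF k j(1)] j by auto
        qed
      qed
    qed
  qed
  have ns\<phi>: "\<And>k j. k \<le> n \<Longrightarrow> j \<le> n \<Longrightarrow> j \<noteq> k \<Longrightarrow> \<not> ?S (ws j) (\<phi> k)"
  proof
    fix k j assume k: "k \<le> n" and j: "j \<le> n" and jk: "j \<noteq> k" and s: "?S (ws j) (\<phi> k)"
    have "\<alpha> k j \<in> set (map (\<alpha> k) (filter (\<lambda>j. j \<noteq> k) [0..<Suc n]) @ [TT])" using j jk by (auto simp del: upt_Suc)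
    then have "?S (ws j) (\<alpha> k j)" using s unfolding \<phi>_def by (subst (asm) sat_Conjs) auto
    then have "\<alpha> k j \<in> ws j" using truth[OF M] ws j w\<alpha>[OF k j] jk by auto
    then show False using \<alpha>p[OF k j] jk by auto
  qed
  define as where "as = map \<phi> [0..<n]"
  have len: "length as = n" by (simp add: as_def)
  have nth: "\<And>k. k < n \<Longrightarrow> as ! k = \<phi> k" by (simp add: as_def)
  have was: "\<forall>a\<in>set as. wf_fm m a" using w\<phi> by (auto simp: as_def)
  have tk: "\<And>k. k \<le> n \<Longrightarrow> take k as = map \<phi> [0..<k]" by (simp add: as_def take_map)
  let ?F = "\<lambda>k. Dia (Conjs (map neg (take k as) @ [Stit i (as ! k)]))"
  have ax: "Ldm m n (imp (Conjs (map ?F [0..<n])) (Disjs as))" by (rule Ldm.APC[OF n0 i len was])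
  have wn: "ws n \<in> ?W" using ws by simp
  have "?S (ws n) (imp (Conjs (map ?F [0..<n])) (Disjs as))"
    using truth[OF M wn Ldm_wf[OF ax]] MCS_thm[OF MC[of n] ax] by simp
  moreover have "?S (ws n) (Conjs (map ?F [0..<n]))"
  proof (subst sat_Conjs)
    show "map ?F [0..<n] \<noteq> []" using n0 by simp
    show "\<forall>a\<in>set (map ?F [0..<n]). ?S (ws n) a"
    proof
      fix a assume "a \<in> set (map ?F [0..<n])"
      then obtain k where k: "k < n" and a: "a = ?F k" by auto
      have "?S (ws k) (Conjs (map neg (take k as) @ [Stit i (as ! k)]))"
      proof (subst sat_Conjs, simp, intro ballI)
        fix x assume "x \<in> set (map neg (take k as) @ [Stit i (as ! k)])"
        then have "x = Stit i (\<phi> k) \<or> (\<exists>j<k. x = neg (\<phi> j))" using tk[of k] k nth[OF k] by auto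
        then show "?S (ws k) x"
        proof
          assume "x = Stit i (\<phi> k)" then show ?thesis using sS\<phi> k by simp
        next
          assume "\<exists>j<k. x = neg (\<phi> j)"
          then obtain j where "j < k" "x = neg (\<phi> j)" by blast
          then show ?thesis using ns\<phi>[of j k] k by simp
        qed
      qed
      moreover have "ws k \<in> ?W" using ws k by simp
      ultimately show "?S (ws n) a" using a by (simp only: sat.simps) blast
    qed
  qed
  ultimately have "?S (ws n) (Disjs as)" by (simp only: sat_imp)
  then obtain a where a: "a \<in> set as" "?S (ws n) a" using n0 len by (subst (asm) sat_Disjs) auto
  then obtain k where k: "k < n" "a = \<phi> k" by (auto simp: as_def)
  then show False using ns\<phi>[of k n] a by simp
qed

lemma frame_c: "1 \<le> m \<Longrightarrow> MCS m n G0 \<Longrightarrow> frame m n (Wc m n G0) Rc"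
proof -
  assume m1: "1 \<le> m" and M: "MCS m n G0"
  have r: "\<forall>i\<in>{1..m}. \<forall>x\<in>Wc m n G0. Rc i x x" using c_refl[OF M] by blast
  have e: "\<forall>i\<in>{1..m}. \<forall>x\<in>Wc m n G0. \<forall>y\<in>Wc m n G0. \<forall>z\<in>Wc m n G0. Rc i x y \<longrightarrow> Rc i x z \<longrightarrow> Rc i y z"
    using c_eucl[OF M] by blast
  have io: "\<forall>f. (\<forall>i\<in>{1..m}. f i \<in> Wc m n G0) \<longrightarrow> (\<exists>v\<in>Wc m n G0. \<forall>i\<in>{1..m}. Rc i (f i) v)"
    using c_ioa[OF m1 M] by blast
  have ap: "n > 0 \<longrightarrow> (\<forall>i\<in>{1..m}. \<forall>ws. (\<forall>k\<le>n. ws k \<in> Wc m n G0) \<longrightarrow> (\<exists>k<n. \<exists>j. k < j \<and> j \<le> n \<and> Rc i (ws k) (ws j)))"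
  proof (intro impI ballI allI)
    fix i ws assume "n > 0" "i \<in> {1..m}" "\<forall>k\<le>n. ws k \<in> Wc m n G0"
    then show "\<exists>k<n. \<exists>j. k < j \<and> j \<le> n \<and> Rc i (ws k) (ws j)" using c_apc[OF _ M] by blast
  qed
  show ?thesis unfolding frame_def using r e io ap by blast
qed

lemma G3_Ldm: "1 \<le> m \<Longrightarrow> wf_fm m a \<Longrightarrow> derivable m n ({#}, {#(w, a)#}) \<Longrightarrow> Ldm m n a"
proof (rule ccontr)
  assume m1: "1 \<le> m" and wa: "wf_fm m a" and d: "derivable m n ({#}, {#(w, a)#})" and nL: "\<not> Ldm m n a"
  have wN: "wfs m {neg a}" using wa unfolding wfs_def by simp
  have cN: "cons m n {neg a}"
  proof (unfold cons_def, rule notI)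
    assume "derives m n {neg a} FF"
    then obtain L where L: "set L \<subseteq> {neg a}" "Ldm m n (imps L FF)" unfolding derives_def by blast
    have wL: "\<forall>y\<in>set [neg a]. wf_fm m y" using wa by simp
    have "\<forall>x\<in>set L. Ldm m n (imps [neg a] x)" using L(1) imps_assm[OF wL] by auto
    then have "Ldm m n (imps [neg a] FF)" using imps_trans[OF wL L(2)] by blast
    then have "Ldm m n a" using Ldm.MP[OF thm_cls[OF wa]] by simp
    then show False using nL by blast
  qed
  obtain G0 where G0: "MCS m n G0" "{neg a} \<subseteq> G0" using lindenbaum[OF wN cN] by blast
  have fr: "frame m n (Wc m n G0) Rc" by (rule frame_c[OF m1 G0(1)])
  have GW: "G0 \<in> Wc m n G0" by (rule G0_in[OF G0(1)])
  have "sat (Wc m n G0) Rc Vc G0 a" by (rule sound_single[OF d fr GW])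
  then have "a \<in> G0" using truth[OF G0(1) GW wa] by blast
  then show False using MCS_not_both[OF G0(1)] G0(2) by blast
qed

lemma subst_ren: "subst_seq y x S = ren (\<lambda>z. if z = x then y else z) S"
  unfolding subst_seq_def ren_def Let_def by simp

theorem theorem2:
  fixes m n :: nat
  assumes "m \<ge> 1"
  shows
   "(\<forall>R G w a. wf_seq m (R, G) \<longrightarrow> wf_fm m a \<longrightarrow>
        derivable m n (R, add_mset (w, a) (add_mset (w, neg a) G)))
  \<and> (\<forall>S h x y. wf_seq m S \<longrightarrow> deriv m n h S \<longrightarrow> deriv m n h (subst_seq y x S))
  \<and> (\<forall>ps S h. wf_seq m S \<longrightarrow> rule m n ps S \<longrightarrow> deriv m n h S \<longrightarrow>
        (\<forall>P\<in>set ps. deriv m n h P))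
  \<and> (\<forall>R G R' G' h. wf_seq m (R, G) \<longrightarrow> wf_seq m (R', G') \<longrightarrow> deriv m n h (R, G) \<longrightarrow>
        deriv m n h (R + R', G' + G))
  \<and> (\<forall>R R' G h. wf_seq m (R + R' + R', G) \<longrightarrow> deriv m n h (R + R' + R', G) \<longrightarrow>
        deriv m n h (R + R', G))
  \<and> (\<forall>R G G' h. wf_seq m (R, G' + G' + G) \<longrightarrow> deriv m n h (R, G' + G' + G) \<longrightarrow>
        deriv m n h (R, G' + G))
  \<and> (\<forall>R G x a. wf_seq m (R, G) \<longrightarrow> wf_fm m a \<longrightarrow>
        derivable m n (R, add_mset (x, a) G) \<longrightarrow> derivable m n (R, add_mset (x, neg a) G) \<longrightarrow>
        derivable m n (R, G))
  \<and> (\<forall>a w. wf_fm m a \<longrightarrow> (derivable m n ({#}, {#(w, a)#}) \<longleftrightarrow> Ldm m n a))"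
proof -
  have c1: "\<forall>R G w a. wf_seq m (R, G) \<longrightarrow> wf_fm m a \<longrightarrow>
        derivable m n (R, add_mset (w, a) (add_mset (w, neg a) G))" using ident by blast
  have c2: "\<forall>S h x y. wf_seq m S \<longrightarrow> deriv m n h S \<longrightarrow> deriv m n h (subst_seq y x S)"
    unfolding subst_ren using deriv_ren by blast
  have c3: "\<forall>ps S h. wf_seq m S \<longrightarrow> rule m n ps S \<longrightarrow> deriv m n h S \<longrightarrow> (\<forall>P\<in>set ps. deriv m n h P)"
    using rule_inv by blast
  have c4: "\<forall>R G R' G' h. wf_seq m (R, G) \<longrightarrow> wf_seq m (R', G') \<longrightarrow> deriv m n h (R, G) \<longrightarrow>
        deriv m n h (R + R', G' + G)"
  proof (intro allI impI)
    fix R G R' G' h assume "deriv m n h (R, G)"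
    from deriv_weak[OF this, of "(R', G')"] show "deriv m n h (R + R', G' + G)" by (simp add: add.commute)
  qed
  have c5: "\<forall>R R' G h. wf_seq m (R + R' + R', G) \<longrightarrow> deriv m n h (R + R' + R', G) \<longrightarrow>
        deriv m n h (R + R', G)" using contrR_mset by blast
  have c6: "\<forall>R G G' h. wf_seq m (R, G' + G' + G) \<longrightarrow> deriv m n h (R, G' + G' + G) \<longrightarrow>
        deriv m n h (R, G' + G)" using contrG_mset by blast
  have c7: "\<forall>R G x a. wf_seq m (R, G) \<longrightarrow> wf_fm m a \<longrightarrow>
        derivable m n (R, add_mset (x, a) G) \<longrightarrow> derivable m n (R, add_mset (x, neg a) G) \<longrightarrow>
        derivable m n (R, G)" using cut_adm by blast
  have c8: "\<forall>a w. wf_fm m a \<longrightarrow> (derivable m n ({#}, {#(w, a)#}) \<longleftrightarrow> Ldm m n a)"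
  proof (intro allI impI)
    fix a w assume wa: "wf_fm m a"
    show "derivable m n ({#}, {#(w, a)#}) \<longleftrightarrow> Ldm m n a"
    proof
      assume "derivable m n ({#}, {#(w, a)#})"
      then show "Ldm m n a" using G3_Ldm[OF assms wa] by blast
    next
      assume "Ldm m n a"
      from Ldm_G3[OF this assms, of "{#}" w "{#}"] show "derivable m n ({#}, {#(w, a)#})" by simp
    qed
  qed
  show ?thesis using c1 c2 c3 c4 c5 c6 c7 c8 by blast
qed

end
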